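(* For every ALC game $G$, the algorithm ASF applied to $G$ terminates, and the game it returns is equivalent to $G$.
   Context: Linear clobber: Left owns black stones $\mathtt{x}$, Right owns white stones $\mathtt{o}$, on a path of cells each empty or holding a stone. A move: a player chooses one of their stones adjacent (consecutive on the path) to an opponent stone, removes the opponent stone and moves their own stone into that cell, emptying its original cell. Players alternate; whoever cannot move loses. A part is a maximal block of consecutive non-empty cells, written as a word over $\{\mathtt{o},\mathtt{x}\}$ (concatenation, exponents for repetition); a part and its reversal are identified; a position (game) is the disjoint sum (multiset) of its parts. For a part $p$, $-p$ swaps all colors. A part is trivial if no two adjacent stones differ in color. An ALC game is a finite sum of non-trivial parts each of which appears in some position reachable by legal moves from a single part $(\mathtt{ox})^n$, $n\ge 1$. Games $G,H$ are equivalent if for every game $X$, the sums $G+X$ and $H+X$ have the same outcome class (outcome class: which players have a winning strategy when moving first). Algorithm ASF: given a game (multiset of parts), repeatedly apply the first applicable rule in the preference order $\alpha,-\alpha,\beta,-\beta,\gamma,-\gamma,\delta,-\delta,\varepsilon,-\varepsilon,\zeta,-\zeta,\eta,-\eta$ until no rule applies, and return the result. Each rule replaces one part (matched up to reversal) by the listed parts ("nothing" means the part is deleted): $\alpha$: each of $\mathtt{o},\mathtt{oo},\mathtt{ooo},\mathtt{ooxx},\mathtt{oxoxox}$ is replaced by nothing. $\beta$: if parts $p$ and $-p$ are both present, delete both. $\gamma$: each of $\mathtt{oxo},\mathtt{ooxox},\mathtt{ooxoxoo},\mathtt{xxoxoxx}$ is replaced by $\mathtt{ox}$. $\delta$: $\mathtt{oxoxoxoxo}$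 is replaced by $\mathtt{ooxo}$. $\varepsilon$: each of $\mathtt{ooxoxx}$, $\mathtt{oxoxoxoxoxox}$ is replaced by the two parts $\mathtt{oxox}$ and $\mathtt{ox}$. $\zeta$: $\mathtt{ooxoo}$ is replaced by $\mathtt{oox}$. $\eta$: $\mathtt{ooxo}$ is replaced by the two parts $\mathtt{xxo}$ and $\mathtt{ox}$. For a rule $\rho$, the rule $-\rho$ is obtained by replacing every part on both sides of $\rho$ by its negative (e.g. $-\alpha$ deletes each of $\mathtt{x},\mathtt{xx},\mathtt{xxx},\mathtt{xxoo},\mathtt{xoxoxo}$). *)

theory Defs
  imports Main "HOL-Library.Multiset"
begin

text \<open>Stones: Bk is a black stone x (Left), Wh is a white stone o (Right).
  A stone colour also denotes the player owning stones of that colour.\<close>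

datatype stone = Bk | Wh

fun opp :: "stone \<Rightarrow> stone" where
  "opp Bk = Wh" | "opp Wh = Bk"

type_synonym part = "stone list"
type_synonym game = "part multiset"

definition w :: "string \<Rightarrow> part" where
  "w s = map (\<lambda>ch. if ch = CHR ''x'' then Bk else Wh) s"

definition neg_part :: "part \<Rightarrow> part" where
  "neg_part p = map opp p"

definition valid_pos :: "game \<Rightarrow> bool" where
  "valid_pos G \<longleftrightarrow> (\<forall>q\<in>#G. q \<noteq> [])"

definition nontrivial :: "part \<Rightarrow> bool" where
  "nontrivial q \<longleftrightarrow> (\<exists>i. Suc i < length q \<and> q ! i \<noteq> q ! Suc i)"

text \<open>A stone c at cell i clobbers the opponent stone at cell i+1 or i-1; cell i becomes
  empty, which splits the part.\<close>
definition part_moves :: "stone \<Rightarrow> part \<Rightarrow> part list set" where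
  "part_moves c q =
     {[take i q, c # drop (i+2) q] | i. Suc i < length q \<and> q ! i = c \<and> q ! Suc i = opp c}
   \<union> {[take (i-1) q @ [c], drop (i+1) q] | i. 0 < i \<and> i < length q \<and> q ! i = c \<and> q ! (i-1) = opp c}"

definition move :: "stone \<Rightarrow> game \<Rightarrow> game \<Rightarrow> bool" where
  "move c G G' \<longleftrightarrow> (\<exists>q\<in>#G. \<exists>ps\<in>part_moves c q.
       G' = G - {#q#} + mset (filter (\<lambda>l. l \<noteq> []) ps))"

definition any_move :: "game \<Rightarrow> game \<Rightarrow> bool" where
  "any_move G G' \<longleftrightarrow> move Bk G G' \<or> move Wh G G'"

definition stones :: "game \<Rightarrow> nat" where
  "stones G = sum_mset (image_mset length G)"

text \<open>Every move removes one stone,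
  so depth stones G + 1 exceeds the length of every play and gives the exact value.\<close>
fun wins_fuel :: "nat \<Rightarrow> stone \<Rightarrow> game \<Rightarrow> bool" where
  "wins_fuel 0 c G = False"
| "wins_fuel (Suc k) c G = (\<exists>G'. move c G G' \<and> \<not> wins_fuel k (opp c) G')"

definition wins :: "stone \<Rightarrow> game \<Rightarrow> bool" where
  "wins c G = wins_fuel (Suc (stones G)) c G"

definition outcome :: "game \<Rightarrow> bool \<times> bool" where
  "outcome G = (wins Bk G, wins Wh G)"

definition equiv_game :: "game \<Rightarrow> game \<Rightarrow> bool" where
  "equiv_game G H \<longleftrightarrow> (\<forall>X. valid_pos X \<longrightarrow> outcome (G + X) = outcome (H + X))"

definition oxn :: "nat \<Rightarrow> part" where
  "oxn n = concat (replicate n [Wh, Bk])"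

definition alc_part :: "part \<Rightarrow> bool" where
  "alc_part q \<longleftrightarrow> (\<exists>n\<ge>1. \<exists>P. any_move\<^sup>*\<^sup>* {#oxn n#} P \<and> (q \<in># P \<or> rev q \<in># P))"

definition alc_game :: "game \<Rightarrow> bool" where
  "alc_game G \<longleftrightarrow> (\<forall>q\<in>#G. nontrivial q \<and> alc_part q)"

datatype rule = Simple "(part \<times> part list) list" | Beta

definition neg_rule :: "(part \<times> part list) list \<Rightarrow> (part \<times> part list) list" where
  "neg_rule R = map (\<lambda>(p, rs). (neg_part p, map neg_part rs)) R"

definition rho_alpha :: "(part \<times> part list) list" where
  "rho_alpha = [(w ''o'', []), (w ''oo'', []), (w ''ooo'', []), (w ''ooxx'', []), (w ''oxoxox'', [])]"
definition rho_gamma :: "(part \<times> part list) list" where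
  "rho_gamma = [(w ''oxo'', [w ''ox'']), (w ''ooxox'', [w ''ox'']), (w ''ooxoxoo'', [w ''ox'']),
                (w ''xxoxoxx'', [w ''ox''])]"
definition rho_delta :: "(part \<times> part list) list" where
  "rho_delta = [(w ''oxoxoxoxo'', [w ''ooxo''])]"
definition rho_eps :: "(part \<times> part list) list" where
  "rho_eps = [(w ''ooxoxx'', [w ''oxox'', w ''ox'']), (w ''oxoxoxoxoxox'', [w ''oxox'', w ''ox''])]"
definition rho_zeta :: "(part \<times> part list) list" where
  "rho_zeta = [(w ''ooxoo'', [w ''oox''])]"
definition rho_eta :: "(part \<times> part list) list" where
  "rho_eta = [(w ''ooxo'', [w ''xxo'', w ''ox''])]"

text \<open>Preference order alpha, -alpha, beta, -beta, gamma, -gamma, ..., eta, -eta.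
  (-beta coincides with beta.)\<close>
definition asf_rules :: "rule list" where
  "asf_rules = [Simple rho_alpha, Simple (neg_rule rho_alpha), Beta, Beta,
     Simple rho_gamma, Simple (neg_rule rho_gamma), Simple rho_delta, Simple (neg_rule rho_delta),
     Simple rho_eps, Simple (neg_rule rho_eps), Simple rho_zeta, Simple (neg_rule rho_zeta),
     Simple rho_eta, Simple (neg_rule rho_eta)]"

definition matches :: "part \<Rightarrow> part \<Rightarrow> bool" where
  "matches pat q \<longleftrightarrow> q = pat \<or> q = rev pat"

fun rule_step :: "rule \<Rightarrow> game \<Rightarrow> game \<Rightarrow> bool" where
  "rule_step (Simple R) G G' \<longleftrightarrow>
     (\<exists>(pat, rs)\<in>set R. \<exists>q\<in>#G. matches pat q \<and> G' = G - {#q#} + mset rs)"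
| "rule_step Beta G G' \<longleftrightarrow>
     (\<exists>q1 q2. {#q1, q2#} \<subseteq># G \<and> matches (neg_part q1) q2 \<and> G' = G - {#q1, q2#})"

definition applicable :: "rule \<Rightarrow> game \<Rightarrow> bool" where
  "applicable r G \<longleftrightarrow> (\<exists>G'. rule_step r G G')"

definition asf_step :: "game \<Rightarrow> game \<Rightarrow> bool" where
  "asf_step G G' \<longleftrightarrow> (\<exists>i<length asf_rules. applicable (asf_rules ! i) G \<and>
       (\<forall>j<i. \<not> applicable (asf_rules ! j) G) \<and> rule_step (asf_rules ! i) G G')"

end

theory Submission
  imports Defs
begin


lemma opp_opp[simp]: "opp (opp c) = c" by (cases c) auto
lemma opp_neq[simp]: "opp c \<noteq> c" by (cases c) auto
lemma opp_neq2[simp]: "c \<noteq> opp c" by (cases c) auto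
lemma opp_inj[simp]: "(opp a = opp b) = (a = b)" by (cases a; cases b) auto

lemma stones_add[simp]: "stones (A + B) = stones A + stones B" unfolding stones_def by simp
lemma stones_add_mset[simp]: "stones (add_mset q A) = length q + stones A" unfolding stones_def by simp
lemma stones_empty[simp]: "stones {#} = 0" unfolding stones_def by simp

lemma part_moves_len: "ps \<in> part_moves c q \<Longrightarrow> sum_list (map length ps) + 1 = length q"
  unfolding part_moves_def by auto

lemma sum_filter_len: "sum_mset (image_mset length (mset (filter (\<lambda>l. l \<noteq> []) ps))) = sum_list (map length ps)"
  by (induction ps) auto

lemma move_stones: "move c G G' \<Longrightarrow> stones G = Suc (stones G')"
proof -
  assume "move c G G'"
  then obtain q ps where q: "q \<in># G" and ps: "ps \<in> part_moves c q"
    and G': "G' = G - {#q#} + mset (filter (\<lambda>l. l \<noteq> []) ps)" unfolding move_def by blast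
  obtain G0 where G0: "G = add_mset q G0" using q by (metis mset_add)
  have "stones G' = stones G0 + sum_list (map length ps)"
    using G' G0 sum_filter_len[of ps] by (simp add: stones_def)
  then show ?thesis using G0 part_moves_len[OF ps] by simp
qed

lemma wins_rec: "wins c G = (\<exists>G'. move c G G' \<and> \<not> wins (opp c) G')"
proof -
  have 1: "wins c G = (\<exists>G'. move c G G' \<and> \<not> wins_fuel (stones G) (opp c) G')"
    by (simp add: wins_def)
  have 2: "wins_fuel (stones G) (opp c) G' = wins (opp c) G'" if "move c G G'" for G'
    using move_stones[OF that] by (simp add: wins_def)
  show ?thesis using 1 2 by blast
qed

lemma move_plus_left: "move c A A' \<Longrightarrow> move c (A + B) (A' + B)"
proof -
  assume "move c A A'"
  then obtain q ps where q: "q \<in># A" and ps: "ps \<in> part_moves c q"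
    and A': "A' = A - {#q#} + mset (filter (\<lambda>l. l \<noteq> []) ps)" unfolding move_def by blast
  have "A' + B = A + B - {#q#} + mset (filter (\<lambda>l. l \<noteq> []) ps)"
    using A' q by (simp add: diff_union_single_conv ac_simps)
  moreover have "q \<in># A + B" using q by simp
  ultimately show ?thesis using ps unfolding move_def by blast
qed

lemma move_plus_right: "move c B B' \<Longrightarrow> move c (A + B) (A + B')"
  using move_plus_left by (metis union_commute)

lemma move_plus_cases: "move c (A + B) Y \<Longrightarrow>
   (\<exists>A'. move c A A' \<and> Y = A' + B) \<or> (\<exists>B'. move c B B' \<and> Y = A + B')"
proof -
  assume "move c (A + B) Y"
  then obtain q ps where q: "q \<in># A + B" and ps: "ps \<in> part_moves c q"
    and Y: "Y = A + B - {#q#} + mset (filter (\<lambda>l. l \<noteq> []) ps)" unfolding move_def by blast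
  show ?thesis
  proof (cases "q \<in># A")
    case True
    then have "Y = (A - {#q#} + mset (filter (\<lambda>l. l \<noteq> []) ps)) + B"
      using Y by (simp add: diff_union_single_conv ac_simps)
    then show ?thesis using True ps unfolding move_def by blast
  next
    case False
    then have qB: "q \<in># B" using q by simp
    then have "Y = A + (B - {#q#} + mset (filter (\<lambda>l. l \<noteq> []) ps))"
      using Y by (metis diff_union_single_conv union_assoc union_commute)
    then show ?thesis using qB ps unfolding move_def by blast
  qed
qed

lemma sum_P:
  "\<not> wins (opp c) Z \<Longrightarrow> (wins c X \<longrightarrow> wins c (Z + X)) \<and> (\<not> wins (opp c) X \<longrightarrow> \<not> wins (opp c) (Z + X))"
proof (induction "stones Z + stones X" arbitrary: Z X rule: less_induct)
  case less
  show ?case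
  proof (intro conjI impI)
    assume "wins c X"
    then obtain X' where m: "move c X X'" and nw: "\<not> wins (opp c) X'" using wins_rec by blast
    have "\<not> wins (opp c) (Z + X')" using less.hyps[of Z X'] less.prems nw move_stones[OF m] by simp
    then show "wins c (Z + X)" using move_plus_right[OF m, of Z] wins_rec by blast
  next
    assume nX: "\<not> wins (opp c) X"
    show "\<not> wins (opp c) (Z + X)"
    proof
      assume "wins (opp c) (Z + X)"
      then obtain Y where m: "move (opp c) (Z + X) Y" and nw: "\<not> wins c Y"
        using wins_rec[of "opp c"] by auto
      from move_plus_cases[OF m] show False
      proof
        assume "\<exists>Z'. move (opp c) Z Z' \<and> Y = Z' + X"
        then obtain Z' where mZ: "move (opp c) Z Z'" and Y: "Y = Z' + X" by blast
        have "wins c Z'" using less.prems mZ wins_rec[of "opp c" Z] by auto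
        then obtain Z'' where mZ': "move c Z' Z''" and nZ'': "\<not> wins (opp c) Z''" using wins_rec by blast
        have "\<not> wins (opp c) (Z'' + X)" using less.hyps[of Z'' X] nZ'' nX move_stones[OF mZ] move_stones[OF mZ'] by simp
        then have "wins c (Z' + X)" using move_plus_left[OF mZ'] wins_rec by blast
        then show False using nw Y by simp
      next
        assume "\<exists>X'. move (opp c) X X' \<and> Y = Z + X'"
        then obtain X' where mX: "move (opp c) X X'" and Y: "Y = Z + X'" by blast
        have "wins c X'" using nX mX wins_rec[of "opp c" X] by auto
        then have "wins c (Z + X')" using less.hyps[of Z X'] less.prems move_stones[OF mX] by simp
        then show False using nw Y by simp
      qed
    qed
  qed
qed




lemma neg_part_nil[simp]: "(neg_part l = []) = (l = [])" unfolding neg_part_def by simp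
lemma neg_neg[simp]: "neg_part (neg_part x) = x" unfolding neg_part_def by (simp add: map_idI)
lemma neg_rev: "neg_part (rev x) = rev (neg_part x)" unfolding neg_part_def by (simp add: rev_map)
lemma length_neg[simp]: "length (neg_part x) = length x" unfolding neg_part_def by simp

lemma part_moves_neg: "ps \<in> part_moves c q \<Longrightarrow> map neg_part ps \<in> part_moves (opp c) (neg_part q)"
proof -
  assume "ps \<in> part_moves c q"
  then consider (R) i where "Suc i < length q" "q ! i = c" "q ! Suc i = opp c" "ps = [take i q, c # drop (i+2) q]"
    | (L) i where "0 < i" "i < length q" "q ! i = c" "q ! (i-1) = opp c" "ps = [take (i-1) q @ [c], drop (i+1) q]"
    unfolding part_moves_def by blast
  then show ?thesis
  proof cases
    case R
    have "map neg_part ps = [take i (neg_part q), opp c # drop (i+2) (neg_part q)]"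
      using R by (simp add: neg_part_def take_map drop_map)
    moreover have "Suc i < length (neg_part q)" "neg_part q ! i = opp c" "neg_part q ! Suc i = opp (opp c)"
      using R by (simp_all add: neg_part_def)
    ultimately show ?thesis unfolding part_moves_def by (intro UnI1 CollectI exI[of _ i]) simp
  next
    case L
    have "map neg_part ps = [take (i-1) (neg_part q) @ [opp c], drop (i+1) (neg_part q)]"
      using L by (simp add: neg_part_def take_map drop_map)
    moreover have "0 < i" "i < length (neg_part q)" "neg_part q ! i = opp c" "neg_part q ! (i-1) = opp (opp c)"
      using L by (simp_all add: neg_part_def)
    ultimately show ?thesis unfolding part_moves_def by (intro UnI2 CollectI exI[of _ i]) simp
  qed
qed

lemma part_moves_rev: "ps \<in> part_moves c q \<Longrightarrow> rev (map rev ps) \<in> part_moves c (rev q)"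
proof -
  assume "ps \<in> part_moves c q"
  then consider (R) i where "Suc i < length q" "q ! i = c" "q ! Suc i = opp c" "ps = [take i q, c # drop (i+2) q]"
    | (L) i where "0 < i" "i < length q" "q ! i = c" "q ! (i-1) = opp c" "ps = [take (i-1) q @ [c], drop (i+1) q]"
    unfolding part_moves_def by blast
  then show ?thesis
  proof cases
    case R
    define j where "j = length q - 1 - i"
    have j: "0 < j" "j < length (rev q)" "rev q ! j = c" "rev q ! (j-1) = opp c"
      using R by (auto simp: j_def rev_nth Suc_diff_Suc)
    have "rev (map rev ps) = [take (j-1) (rev q) @ [c], drop (j+1) (rev q)]"
      using R by (auto simp: j_def rev_take rev_drop Suc_diff_Suc)
    then show ?thesis using j unfolding part_moves_def by blast
  next
    case L
    define j where "j = length q - 1 - i"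
    have j: "Suc j < length (rev q)" "rev q ! j = c" "rev q ! Suc j = opp c"
      using L by (auto simp: j_def rev_nth Suc_diff_Suc)
    have "rev (map rev ps) = [take j (rev q), c # drop (j+2) (rev q)]"
      using L by (auto simp: j_def rev_take rev_drop Suc_diff_Suc Suc_diff_le)
    then show ?thesis using j unfolding part_moves_def by blast
  qed
qed

lemma move_neg: "move c A A' \<Longrightarrow> move (opp c) (image_mset neg_part A) (image_mset neg_part A')"
proof -
  assume "move c A A'"
  then obtain q ps where q: "q \<in># A" and ps: "ps \<in> part_moves c q"
    and A': "A' = A - {#q#} + mset (filter (\<lambda>l. l \<noteq> []) ps)" unfolding move_def by blast
  have "image_mset neg_part A' = image_mset neg_part A - {#neg_part q#} + mset (filter (\<lambda>l. l \<noteq> []) (map neg_part ps))"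
    using A' q by (simp add: image_mset_Diff filter_map o_def)
  then show ?thesis using q part_moves_neg[OF ps] unfolding move_def by force
qed

lemma move_rev: "move c A A' \<Longrightarrow> move c (image_mset rev A) (image_mset rev A')"
proof -
  assume "move c A A'"
  then obtain q ps where q: "q \<in># A" and ps: "ps \<in> part_moves c q"
    and A': "A' = A - {#q#} + mset (filter (\<lambda>l. l \<noteq> []) ps)" unfolding move_def by blast
  have "image_mset rev A' = image_mset rev A - {#rev q#} + mset (filter (\<lambda>l. l \<noteq> []) (rev (map rev ps)))"
    using A' q by (simp add: image_mset_Diff filter_map o_def rev_filter[symmetric])
  then show ?thesis using q part_moves_rev[OF ps] unfolding move_def by force
qed

lemma move_rn: "move c A A' \<Longrightarrow> move (opp c) (image_mset (rev \<circ> neg_part) A) (image_mset (rev \<circ> neg_part) A')"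
  using move_rev[OF move_neg] by (simp add: image_mset.compositionality[symmetric])

lemma mirror:
  assumes H: "\<And>c A A'. move c A A' \<Longrightarrow> move (opp c) (image_mset f A) (image_mset f A')"
    and inv: "\<And>x. f (f x) = x"
  shows "\<not> wins c (A + image_mset f A)"
proof (induction "stones A" arbitrary: A c rule: less_induct)
  case less
  have ff: "image_mset f (image_mset f M) = M" for M
    by (simp add: image_mset.compositionality o_def inv)
  show ?case
  proof
    assume "wins c (A + image_mset f A)"
    then obtain Y where m: "move c (A + image_mset f A) Y" and nw: "\<not> wins (opp c) Y"
      using wins_rec by blast
    from move_plus_cases[OF m] show False
    proof
      assume "\<exists>A'. move c A A' \<and> Y = A' + image_mset f A"
      then obtain A' where mA: "move c A A'" and Y: "Y = A' + image_mset f A" by blast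
      have "move (opp c) Y (A' + image_mset f A')" using Y move_plus_right[OF H[OF mA]] by simp
      moreover have "\<not> wins c (A' + image_mset f A')" using less.hyps[of A' c] move_stones[OF mA] by simp
      ultimately show False using nw wins_rec[of "opp c" Y] by auto
    next
      assume "\<exists>B'. move c (image_mset f A) B' \<and> Y = A + B'"
      then obtain B' where mB: "move c (image_mset f A) B'" and Y: "Y = A + B'" by blast
      have mA: "move (opp c) A (image_mset f B')" using H[OF mB] ff by simp
      have "move (opp c) Y (image_mset f B' + image_mset f (image_mset f B'))"
        using Y move_plus_left[OF mA] ff by simp
      moreover have "\<not> wins c (image_mset f B' + image_mset f (image_mset f B'))"
        using less.hyps[of "image_mset f B'" c] move_stones[OF mA] by simp
      ultimately show False using nw wins_rec[of "opp c" Y] by auto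
    qed
  qed
qed

lemma mirror_neg: "\<not> wins c (A + image_mset neg_part A)"
  apply (rule mirror)
   apply (erule move_neg)
  apply simp
  done

lemma mirror_rn: "\<not> wins c (A + image_mset (rev \<circ> neg_part) A)"
  apply (rule mirror)
   apply (erule move_rn)
  apply (simp add: neg_rev[symmetric])
  done

lemma stones_neg[simp]: "stones (image_mset neg_part G) = stones G"
  unfolding stones_def by (simp add: image_mset.compositionality o_def)

lemma wins_neg: "wins c (image_mset neg_part G) = wins (opp c) G"
proof (induction "stones G" arbitrary: G c rule: less_induct)
  case less
  have ff: "image_mset neg_part (image_mset neg_part M) = M" for M
    by (simp add: image_mset.compositionality o_def)
  show ?case
  proof
    assume "wins c (image_mset neg_part G)"
    then obtain Y where m: "move c (image_mset neg_part G) Y" and nw: "\<not> wins (opp c) Y"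
      using wins_rec by blast
    have mG: "move (opp c) G (image_mset neg_part Y)" using move_neg[OF m] unfolding ff .
    have "stones (image_mset neg_part Y) < stones G" using move_stones[OF mG] by simp
    then have h: "wins (opp c) (image_mset neg_part (image_mset neg_part Y)) = wins (opp (opp c)) (image_mset neg_part Y)"
      by (rule less.hyps)
    have "\<not> wins c (image_mset neg_part Y)" using h nw unfolding ff opp_opp by simp
    then show "wins (opp c) G" using mG wins_rec[of "opp c" G] by auto
  next
    assume "wins (opp c) G"
    then obtain G' where m: "move (opp c) G G'" and nw: "\<not> wins c G'"
      using wins_rec[of "opp c"] by auto
    have "stones G' < stones G" using move_stones[OF m] by simp
    then have h: "wins (opp c) (image_mset neg_part G') = wins (opp (opp c)) G'"
      by (rule less.hyps)
    have "\<not> wins (opp c) (image_mset neg_part G')" using h nw unfolding opp_opp by simp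
    then show "wins c (image_mset neg_part G)" using move_neg[OF m] wins_rec[of c] unfolding opp_opp by blast
  qed
qed

definition Eqv :: "game \<Rightarrow> game \<Rightarrow> bool" where
  "Eqv G H \<longleftrightarrow> (\<forall>X c. wins c (G + X) = wins c (H + X))"

definition PP :: "game \<Rightarrow> bool" where
  "PP Z \<longleftrightarrow> (\<forall>c. \<not> wins c Z)"

lemma PP_Eqv: assumes "PP (G + image_mset neg_part H)" shows "Eqv G H"
  unfolding Eqv_def
proof (intro allI iffI)
  fix X c
  define Z where "Z = G + image_mset neg_part H"
  define W where "W = H + image_mset neg_part H"
  have PZ: "\<not> wins c' Z" for c' using assms unfolding PP_def Z_def by blast
  have PW: "\<not> wins c' W" for c' using mirror_neg unfolding W_def by blast
  {
    assume "wins c (H + X)"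
    have eq: "Z + (H + X) = W + (G + X)" unfolding Z_def W_def by (simp add: ac_simps)
    have "wins c (Z + (H + X))" using sum_P[of c Z "H + X"] PZ \<open>wins c (H + X)\<close> by blast
    then have a: "wins c (W + (G + X))" unfolding eq .
    show "wins c (G + X)"
    proof (rule ccontr)
      assume "\<not> wins c (G + X)"
      then have "\<not> wins c (W + (G + X))" using sum_P[of "opp c" W "G + X"] PW by simp
      then show False using a by simp
    qed
  next
    assume "wins c (G + X)"
    have eq: "Z + (H + X) = W + (G + X)" unfolding Z_def W_def by (simp add: ac_simps)
    have "wins c (W + (G + X))" using sum_P[of c W "G + X"] PW \<open>wins c (G + X)\<close> by blast
    then have a: "wins c (Z + (H + X))" unfolding eq .
    show "wins c (H + X)"
    proof (rule ccontr)
      assume "\<not> wins c (H + X)"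
      then have "\<not> wins c (Z + (H + X))" using sum_P[of "opp c" Z "H + X"] PZ by simp
      then show False using a by simp
    qed
  }
qed

lemma Eqv_refl: "Eqv G G" unfolding Eqv_def by simp
lemma Eqv_sym: "Eqv G H \<Longrightarrow> Eqv H G" unfolding Eqv_def by simp
lemma Eqv_trans: "Eqv G H \<Longrightarrow> Eqv H K \<Longrightarrow> Eqv G K" unfolding Eqv_def by simp
lemma Eqv_cong: "Eqv G H \<Longrightarrow> Eqv (G + C) (H + C)"
  unfolding Eqv_def by (metis union_assoc)
lemma Eqv_equiv_game: "Eqv G H \<Longrightarrow> equiv_game G H"
  unfolding Eqv_def equiv_game_def outcome_def by simp

lemma Eqv_rev: "Eqv {#rev p#} {#p#}"
proof (rule PP_Eqv)
  have "{#rev p#} + image_mset neg_part {#p#} = {#neg_part p#} + image_mset (rev \<circ> neg_part) {#neg_part p#}"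
    by simp
  then show "PP ({#rev p#} + image_mset neg_part {#p#})" unfolding PP_def using mirror_rn by metis
qed

lemma Eqv_beta: "matches (neg_part q1) q2 \<Longrightarrow> Eqv {#q1, q2#} {#}"
proof (rule PP_Eqv)
  assume "matches (neg_part q1) q2"
  then consider "q2 = neg_part q1" | "q2 = rev (neg_part q1)" unfolding matches_def by blast
  then show "PP ({#q1, q2#} + image_mset neg_part {#})"
  proof cases
    case 1
    then have "{#q1, q2#} + image_mset neg_part {#} = {#q1#} + image_mset neg_part {#q1#}" by simp
    then show ?thesis unfolding PP_def using mirror_neg by metis
  next
    case 2
    then have "{#q1, q2#} + image_mset neg_part {#} = {#q1#} + image_mset (rev \<circ> neg_part) {#q1#}" by simp
    then show ?thesis unfolding PP_def using mirror_rn by metis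
  qed
qed

lemma PP_neg: "PP G \<Longrightarrow> PP (image_mset neg_part G)"
  unfolding PP_def using wins_neg by simp




fun pm :: "stone \<Rightarrow> part \<Rightarrow> (part \<times> part) list" where
  "pm c (a # b # r) = (if a = c \<and> b = opp c then [([], c # r)] else []) @
     (if b = c \<and> a = opp c then [([c], r)] else []) @ map (\<lambda>(l, r'). (a # l, r')) (pm c (b # r))"
| "pm c _ = []"

definition M1 :: "stone \<Rightarrow> part \<Rightarrow> part \<Rightarrow> part \<Rightarrow> bool" where
  "M1 c q l r \<longleftrightarrow> (\<exists>i. Suc i < length q \<and> q ! i = c \<and> q ! Suc i = opp c \<and> l = take i q \<and> r = c # drop (i+2) q)"
definition M2 :: "stone \<Rightarrow> part \<Rightarrow> part \<Rightarrow> part \<Rightarrow> bool" where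
  "M2 c q l r \<longleftrightarrow> (\<exists>i. 0 < i \<and> i < length q \<and> q ! i = c \<and> q ! (i-1) = opp c \<and> l = take (i-1) q @ [c] \<and> r = drop (i+1) q)"

lemma M1_short: "length q < 2 \<Longrightarrow> \<not> M1 c q l r" unfolding M1_def by auto
lemma M2_short: "length q < 2 \<Longrightarrow> \<not> M2 c q l r" unfolding M2_def by auto

lemma M1_cons: "M1 c (a # b # rest) l r \<longleftrightarrow>
   (a = c \<and> b = opp c \<and> l = [] \<and> r = c # rest) \<or> (\<exists>l'. l = a # l' \<and> M1 c (b # rest) l' r)"
proof
  assume "M1 c (a # b # rest) l r"
  then obtain i where i: "Suc i < length (a # b # rest)" "(a # b # rest) ! i = c"
    "(a # b # rest) ! Suc i = opp c" "l = take i (a # b # rest)" "r = c # drop (i+2) (a # b # rest)"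
    unfolding M1_def by blast
  show "(a = c \<and> b = opp c \<and> l = [] \<and> r = c # rest) \<or> (\<exists>l'. l = a # l' \<and> M1 c (b # rest) l' r)"
  proof (cases i)
    case 0 then show ?thesis using i by simp
  next
    case (Suc j)
    then have "M1 c (b # rest) (take j (b # rest)) r" using i unfolding M1_def
      by (intro exI[of _ j]) simp
    then show ?thesis using i Suc by simp
  qed
next
  assume "(a = c \<and> b = opp c \<and> l = [] \<and> r = c # rest) \<or> (\<exists>l'. l = a # l' \<and> M1 c (b # rest) l' r)"
  then show "M1 c (a # b # rest) l r"
  proof
    assume "a = c \<and> b = opp c \<and> l = [] \<and> r = c # rest"
    then show ?thesis unfolding M1_def by (intro exI[of _ 0]) simp
  next
    assume "\<exists>l'. l = a # l' \<and> M1 c (b # rest) l' r"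
    then obtain l' j where "l = a # l'" "Suc j < length (b # rest)" "(b # rest) ! j = c"
      "(b # rest) ! Suc j = opp c" "l' = take j (b # rest)" "r = c # drop (j+2) (b # rest)"
      unfolding M1_def by blast
    then show ?thesis unfolding M1_def by (intro exI[of _ "Suc j"]) simp
  qed
qed

lemma M2_cons: "M2 c (a # b # rest) l r \<longleftrightarrow>
   (b = c \<and> a = opp c \<and> l = [c] \<and> r = rest) \<or> (\<exists>l'. l = a # l' \<and> M2 c (b # rest) l' r)"
proof
  assume "M2 c (a # b # rest) l r"
  then obtain i where i: "0 < i" "i < length (a # b # rest)" "(a # b # rest) ! i = c"
    "(a # b # rest) ! (i-1) = opp c" "l = take (i-1) (a # b # rest) @ [c]" "r = drop (i+1) (a # b # rest)"
    unfolding M2_def by blast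
  show "(b = c \<and> a = opp c \<and> l = [c] \<and> r = rest) \<or> (\<exists>l'. l = a # l' \<and> M2 c (b # rest) l' r)"
  proof (cases "i = 1")
    case True then show ?thesis using i by simp
  next
    case False
    then obtain k where k: "i = Suc k" "0 < k" using i by (cases i) auto
    then have "M2 c (b # rest) (take (k-1) (b # rest) @ [c]) r" using i unfolding M2_def
      by (intro exI[of _ k]) (simp add: nth_Cons')
    moreover have "l = a # (take (k-1) (b # rest) @ [c])" using i k
      by (cases k) auto
    ultimately show ?thesis by blast
  qed
next
  assume "(b = c \<and> a = opp c \<and> l = [c] \<and> r = rest) \<or> (\<exists>l'. l = a # l' \<and> M2 c (b # rest) l' r)"
  then show "M2 c (a # b # rest) l r"
  proof
    assume "b = c \<and> a = opp c \<and> l = [c] \<and> r = rest"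
    then show ?thesis unfolding M2_def by (intro exI[of _ 1]) simp
  next
    assume "\<exists>l'. l = a # l' \<and> M2 c (b # rest) l' r"
    then obtain l' k where k: "l = a # l'" "0 < k" "k < length (b # rest)" "(b # rest) ! k = c"
      "(b # rest) ! (k-1) = opp c" "l' = take (k-1) (b # rest) @ [c]" "r = drop (k+1) (b # rest)"
      unfolding M2_def by blast
    then show ?thesis unfolding M2_def
      by (intro exI[of _ "Suc k"]) (cases k; simp)
  qed
qed

lemma pm_iff: "(l, r) \<in> set (pm c q) \<longleftrightarrow> M1 c q l r \<or> M2 c q l r"
proof (induction c q arbitrary: l r rule: pm.induct)
  case (1 c a b rest)
  have "(l, r) \<in> set (pm c (a # b # rest)) \<longleftrightarrow> (a = c \<and> b = opp c \<and> l = [] \<and> r = c # rest)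
     \<or> (b = c \<and> a = opp c \<and> l = [c] \<and> r = rest) \<or> (\<exists>l'. l = a # l' \<and> (l', r) \<in> set (pm c (b # rest)))"
    by auto
  then show ?case unfolding M1_cons M2_cons 1 by blast
next
  case ("2_1" c) then show ?case using M1_short M2_short by simp
next
  case ("2_2" c v) then show ?case using M1_short M2_short by simp
qed

lemma part_moves_pm: "part_moves c q = (\<lambda>(l, r). [l, r]) ` set (pm c q)"
proof -
  have "part_moves c q = {[l, r] | l r. M1 c q l r \<or> M2 c q l r}"
    unfolding part_moves_def M1_def M2_def by auto
  also have "\<dots> = (\<lambda>(l, r). [l, r]) ` set (pm c q)"
    using pm_iff by fastforce
  finally show ?thesis .
qed

fun act :: "part \<Rightarrow> bool" where
  "act (a # b # r) = (a \<noteq> b \<or> act (b # r))"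
| "act _ = False"

lemma not_act_pm: "\<not> act q \<Longrightarrow> pm c q = []"
  by (induction c q rule: pm.induct) auto

lemma no_move_single: "part_moves c q = {} \<Longrightarrow> \<not> move c {#q#} Y"
  unfolding move_def by auto

lemma inert_wins:
  assumes "\<And>c. part_moves c q = {}"
  shows "wins c ({#q#} + G) = wins c G"
proof (induction "stones G" arbitrary: G c rule: less_induct)
  case less
  show ?case
  proof
    assume "wins c ({#q#} + G)"
    then obtain Y where m: "move c ({#q#} + G) Y" and nw: "\<not> wins (opp c) Y" using wins_rec by blast
    have nm: "\<not> move c {#q#} Z" for Z by (rule no_move_single[OF assms])
    from move_plus_cases[OF m] nm obtain G' where
      mG: "move c G G'" and Y: "Y = {#q#} + G'" by blast
    have "stones G' < stones G" using move_stones[OF mG] by simp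
    then have "wins (opp c) ({#q#} + G') = wins (opp c) G'" by (rule less.hyps)
    then have "\<not> wins (opp c) G'" using nw Y by simp
    then show "wins c G" using mG wins_rec[of c G] by blast
  next
    assume "wins c G"
    then obtain G' where mG: "move c G G'" and nw: "\<not> wins (opp c) G'" using wins_rec by blast
    have "stones G' < stones G" using move_stones[OF mG] by simp
    then have "wins (opp c) ({#q#} + G') = wins (opp c) G'" by (rule less.hyps)
    then have "\<not> wins (opp c) ({#q#} + G')" using nw by simp
    then show "wins c ({#q#} + G)" using move_plus_right[OF mG, of "{#q#}"] wins_rec[of c "{#q#} + G"] by blast
  qed
qed

lemma Eqv_inert: "\<not> act q \<Longrightarrow> Eqv {#q#} {#}"
  unfolding Eqv_def using inert_wins[of q] not_act_pm[of q] part_moves_pm by simp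

fun enc :: "part \<Rightarrow> nat" where
  "enc [] = 1"
| "enc (Bk # r) = 2 * enc r"
| "enc (Wh # r) = 2 * enc r + 1"

definition canon :: "part \<Rightarrow> part" where
  "canon q = (if enc (rev q) < enc q then rev q else q)"

definition norm :: "part list \<Rightarrow> part list" where
  "norm L = sort_key enc (map canon (filter act L))"

lemma Eqv_canon: "Eqv {#canon q#} {#q#}"
  unfolding canon_def using Eqv_rev Eqv_refl by simp

lemma Eqv_plus: "Eqv A B \<Longrightarrow> Eqv C D \<Longrightarrow> Eqv (A + C) (B + D)"
proof -
  assume "Eqv A B" "Eqv C D"
  then have "Eqv (A + C) (B + C)" "Eqv (C + B) (D + B)" using Eqv_cong by blast+
  then show ?thesis using Eqv_trans by (metis union_commute)
qed

lemma Eqv_norm0: "Eqv (mset (map canon (filter act L))) (mset L)"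
proof (induction L)
  case Nil then show ?case by (simp add: Eqv_refl)
next
  case (Cons q L)
  show ?case
  proof (cases "act q")
    case True
    have "Eqv ({#canon q#} + mset (map canon (filter act L))) ({#q#} + mset L)"
      by (rule Eqv_plus[OF Eqv_canon Cons])
    then show ?thesis using True by simp
  next
    case False
    have "Eqv ({#} + mset (map canon (filter act L))) ({#q#} + mset L)"
      by (rule Eqv_plus[OF Eqv_sym[OF Eqv_inert[OF False]] Cons])
    then show ?thesis using False by simp
  qed
qed

lemma Eqv_norm: "Eqv (mset (norm L)) (mset L)"
  unfolding norm_def using Eqv_norm0 by simp

definition Wn :: "stone \<Rightarrow> part list \<Rightarrow> bool" where
  "Wn c L = wins c (mset L)"

definition succs :: "stone \<Rightarrow> part list \<Rightarrow> part list list" where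
  "succs c G = concat (map (\<lambda>q. map (\<lambda>(l, r). filter (\<lambda>x. x \<noteq> []) [l, r] @ remove1 q G) (pm c q)) G)"

lemma move_succs: "move c (mset G) Y \<longleftrightarrow> (\<exists>L \<in> set (succs c G). Y = mset L)"
proof
  assume "move c (mset G) Y"
  then obtain q ps where q: "q \<in> set G" and ps: "ps \<in> part_moves c q"
    and Y: "Y = mset G - {#q#} + mset (filter (\<lambda>l. l \<noteq> []) ps)" unfolding move_def by auto
  obtain l r where lr: "(l, r) \<in> set (pm c q)" "ps = [l, r]" using ps part_moves_pm by auto
  have "Y = mset (filter (\<lambda>x. x \<noteq> []) [l, r] @ remove1 q G)" using Y lr by (simp add: ac_simps)
  moreover have "filter (\<lambda>x. x \<noteq> []) [l, r] @ remove1 q G \<in> set (succs c G)"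
    unfolding succs_def using q lr by force
  ultimately show "\<exists>L \<in> set (succs c G). Y = mset L" by blast
next
  assume "\<exists>L \<in> set (succs c G). Y = mset L"
  then obtain q l r where q: "q \<in> set G" and lr: "(l, r) \<in> set (pm c q)"
    and Y: "Y = mset (filter (\<lambda>x. x \<noteq> []) [l, r] @ remove1 q G)"
    unfolding succs_def by auto
  have ps: "[l, r] \<in> part_moves c q" using lr part_moves_pm by force
  have "Y = mset G - {#q#} + mset (filter (\<lambda>x. x \<noteq> []) [l, r])" using Y by (simp add: ac_simps)
  then show "move c (mset G) Y" unfolding move_def using q ps by force
qed

lemma Wn_rec: "Wn c G = (\<exists>L \<in> set (succs c G). \<not> Wn (opp c) (norm L))"
proof -
  have e: "wins c' (mset (norm L)) = wins c' (mset L)" for c' L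
    using Eqv_norm[of L] unfolding Eqv_def by (metis add_0_right)
  have "Wn c G = (\<exists>Y. move c (mset G) Y \<and> \<not> wins (opp c) Y)" unfolding Wn_def by (rule wins_rec)
  also have "\<dots> = (\<exists>L \<in> set (succs c G). \<not> wins (opp c) (mset L))" unfolding move_succs by auto
  finally show ?thesis unfolding Wn_def e .
qed

lemma lose_rule: "list_all (\<lambda>L. Wn (opp c) (norm L)) (succs c G) \<Longrightarrow> Wn c G = False"
  using Wn_rec[of c G] by (auto simp: list_all_iff)

lemma win_rule: "list_ex (\<lambda>L. \<not> Wn (opp c) (norm L)) (succs c G) \<Longrightarrow> Wn c G = True"
  using Wn_rec[of c G] by (auto simp: list_ex_iff)

lemma Wn_nil: "Wn c [] = False"
  unfolding Wn_def using wins_rec[of c "{#}"] move_def by auto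

lemma PP_eval: "Wn Bk (norm L) = False \<Longrightarrow> Wn Wh (norm L) = False \<Longrightarrow> PP (mset L)"
proof -
  assume a: "Wn Bk (norm L) = False" "Wn Wh (norm L) = False"
  have e: "wins c' (mset (norm L)) = wins c' (mset L)" for c' L
    using Eqv_norm[of L] unfolding Eqv_def by (metis add_0_right)
  show ?thesis unfolding PP_def using a e unfolding Wn_def by (metis stone.exhaust)
qed




lemmas evsimps = succs_def norm_def canon_def

lemma n2: "Wn Wh [[Wh,Bk]] = True"
  by (rule win_rule) (simp add: evsimps Wn_nil)
lemma n3: "Wn Bk [[Wh,Wh,Bk,Bk]] = False"
  by (rule lose_rule) (simp add: evsimps n2)
lemma n4: "Wn Bk [[Wh,Bk]] = True"
  by (rule win_rule) (simp add: evsimps Wn_nil)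
lemma n5: "Wn Wh [[Wh,Wh,Bk,Bk]] = False"
  by (rule lose_rule) (simp add: evsimps n4)
lemma n6: "Wn Wh [[Bk,Wh,Bk,Bk]] = True"
  by (rule win_rule) (simp add: evsimps Wn_nil)
lemma n7: "Wn Bk [[Wh,Wh,Bk]] = False"
  by (rule lose_rule) (simp add: evsimps n2)
lemma n8: "Wn Wh [[Wh,Bk,Wh,Bk]] = True"
  by (rule win_rule) (simp add: evsimps n7)
lemma n9: "Wn Wh [[Wh,Bk,Wh]] = True"
  by (rule win_rule) (simp add: evsimps Wn_nil)
lemma n10: "Wn Bk [[Wh,Bk],[Wh,Bk]] = False"
  by (rule lose_rule) (simp add: evsimps n2)
lemma n11: "Wn Wh [[Wh,Bk],[Wh,Bk,Bk]] = True"
  by (rule win_rule) (simp add: evsimps n10)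
lemma n12: "Wn Wh [[Wh,Bk,Wh,Bk,Bk]] = True"
  by (rule win_rule) (simp add: evsimps n3)
lemma n13: "Wn Bk [[Wh,Bk,Wh,Bk,Wh,Bk]] = False"
  by (rule lose_rule) (simp add: evsimps n6 n8 n9 n11 n12)
lemma n14: "Wn Bk [[Wh,Wh,Bk,Wh,Bk]] = True"
  by (rule win_rule) (simp add: evsimps Wn_nil)
lemma n15: "Wn Wh [[Wh,Bk],[Wh,Bk]] = False"
  by (rule lose_rule) (simp add: evsimps n4)
lemma n16: "Wn Bk [[Wh,Bk],[Wh,Wh,Bk]] = True"
  by (rule win_rule) (simp add: evsimps n15)
lemma n17: "Wn Bk [[Bk,Wh,Bk]] = True"
  by (rule win_rule) (simp add: evsimps Wn_nil)
lemma n18: "Wn Bk [[Wh,Bk,Wh,Bk]] = True"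
  by (rule win_rule) (simp add: evsimps Wn_nil)
lemma n19: "Wn Bk [[Wh,Wh,Bk,Wh]] = True"
  by (rule win_rule) (simp add: evsimps Wn_nil)
lemma n20: "Wn Wh [[Wh,Bk,Wh,Bk,Wh,Bk]] = False"
  by (rule lose_rule) (simp add: evsimps n14 n16 n17 n18 n19)
lemma n21: "Wn Bk [[Wh,Bk],[Wh,Bk,Wh]] = False"
  by (rule lose_rule) (simp add: evsimps n9 n2)
lemma n22: "Wn Bk [[Wh,Bk,Wh]] = True"
  by (rule win_rule) (simp add: evsimps Wn_nil)
lemma n23: "Wn Wh [[Wh,Bk],[Wh,Bk,Wh]] = False"
  by (rule lose_rule) (simp add: evsimps n22 n4)
lemma n24: "Wn Wh [[Wh,Wh,Bk,Wh,Bk]] = True"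
  by (rule win_rule) (simp add: evsimps n7)
lemma n25: "Wn Wh [[Wh,Bk],[Wh,Bk],[Wh,Bk]] = True"
  by (rule win_rule) (simp add: evsimps n10)
lemma n26: "Wn Wh [[Wh,Bk],[Wh,Wh,Bk,Bk]] = True"
  by (rule win_rule) (simp add: evsimps n3)
lemma n27: "Wn Bk [[Wh,Bk],[Wh,Wh,Bk,Wh,Bk]] = False"
  by (rule lose_rule) (simp add: evsimps n24 n2 n25 n26)
lemma n28: "Wn Wh [[Wh,Bk],[Wh,Wh,Bk,Wh,Bk]] = False"
  by (rule lose_rule) (simp add: evsimps n14 n16 n4)
lemma n29: "Wn Bk [[Wh,Wh,Bk,Wh,Wh]] = False"
  by (rule lose_rule) (simp add: evsimps n2)
lemma n30: "Wn Wh [[Wh,Wh,Bk,Wh,Bk,Wh,Wh]] = True"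
  by (rule win_rule) (simp add: evsimps n29)
lemma n31: "Wn Wh [[Wh,Bk],[Wh,Bk],[Wh,Wh,Bk,Wh]] = True"
  by (rule win_rule) (simp add: evsimps n10)
lemma n32: "Wn Bk [[Wh,Bk],[Wh,Wh,Bk,Wh,Bk,Wh,Wh]] = False"
  by (rule lose_rule) (simp add: evsimps n30 n26 n31)
lemma n33: "Wn Bk [[Wh,Wh,Bk,Wh,Bk,Wh,Wh]] = True"
  by (rule win_rule) (simp add: evsimps n5)
lemma n34: "Wn Bk [[Wh,Bk],[Wh,Wh,Bk,Wh,Wh]] = True"
  by (rule win_rule) (simp add: evsimps n15)
lemma n35: "Wn Wh [[Wh,Bk],[Wh,Wh,Bk,Wh,Bk,Wh,Wh]] = False"
  by (rule lose_rule) (simp add: evsimps n33 n34 n16)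
lemma n36: "Wn Wh [[Bk,Bk,Wh,Bk,Wh,Bk,Bk]] = True"
  by (rule win_rule) (simp add: evsimps n3)
lemma n37: "Wn Wh [[Wh,Bk],[Bk,Bk,Wh,Bk,Bk]] = True"
  by (rule win_rule) (simp add: evsimps n10)
lemma n38: "Wn Bk [[Wh,Bk],[Bk,Bk,Wh,Bk,Wh,Bk,Bk]] = False"
  by (rule lose_rule) (simp add: evsimps n36 n37 n11)
lemma n39: "Wn Wh [[Bk,Bk,Wh,Bk,Bk]] = False"
  by (rule lose_rule) (simp add: evsimps n4)
lemma n40: "Wn Bk [[Bk,Bk,Wh,Bk,Wh,Bk,Bk]] = True"
  by (rule win_rule) (simp add: evsimps n39)
lemma n41: "Wn Bk [[Wh,Bk],[Wh,Wh,Bk,Bk]] = True"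
  by (rule win_rule) (simp add: evsimps n5)
lemma n42: "Wn Bk [[Wh,Bk],[Wh,Bk],[Bk,Wh,Bk,Bk]] = True"
  by (rule win_rule) (simp add: evsimps n15)
lemma n43: "Wn Wh [[Wh,Bk],[Bk,Bk,Wh,Bk,Wh,Bk,Bk]] = False"
  by (rule lose_rule) (simp add: evsimps n40 n41 n42)
lemma n44: "Wn Wh [[Wh,Bk,Wh,Bk,Wh,Bk,Wh,Bk,Wh]] = True"
  by (rule win_rule) (simp add: evsimps n13)
lemma n45: "Wn Wh [[Bk,Wh,Bk,Bk],[Wh,Wh,Bk,Bk]] = True"
  by (rule win_rule) (simp add: evsimps n3)
lemma n46: "Wn Bk [[Wh,Bk],[Bk,Wh,Bk,Bk]] = False"
  by (rule lose_rule) (simp add: evsimps n6 n2)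
lemma n47: "Wn Wh [[Wh,Bk],[Wh,Bk],[Bk,Wh,Bk,Bk]] = True"
  by (rule win_rule) (simp add: evsimps n46)
lemma n48: "Wn Bk [[Wh,Bk],[Bk,Wh,Bk,Bk],[Wh,Wh,Bk,Bk]] = False"
  by (rule lose_rule) (simp add: evsimps n45 n26 n47)
lemma n49: "Wn Wh [[Bk,Wh,Bk,Bk],[Wh,Bk,Wh,Bk,Wh,Bk,Bk]] = True"
  by (rule win_rule) (simp add: evsimps n48)
lemma n50: "Wn Wh [[Wh,Bk],[Bk,Wh,Bk,Bk]] = True"
  by (rule win_rule) (simp add: evsimps n10)
lemma n51: "Wn Wh [[Wh,Bk,Bk],[Bk,Wh,Bk,Bk]] = True"
  by (rule win_rule) (simp add: evsimps n46)
lemma n52: "Wn Bk [[Bk,Wh,Bk,Bk],[Wh,Bk,Wh,Bk]] = False"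
  by (rule lose_rule) (simp add: evsimps n8 n6 n50 n51)
lemma n53: "Wn Wh [[Bk,Wh,Bk,Bk],[Wh,Bk,Wh,Bk,Wh,Bk,Wh]] = True"
  by (rule win_rule) (simp add: evsimps n52)
lemma n54: "Wn Bk [[Bk,Wh,Bk,Bk],[Wh,Bk,Wh,Bk,Bk]] = False"
  by (rule lose_rule) (simp add: evsimps n12 n6 n51)
lemma n55: "Wn Wh [[Wh,Bk,Wh],[Bk,Wh,Bk,Bk],[Wh,Bk,Wh,Bk,Bk]] = True"
  by (rule win_rule) (simp add: evsimps n54)
lemma n56: "Wn Bk [[Wh,Bk],[Wh,Bk,Bk],[Bk,Wh,Bk,Bk]] = False"
  by (rule lose_rule) (simp add: evsimps n51 n50 n11)
lemma n57: "Wn Wh [[Wh,Bk,Bk],[Bk,Wh,Bk,Bk],[Wh,Bk,Wh,Bk,Wh]] = True"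
  by (rule win_rule) (simp add: evsimps n56)
lemma n58: "Wn Bk [[Bk,Wh,Bk,Bk],[Wh,Bk,Wh,Bk,Wh,Bk,Wh,Bk,Wh]] = False"
  by (rule lose_rule) (simp add: evsimps n44 n49 n53 n55 n57)
lemma n59: "Wn Wh [[Wh,Bk,Wh,Bk,Wh]] = False"
  by (rule lose_rule) (simp add: evsimps n19 n4)
lemma n60: "Wn Bk [[Wh,Bk,Wh,Bk,Wh,Bk,Wh]] = True"
  by (rule win_rule) (simp add: evsimps n59)
lemma n61: "Wn Wh [[Wh,Bk],[Wh,Wh,Bk,Wh]] = False"
  by (rule lose_rule) (simp add: evsimps n19 n4)
lemma n62: "Wn Bk [[Wh,Bk],[Wh,Wh,Bk,Wh,Bk,Wh]] = True"
  by (rule win_rule) (simp add: evsimps n61)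
lemma n63: "Wn Bk [[Wh,Bk],[Wh,Bk],[Wh,Wh,Bk,Wh]] = True"
  by (rule win_rule) (simp add: evsimps n61)
lemma n64: "Wn Bk [[Wh,Bk],[Wh,Bk,Wh,Bk]] = True"
  by (rule win_rule) (simp add: evsimps n15)
lemma n65: "Wn Wh [[Wh,Bk],[Wh,Bk,Wh,Bk,Wh,Bk,Wh]] = False"
  by (rule lose_rule) (simp add: evsimps n60 n62 n63 n64)
lemma n66: "Wn Bk [[Wh,Bk],[Wh,Bk,Wh,Bk,Wh,Bk,Wh,Bk,Wh]] = True"
  by (rule win_rule) (simp add: evsimps n65)
lemma n67: "Wn Bk [[Wh,Wh,Bk,Wh,Bk,Bk]] = True"
  by (rule win_rule) (simp add: evsimps Wn_nil)
lemma n68: "Wn Bk [[Bk,Wh,Bk,Bk]] = True"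
  by (rule win_rule) (simp add: evsimps Wn_nil)
lemma n69: "Wn Wh [[Wh,Bk,Wh,Bk,Wh,Bk,Bk]] = False"
  by (rule lose_rule) (simp add: evsimps n67 n41 n68 n64 n19)
lemma n70: "Wn Bk [[Wh,Bk,Wh,Bk,Wh,Bk,Wh,Bk,Wh]] = True"
  by (rule win_rule) (simp add: evsimps n69)
lemma n71: "Wn Wh [[Wh,Bk,Bk]] = False"
  by (rule lose_rule) (simp add: evsimps n4)
lemma n72: "Wn Bk [[Wh,Wh,Bk,Wh,Bk,Wh]] = True"
  by (rule win_rule) (simp add: evsimps n71)
lemma n73: "Wn Bk [[Wh,Wh,Bk],[Wh,Wh,Bk,Wh]] = True"
  by (rule win_rule) (simp add: evsimps n61)
lemma n74: "Wn Wh [[Wh,Wh,Bk,Wh,Bk,Wh,Bk,Wh]] = False"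
  by (rule lose_rule) (simp add: evsimps n72 n73 n18 n14 n34 n33)
lemma n75: "Wn Bk [[Bk,Wh,Bk,Bk],[Wh,Wh,Bk,Wh,Bk,Wh,Bk,Wh]] = True"
  by (rule win_rule) (simp add: evsimps n74)
lemma n76: "Wn Bk [[Wh,Bk,Bk],[Bk,Wh,Bk,Bk]] = True"
  by (rule win_rule) (simp add: evsimps n71)
lemma n77: "Wn Bk [[Wh,Bk],[Wh,Bk],[Wh,Bk,Bk]] = True"
  by (rule win_rule) (simp add: evsimps n15)
lemma n78: "Wn Bk [[Wh,Bk],[Wh,Bk,Bk]] = True"
  by (rule win_rule) (simp add: evsimps n71)
lemma n79: "Wn Wh [[Wh,Bk],[Wh,Bk,Bk],[Bk,Wh,Bk,Bk]] = False"
  by (rule lose_rule) (simp add: evsimps n76 n42 n77 n78)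
lemma n80: "Wn Bk [[Wh,Bk],[Bk,Wh,Bk,Bk],[Wh,Wh,Bk,Wh,Bk,Wh]] = True"
  by (rule win_rule) (simp add: evsimps n79)
lemma n81: "Wn Bk [[Bk,Wh,Bk,Bk],[Wh,Bk,Wh,Bk,Wh,Bk]] = True"
  by (rule win_rule) (simp add: evsimps n20)
lemma n82: "Wn Bk [[Wh,Bk],[Wh,Wh,Bk,Wh]] = True"
  by (rule win_rule) (simp add: evsimps n15)
lemma n83: "Wn Wh [[Wh,Bk,Wh,Bk],[Wh,Wh,Bk,Wh]] = False"
  by (rule lose_rule) (simp add: evsimps n73 n82 n19 n18)
lemma n84: "Wn Bk [[Bk,Wh,Bk,Bk],[Wh,Bk,Wh,Bk],[Wh,Wh,Bk,Wh]] = True"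
  by (rule win_rule) (simp add: evsimps n83)
lemma n85: "Wn Wh [[Bk,Wh,Bk,Bk],[Wh,Bk,Wh,Bk,Wh,Bk,Wh,Bk,Wh]] = False"
  by (rule lose_rule) (simp add: evsimps n66 n70 n75 n80 n81 n84)
lemma n86: "Wn Wh [[Wh,Bk],[Wh,Wh,Bk]] = True"
  by (rule win_rule) (simp add: evsimps n7)
lemma n87: "Wn Bk [[Wh,Bk],[Wh,Bk],[Wh,Wh,Bk]] = False"
  by (rule lose_rule) (simp add: evsimps n86 n25)
lemma n88: "Wn Wh [[Wh,Bk],[Wh,Wh,Bk,Wh,Bk,Bk]] = True"
  by (rule win_rule) (simp add: evsimps n87)
lemma n89: "Wn Wh [[Wh,Wh,Bk]] = True"
  by (rule win_rule) (simp add: evsimps Wn_nil)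
lemma n90: "Wn Bk [[Wh,Bk,Bk],[Wh,Wh,Bk]] = False"
  by (rule lose_rule) (simp add: evsimps n89 n11)
lemma n91: "Wn Wh [[Wh,Bk],[Wh,Bk,Bk],[Wh,Wh,Bk]] = True"
  by (rule win_rule) (simp add: evsimps n90)
lemma n92: "Wn Wh [[Wh,Wh,Bk],[Wh,Wh,Bk,Bk]] = True"
  by (rule win_rule) (simp add: evsimps n3)
lemma n93: "Wn Bk [[Wh,Wh,Bk],[Wh,Wh,Bk,Wh,Bk,Bk]] = False"
  by (rule lose_rule) (simp add: evsimps n88 n89 n91 n92)
lemma n94: "Wn Wh [[Wh,Bk,Wh,Bk],[Wh,Wh,Bk,Wh,Bk,Bk]] = True"
  by (rule win_rule) (simp add: evsimps n93)
lemma n95: "Wn Bk [[Wh,Bk],[Wh,Bk],[Wh,Wh,Bk,Bk]] = False"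
  by (rule lose_rule) (simp add: evsimps n26 n25)
lemma n96: "Wn Wh [[Wh,Bk],[Wh,Bk],[Wh,Wh,Bk,Wh,Bk,Bk]] = True"
  by (rule win_rule) (simp add: evsimps n95)
lemma n97: "Wn Wh [[Wh,Bk],[Wh,Bk],[Wh,Wh,Bk]] = True"
  by (rule win_rule) (simp add: evsimps n10)
lemma n98: "Wn Bk [[Wh,Bk],[Wh,Bk],[Wh,Bk],[Wh,Bk]] = False"
  by (rule lose_rule) (simp add: evsimps n25)
lemma n99: "Wn Wh [[Wh,Bk],[Wh,Bk],[Wh,Bk],[Wh,Bk,Bk]] = True"
  by (rule win_rule) (simp add: evsimps n98)
lemma n100: "Wn Bk [[Wh,Bk],[Wh,Bk],[Wh,Bk,Bk],[Wh,Wh,Bk]] = False"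
  by (rule lose_rule) (simp add: evsimps n91 n97 n99)
lemma n101: "Wn Wh [[Wh,Bk],[Wh,Bk,Bk],[Wh,Wh,Bk,Wh,Bk,Bk]] = True"
  by (rule win_rule) (simp add: evsimps n100)
lemma n102: "Wn Wh [[Wh,Bk],[Wh,Bk,Wh,Bk]] = True"
  by (rule win_rule) (simp add: evsimps n10)
lemma n103: "Wn Wh [[Wh,Bk],[Wh,Bk],[Wh,Bk,Bk],[Wh,Bk,Wh,Bk]] = True"
  by (rule win_rule) (simp add: evsimps n100)
lemma n104: "Wn Wh [[Wh,Bk],[Wh,Wh,Bk,Bk],[Wh,Bk,Wh,Bk]] = True"
  by (rule win_rule) (simp add: evsimps n95)
lemma n105: "Wn Bk [[Wh,Bk],[Wh,Bk,Wh,Bk],[Wh,Wh,Bk,Wh,Bk,Bk]] = False"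
  by (rule lose_rule) (simp add: evsimps n94 n88 n96 n101 n102 n103 n104)
lemma n106: "Wn Bk [[Wh,Bk],[Wh,Bk],[Wh,Bk]] = True"
  by (rule win_rule) (simp add: evsimps n15)
lemma n107: "Wn Wh [[Wh,Bk],[Wh,Bk],[Wh,Bk,Bk]] = False"
  by (rule lose_rule) (simp add: evsimps n78 n106)
lemma n108: "Wn Bk [[Wh,Bk],[Wh,Wh,Bk,Wh,Bk,Bk]] = True"
  by (rule win_rule) (simp add: evsimps n107)
lemma n109: "Wn Bk [[Wh,Bk,Bk],[Wh,Wh,Bk,Bk]] = True"
  by (rule win_rule) (simp add: evsimps n5)
lemma n110: "Wn Bk [[Wh,Bk,Bk]] = True"
  by (rule win_rule) (simp add: evsimps Wn_nil)
lemma n111: "Wn Wh [[Wh,Bk,Bk],[Wh,Wh,Bk]] = False"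
  by (rule lose_rule) (simp add: evsimps n16 n110)
lemma n112: "Wn Bk [[Wh,Bk],[Wh,Bk,Bk],[Wh,Wh,Bk]] = True"
  by (rule win_rule) (simp add: evsimps n111)
lemma n113: "Wn Wh [[Wh,Bk,Bk],[Wh,Wh,Bk,Wh,Bk,Bk]] = False"
  by (rule lose_rule) (simp add: evsimps n108 n109 n112 n110)
lemma n114: "Wn Bk [[Wh,Bk,Wh,Bk],[Wh,Wh,Bk,Wh,Bk,Bk]] = True"
  by (rule win_rule) (simp add: evsimps n113)
lemma n115: "Wn Wh [[Wh,Bk],[Wh,Bk],[Wh,Bk],[Wh,Bk]] = False"
  by (rule lose_rule) (simp add: evsimps n106)
lemma n116: "Wn Bk [[Wh,Bk],[Wh,Bk],[Wh,Bk],[Wh,Wh,Bk]] = True"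
  by (rule win_rule) (simp add: evsimps n115)
lemma n117: "Wn Wh [[Wh,Bk],[Wh,Bk],[Wh,Bk,Bk],[Wh,Wh,Bk]] = False"
  by (rule lose_rule) (simp add: evsimps n112 n116 n77)
lemma n118: "Wn Bk [[Wh,Bk],[Wh,Wh,Bk],[Wh,Wh,Bk,Wh,Bk,Bk]] = True"
  by (rule win_rule) (simp add: evsimps n117)
lemma n119: "Wn Bk [[Wh,Bk],[Wh,Bk],[Wh,Wh,Bk,Wh,Bk,Bk]] = True"
  by (rule win_rule) (simp add: evsimps n15)
lemma n120: "Wn Wh [[Wh,Bk],[Wh,Bk],[Wh,Wh,Bk,Bk]] = False"
  by (rule lose_rule) (simp add: evsimps n41 n106)
lemma n121: "Wn Bk [[Wh,Bk],[Wh,Wh,Bk,Bk],[Wh,Bk,Wh,Bk]] = True"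
  by (rule win_rule) (simp add: evsimps n120)
lemma n122: "Wn Bk [[Wh,Bk],[Wh,Bk],[Wh,Wh,Bk],[Wh,Bk,Wh,Bk]] = True"
  by (rule win_rule) (simp add: evsimps n117)
lemma n123: "Wn Wh [[Wh,Bk],[Wh,Bk,Wh,Bk],[Wh,Wh,Bk,Wh,Bk,Bk]] = False"
  by (rule lose_rule) (simp add: evsimps n114 n118 n119 n108 n121 n122 n64)
lemma n124: "Wn Wh [[Wh,Wh,Bk,Wh]] = True"
  by (rule win_rule) (simp add: evsimps Wn_nil)
lemma n125: "Wn Wh [[Wh,Wh,Bk,Wh,Bk,Bk]] = True"
  by (rule win_rule) (simp add: evsimps n3)
lemma n126: "Wn Bk [[Wh,Wh,Bk,Wh,Bk,Wh,Bk]] = False"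
  by (rule lose_rule) (simp add: evsimps n6 n102 n124 n26 n125)
lemma n127: "Wn Wh [[Bk,Wh,Bk,Wh,Bk,Wh,Bk,Wh,Bk]] = True"
  by (rule win_rule) (simp add: evsimps n126)
lemma n128: "Wn Wh [[Bk,Wh,Bk,Wh,Bk,Bk]] = True"
  by (rule win_rule) (simp add: evsimps n3)
lemma n129: "Wn Bk [[Bk,Wh,Bk,Wh,Bk,Wh,Bk,Bk]] = False"
  by (rule lose_rule) (simp add: evsimps n36 n37 n12 n8 n51 n128)
lemma n130: "Wn Wh [[Wh,Bk],[Bk,Wh,Bk,Wh,Bk,Wh,Bk,Bk]] = True"
  by (rule win_rule) (simp add: evsimps n129)
lemma n131: "Wn Wh [[Wh,Bk],[Wh,Bk],[Bk,Wh,Bk,Wh,Bk,Bk]] = True"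
  by (rule win_rule) (simp add: evsimps n95)
lemma n132: "Wn Wh [[Wh,Bk],[Wh,Bk,Wh,Bk,Wh,Bk]] = True"
  by (rule win_rule) (simp add: evsimps n13)
lemma n133: "Wn Wh [[Wh,Bk],[Bk,Wh,Bk,Bk],[Wh,Bk,Wh,Bk]] = True"
  by (rule win_rule) (simp add: evsimps n52)
lemma n134: "Wn Bk [[Wh,Bk],[Bk,Wh,Bk,Wh,Bk,Wh,Bk,Wh,Bk]] = False"
  by (rule lose_rule) (simp add: evsimps n127 n130 n131 n132 n133)
lemma n135: "Wn Wh [[Wh,Bk],[Wh,Bk,Wh,Bk,Wh,Bk,Wh,Bk,Wh,Bk,Wh,Bk]] = True"
  by (rule win_rule) (simp add: evsimps n134)
lemma n136: "Wn Bk [[Wh,Wh,Bk],[Wh,Wh,Bk,Bk]] = False"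
  by (rule lose_rule) (simp add: evsimps n26 n86)
lemma n137: "Wn Wh [[Wh,Wh,Bk],[Bk,Bk,Wh,Bk,Wh,Bk,Bk]] = True"
  by (rule win_rule) (simp add: evsimps n136)
lemma n138: "Wn Bk [[Wh,Wh,Bk],[Bk,Bk,Wh,Bk,Bk]] = False"
  by (rule lose_rule) (simp add: evsimps n37 n89)
lemma n139: "Wn Wh [[Wh,Bk],[Wh,Wh,Bk],[Bk,Bk,Wh,Bk,Bk]] = True"
  by (rule win_rule) (simp add: evsimps n138)
lemma n140: "Wn Wh [[Wh,Wh,Bk],[Wh,Bk,Wh,Bk,Bk]] = True"
  by (rule win_rule) (simp add: evsimps n136)
lemma n141: "Wn Bk [[Wh,Wh,Bk],[Wh,Wh,Bk]] = False"
  by (rule lose_rule) (simp add: evsimps n86)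
lemma n142: "Wn Wh [[Wh,Wh,Bk],[Wh,Bk,Wh,Bk]] = True"
  by (rule win_rule) (simp add: evsimps n141)
lemma n143: "Wn Wh [[Wh,Wh,Bk],[Bk,Wh,Bk,Bk]] = True"
  by (rule win_rule) (simp add: evsimps n7)
lemma n144: "Wn Bk [[Wh,Bk],[Wh,Wh,Bk],[Bk,Wh,Bk,Bk]] = False"
  by (rule lose_rule) (simp add: evsimps n143 n47 n86)
lemma n145: "Wn Wh [[Wh,Bk,Bk],[Wh,Wh,Bk],[Bk,Wh,Bk,Bk]] = True"
  by (rule win_rule) (simp add: evsimps n144)
lemma n146: "Wn Wh [[Wh,Wh,Bk],[Bk,Wh,Bk,Wh,Bk,Bk]] = True"
  by (rule win_rule) (simp add: evsimps n136)
lemma n147: "Wn Bk [[Wh,Wh,Bk],[Bk,Wh,Bk,Wh,Bk,Wh,Bk,Bk]] = False"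
  by (rule lose_rule) (simp add: evsimps n130 n137 n139 n140 n142 n145 n146)
lemma n148: "Wn Wh [[Wh,Wh,Bk],[Bk,Wh,Bk,Wh,Bk,Wh,Bk,Wh,Bk,Bk]] = True"
  by (rule win_rule) (simp add: evsimps n147)
lemma n149: "Wn Wh [[Wh,Wh,Bk],[Wh,Wh,Bk,Wh,Bk]] = True"
  by (rule win_rule) (simp add: evsimps n141)
lemma n150: "Wn Wh [[Wh,Bk],[Wh,Bk],[Wh,Wh,Bk,Wh,Bk]] = True"
  by (rule win_rule) (simp add: evsimps n27)
lemma n151: "Wn Wh [[Wh,Bk],[Wh,Bk],[Wh,Bk],[Wh,Wh,Bk]] = True"
  by (rule win_rule) (simp add: evsimps n87)
lemma n152: "Wn Wh [[Wh,Bk],[Wh,Wh,Bk],[Wh,Wh,Bk,Bk]] = True"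
  by (rule win_rule) (simp add: evsimps n136)
lemma n153: "Wn Bk [[Wh,Bk],[Wh,Wh,Bk],[Wh,Wh,Bk,Wh,Bk]] = False"
  by (rule lose_rule) (simp add: evsimps n149 n150 n86 n151 n152)
lemma n154: "Wn Wh [[Wh,Bk],[Wh,Wh,Bk,Wh,Bk,Wh,Bk,Wh,Bk]] = True"
  by (rule win_rule) (simp add: evsimps n153)
lemma n155: "Wn Wh [[Wh,Wh,Bk],[Wh,Bk,Wh]] = True"
  by (rule win_rule) (simp add: evsimps n7)
lemma n156: "Wn Bk [[Wh,Wh,Bk],[Wh,Bk,Wh,Bk,Wh,Bk]] = False"
  by (rule lose_rule) (simp add: evsimps n132 n143 n142 n155 n91 n140)
lemma n157: "Wn Wh [[Wh,Bk],[Wh,Wh,Bk],[Wh,Bk,Wh,Bk,Wh,Bk]] = True"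
  by (rule win_rule) (simp add: evsimps n156)
lemma n158: "Wn Bk [[Bk,Wh,Bk,Bk],[Wh,Wh,Bk,Wh]] = False"
  by (rule lose_rule) (simp add: evsimps n124 n6 n50)
lemma n159: "Wn Wh [[Wh,Wh,Bk],[Bk,Wh,Bk,Bk],[Wh,Wh,Bk,Wh]] = True"
  by (rule win_rule) (simp add: evsimps n158)
lemma n160: "Wn Wh [[Wh,Bk],[Wh,Bk],[Wh,Bk,Wh,Bk]] = True"
  by (rule win_rule) (simp add: evsimps n87)
lemma n161: "Wn Bk [[Wh,Bk],[Wh,Wh,Bk],[Wh,Bk,Wh,Bk]] = False"
  by (rule lose_rule) (simp add: evsimps n142 n160 n86 n97 n91)
lemma n162: "Wn Wh [[Wh,Wh,Bk],[Wh,Wh,Bk,Bk],[Wh,Bk,Wh,Bk]] = True"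
  by (rule win_rule) (simp add: evsimps n161)
lemma n163: "Wn Wh [[Wh,Wh,Bk],[Wh,Wh,Bk,Wh,Bk,Wh]] = True"
  by (rule win_rule) (simp add: evsimps n141)
lemma n164: "Wn Wh [[Wh,Bk],[Wh,Wh,Bk],[Wh,Wh,Bk,Wh,Bk,Bk]] = True"
  by (rule win_rule) (simp add: evsimps n93)
lemma n165: "Wn Wh [[Wh,Wh,Bk],[Wh,Wh,Bk,Wh,Bk,Wh,Bk,Bk]] = True"
  by (rule win_rule) (simp add: evsimps n93)
lemma n166: "Wn Bk [[Wh,Wh,Bk],[Wh,Wh,Bk,Wh,Bk,Wh,Bk,Wh,Bk]] = False"
  by (rule lose_rule) (simp add: evsimps n154 n146 n157 n159 n162 n163 n164 n165)
lemma n167: "Wn Wh [[Wh,Wh,Bk],[Wh,Bk,Wh,Bk,Wh,Bk,Wh,Bk,Wh,Bk]] = True"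
  by (rule win_rule) (simp add: evsimps n166)
lemma n168: "Wn Wh [[Wh,Wh,Bk],[Wh,Bk,Wh],[Bk,Wh,Bk,Wh,Bk,Wh,Bk,Bk]] = True"
  by (rule win_rule) (simp add: evsimps n147)
lemma n169: "Wn Wh [[Wh,Bk],[Wh,Wh,Bk,Wh,Bk,Wh,Bk]] = True"
  by (rule win_rule) (simp add: evsimps n126)
lemma n170: "Wn Wh [[Wh,Wh,Bk],[Wh,Wh,Bk]] = True"
  by (rule win_rule) (simp add: evsimps n7)
lemma n171: "Wn Bk [[Wh,Bk],[Wh,Wh,Bk],[Wh,Wh,Bk]] = False"
  by (rule lose_rule) (simp add: evsimps n170 n97)
lemma n172: "Wn Wh [[Wh,Bk],[Wh,Wh,Bk],[Wh,Bk,Wh,Bk]] = True"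
  by (rule win_rule) (simp add: evsimps n171)
lemma n173: "Wn Wh [[Wh,Wh,Bk],[Wh,Wh,Bk,Wh]] = True"
  by (rule win_rule) (simp add: evsimps n7)
lemma n174: "Wn Wh [[Wh,Wh,Bk],[Wh,Wh,Bk,Wh,Bk,Bk]] = True"
  by (rule win_rule) (simp add: evsimps n136)
lemma n175: "Wn Bk [[Wh,Wh,Bk],[Wh,Wh,Bk,Wh,Bk,Wh,Bk]] = False"
  by (rule lose_rule) (simp add: evsimps n169 n143 n172 n173 n152 n174)
lemma n176: "Wn Wh [[Wh,Wh,Bk],[Wh,Bk,Wh,Bk,Wh,Bk,Wh,Bk]] = True"
  by (rule win_rule) (simp add: evsimps n175)
lemma n177: "Wn Wh [[Wh,Bk],[Wh,Bk],[Wh,Bk],[Wh,Bk,Wh,Bk]] = True"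
  by (rule win_rule) (simp add: evsimps n98)
lemma n178: "Wn Wh [[Wh,Bk],[Wh,Bk],[Wh,Bk],[Wh,Wh,Bk,Bk]] = True"
  by (rule win_rule) (simp add: evsimps n95)
lemma n179: "Wn Bk [[Wh,Bk],[Wh,Bk],[Wh,Wh,Bk,Wh,Bk,Wh,Bk]] = False"
  by (rule lose_rule) (simp add: evsimps n169 n47 n177 n31 n178 n96)
lemma n180: "Wn Wh [[Wh,Bk],[Wh,Bk],[Wh,Bk,Wh,Bk,Wh,Bk,Wh,Bk]] = True"
  by (rule win_rule) (simp add: evsimps n179)
lemma n181: "Wn Wh [[Wh,Bk],[Wh,Wh,Bk],[Bk,Wh,Bk,Wh,Bk,Bk]] = True"
  by (rule win_rule) (simp add: evsimps n144)
lemma n182: "Wn Bk [[Wh,Bk,Wh],[Bk,Wh,Bk,Bk]] = False"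
  by (rule lose_rule) (simp add: evsimps n6 n9)
lemma n183: "Wn Wh [[Wh,Bk],[Wh,Bk,Wh],[Bk,Wh,Bk,Bk]] = True"
  by (rule win_rule) (simp add: evsimps n182)
lemma n184: "Wn Bk [[Wh,Wh,Bk],[Wh,Bk,Wh],[Bk,Wh,Bk,Bk]] = False"
  by (rule lose_rule) (simp add: evsimps n183 n143 n155)
lemma n185: "Wn Wh [[Wh,Bk],[Wh,Wh,Bk],[Wh,Bk,Wh],[Bk,Wh,Bk,Bk]] = True"
  by (rule win_rule) (simp add: evsimps n184)
lemma n186: "Wn Wh [[Wh,Bk],[Wh,Bk,Bk],[Wh,Wh,Bk],[Wh,Bk,Wh,Bk]] = True"
  by (rule win_rule) (simp add: evsimps n100)
lemma n187: "Wn Bk [[Wh,Bk],[Wh,Wh,Bk],[Wh,Wh,Bk,Wh]] = False"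
  by (rule lose_rule) (simp add: evsimps n173 n31 n86 n97)
lemma n188: "Wn Wh [[Wh,Bk],[Wh,Wh,Bk],[Wh,Bk,Wh,Bk,Wh]] = True"
  by (rule win_rule) (simp add: evsimps n187)
lemma n189: "Wn Bk [[Wh,Bk],[Wh,Bk,Wh,Bk,Bk]] = False"
  by (rule lose_rule) (simp add: evsimps n12 n2 n11)
lemma n190: "Wn Wh [[Wh,Bk],[Wh,Bk],[Wh,Bk,Wh,Bk,Bk]] = True"
  by (rule win_rule) (simp add: evsimps n189)
lemma n191: "Wn Bk [[Wh,Bk],[Wh,Wh,Bk],[Wh,Bk,Wh,Bk,Bk]] = False"
  by (rule lose_rule) (simp add: evsimps n140 n190 n86 n91)
lemma n192: "Wn Wh [[Wh,Bk],[Wh,Bk],[Wh,Wh,Bk],[Wh,Bk,Wh,Bk,Bk]] = True"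
  by (rule win_rule) (simp add: evsimps n191)
lemma n193: "Wn Bk [[Wh,Bk],[Wh,Bk],[Wh,Wh,Bk],[Wh,Wh,Bk,Bk]] = False"
  by (rule lose_rule) (simp add: evsimps n152 n178 n151)
lemma n194: "Wn Wh [[Wh,Bk],[Wh,Wh,Bk],[Wh,Bk,Wh,Bk,Wh,Bk,Bk]] = True"
  by (rule win_rule) (simp add: evsimps n193)
lemma n195: "Wn Bk [[Wh,Bk],[Wh,Wh,Bk],[Wh,Bk,Wh,Bk,Wh,Bk,Wh,Bk]] = False"
  by (rule lose_rule) (simp add: evsimps n176 n180 n181 n157 n185 n186 n188 n192 n194)
lemma n196: "Wn Wh [[Wh,Bk,Bk],[Wh,Wh,Bk],[Wh,Bk,Wh,Bk,Wh,Bk,Wh,Bk]] = True"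
  by (rule win_rule) (simp add: evsimps n195)
lemma n197: "Wn Bk [[Wh,Wh,Bk],[Bk,Wh,Bk,Bk]] = False"
  by (rule lose_rule) (simp add: evsimps n50 n89)
lemma n198: "Wn Wh [[Wh,Bk],[Wh,Wh,Bk],[Bk,Wh,Bk,Bk]] = True"
  by (rule win_rule) (simp add: evsimps n197)
lemma n199: "Wn Bk [[Wh,Bk],[Wh,Wh,Bk],[Bk,Wh,Bk,Wh,Bk,Bk]] = False"
  by (rule lose_rule) (simp add: evsimps n146 n131 n139 n97 n91 n198)
lemma n200: "Wn Wh [[Wh,Wh,Bk],[Wh,Bk,Wh,Bk,Wh],[Bk,Wh,Bk,Wh,Bk,Bk]] = True"
  by (rule win_rule) (simp add: evsimps n199)
lemma n201: "Wn Wh [[Wh,Wh,Bk,Bk],[Wh,Bk,Wh,Bk]] = True"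
  by (rule win_rule) (simp add: evsimps n136)
lemma n202: "Wn Wh [[Wh,Bk,Wh],[Wh,Wh,Bk,Bk]] = True"
  by (rule win_rule) (simp add: evsimps n3)
lemma n203: "Wn Wh [[Wh,Bk],[Wh,Bk,Bk],[Wh,Wh,Bk,Bk]] = True"
  by (rule win_rule) (simp add: evsimps n95)
lemma n204: "Wn Wh [[Wh,Wh,Bk,Bk],[Wh,Bk,Wh,Bk,Bk]] = True"
  by (rule win_rule) (simp add: evsimps n189)
lemma n205: "Wn Bk [[Wh,Wh,Bk,Bk],[Wh,Bk,Wh,Bk,Wh,Bk]] = False"
  by (rule lose_rule) (simp add: evsimps n132 n45 n201 n202 n203 n204)
lemma n206: "Wn Wh [[Wh,Bk],[Wh,Wh,Bk,Bk],[Wh,Bk,Wh,Bk,Wh,Bk]] = True"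
  by (rule win_rule) (simp add: evsimps n205)
lemma n207: "Wn Wh [[Wh,Wh,Bk],[Bk,Wh,Bk,Bk],[Wh,Wh,Bk,Bk]] = True"
  by (rule win_rule) (simp add: evsimps n136)
lemma n208: "Wn Wh [[Wh,Wh,Bk],[Wh,Bk,Wh],[Wh,Wh,Bk,Bk]] = True"
  by (rule win_rule) (simp add: evsimps n136)
lemma n209: "Wn Bk [[Wh,Bk,Bk],[Wh,Wh,Bk],[Wh,Wh,Bk,Bk]] = False"
  by (rule lose_rule) (simp add: evsimps n92 n203 n91)
lemma n210: "Wn Wh [[Wh,Bk],[Wh,Bk,Bk],[Wh,Wh,Bk],[Wh,Wh,Bk,Bk]] = True"
  by (rule win_rule) (simp add: evsimps n209)
lemma n211: "Wn Wh [[Wh,Wh,Bk],[Wh,Wh,Bk,Bk],[Wh,Bk,Wh,Bk,Bk]] = True"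
  by (rule win_rule) (simp add: evsimps n191)
lemma n212: "Wn Bk [[Wh,Wh,Bk],[Wh,Wh,Bk,Bk],[Wh,Bk,Wh,Bk,Wh,Bk]] = False"
  by (rule lose_rule) (simp add: evsimps n206 n157 n207 n162 n208 n210 n211)
lemma n213: "Wn Wh [[Wh,Wh,Bk],[Wh,Bk,Wh,Bk,Bk],[Wh,Bk,Wh,Bk,Wh,Bk]] = True"
  by (rule win_rule) (simp add: evsimps n212)
lemma n214: "Wn Wh [[Wh,Bk],[Bk,Wh,Bk,Bk],[Wh,Wh,Bk,Wh,Bk,Wh]] = True"
  by (rule win_rule) (simp add: evsimps n144)
lemma n215: "Wn Bk [[Wh,Wh,Bk],[Bk,Wh,Bk,Bk],[Wh,Wh,Bk,Wh,Bk,Wh]] = False"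
  by (rule lose_rule) (simp add: evsimps n214 n163 n145 n185 n159 n207)
lemma n216: "Wn Wh [[Wh,Wh,Bk],[Bk,Wh,Bk,Bk],[Wh,Bk,Wh,Bk,Wh,Bk,Wh]] = True"
  by (rule win_rule) (simp add: evsimps n215)
lemma n217: "Wn Wh [[Wh,Bk],[Wh,Bk],[Wh,Wh,Bk,Bk],[Wh,Bk,Wh,Bk]] = True"
  by (rule win_rule) (simp add: evsimps n193)
lemma n218: "Wn Wh [[Wh,Bk],[Wh,Bk],[Wh,Wh,Bk],[Wh,Bk,Wh,Bk]] = True"
  by (rule win_rule) (simp add: evsimps n161)
lemma n219: "Wn Wh [[Wh,Bk],[Wh,Bk],[Wh,Wh,Bk],[Wh,Wh,Bk,Bk]] = True"
  by (rule win_rule) (simp add: evsimps n95)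
lemma n220: "Wn Bk [[Wh,Bk],[Wh,Wh,Bk],[Wh,Wh,Bk,Bk],[Wh,Bk,Wh,Bk]] = False"
  by (rule lose_rule) (simp add: evsimps n162 n217 n218 n152 n219 n210)
lemma n221: "Wn Wh [[Wh,Wh,Bk],[Wh,Bk,Wh,Bk],[Wh,Bk,Wh,Bk,Wh,Bk,Bk]] = True"
  by (rule win_rule) (simp add: evsimps n220)
lemma n222: "Wn Wh [[Wh,Bk],[Wh,Wh,Bk,Wh,Bk,Wh,Bk,Wh]] = True"
  by (rule win_rule) (simp add: evsimps n187)
lemma n223: "Wn Wh [[Wh,Bk,Bk],[Wh,Wh,Bk],[Wh,Wh,Bk,Wh]] = True"
  by (rule win_rule) (simp add: evsimps n187)
lemma n224: "Wn Bk [[Wh,Wh,Bk],[Wh,Wh,Bk,Wh,Bk,Wh,Bk,Wh]] = False"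
  by (rule lose_rule) (simp add: evsimps n222 n140 n188 n223 n208 n163 n174)
lemma n225: "Wn Wh [[Wh,Wh,Bk],[Wh,Bk,Wh,Bk,Wh,Bk,Wh,Bk,Wh]] = True"
  by (rule win_rule) (simp add: evsimps n224)
lemma n226: "Wn Wh [[Wh,Bk],[Wh,Bk],[Wh,Bk],[Wh,Bk],[Wh,Bk]] = True"
  by (rule win_rule) (simp add: evsimps n98)
lemma n227: "Wn Bk [[Wh,Bk],[Wh,Bk],[Wh,Bk],[Wh,Bk],[Wh,Wh,Bk]] = False"
  by (rule lose_rule) (simp add: evsimps n151 n226)
lemma n228: "Wn Wh [[Wh,Bk],[Wh,Bk],[Wh,Bk],[Wh,Wh,Bk,Wh,Bk,Bk]] = True"
  by (rule win_rule) (simp add: evsimps n227)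
lemma n229: "Wn Wh [[Wh,Bk],[Wh,Bk],[Wh,Bk],[Wh,Bk,Bk],[Wh,Wh,Bk]] = True"
  by (rule win_rule) (simp add: evsimps n100)
lemma n230: "Wn Bk [[Wh,Bk],[Wh,Bk],[Wh,Wh,Bk],[Wh,Wh,Bk,Wh,Bk,Bk]] = False"
  by (rule lose_rule) (simp add: evsimps n164 n228 n97 n229 n219)
lemma n231: "Wn Wh [[Wh,Bk],[Wh,Wh,Bk],[Wh,Bk,Wh,Bk,Wh,Bk,Wh,Bk,Bk]] = True"
  by (rule win_rule) (simp add: evsimps n230)
lemma n232: "Wn Wh [[Wh,Wh,Bk,Bk],[Wh,Wh,Bk,Wh,Bk]] = True"
  by (rule win_rule) (simp add: evsimps n27)
lemma n233: "Wn Bk [[Wh,Wh,Bk,Bk],[Wh,Wh,Bk,Bk]] = False"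
  by (rule lose_rule) (simp add: evsimps n26)
lemma n234: "Wn Wh [[Wh,Bk],[Wh,Wh,Bk,Bk],[Wh,Wh,Bk,Bk]] = True"
  by (rule win_rule) (simp add: evsimps n233)
lemma n235: "Wn Bk [[Wh,Bk],[Wh,Wh,Bk,Bk],[Wh,Wh,Bk,Wh,Bk]] = False"
  by (rule lose_rule) (simp add: evsimps n232 n150 n26 n178 n234)
lemma n236: "Wn Wh [[Wh,Bk],[Wh,Wh,Bk,Wh,Bk,Wh,Bk,Wh,Bk,Bk]] = True"
  by (rule win_rule) (simp add: evsimps n235)
lemma n237: "Wn Wh [[Wh,Wh,Bk],[Wh,Wh,Bk,Wh],[Bk,Bk,Wh,Bk,Bk]] = True"
  by (rule win_rule) (simp add: evsimps n138)
lemma n238: "Wn Wh [[Wh,Bk,Bk],[Wh,Wh,Bk],[Wh,Wh,Bk,Wh,Bk,Bk]] = True"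
  by (rule win_rule) (simp add: evsimps n209)
lemma n239: "Wn Bk [[Wh,Wh,Bk],[Wh,Wh,Bk,Wh,Bk,Wh,Bk,Wh,Bk,Bk]] = False"
  by (rule lose_rule) (simp add: evsimps n236 n137 n194 n237 n211 n163 n238 n165)
lemma n240: "Wn Wh [[Wh,Wh,Bk],[Wh,Bk,Wh,Bk,Wh,Bk,Wh,Bk,Wh,Bk,Bk]] = True"
  by (rule win_rule) (simp add: evsimps n239)
lemma n241: "Wn Bk [[Wh,Wh,Bk],[Wh,Bk,Wh,Bk,Wh,Bk,Wh,Bk,Wh,Bk,Wh,Bk]] = False"
  by (rule lose_rule) (simp add: evsimps n135 n148 n167 n168 n196 n200 n213 n216 n221 n225 n231 n240)
lemma n242: "Wn Wh [[Wh,Bk,Wh,Bk],[Wh,Bk,Wh,Bk,Wh,Bk,Wh,Bk,Wh,Bk,Wh,Bk]] = True"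
  by (rule win_rule) (simp add: evsimps n241)
lemma n243: "Wn Wh [[Bk,Wh,Bk,Bk],[Wh,Wh,Bk,Wh,Bk,Wh]] = True"
  by (rule win_rule) (simp add: evsimps n158)
lemma n244: "Wn Wh [[Wh,Bk],[Wh,Wh,Bk,Wh,Bk,Wh]] = True"
  by (rule win_rule) (simp add: evsimps n10)
lemma n245: "Wn Wh [[Wh,Bk,Bk],[Bk,Wh,Bk,Wh,Bk]] = True"
  by (rule win_rule) (simp add: evsimps n90)
lemma n246: "Wn Wh [[Wh,Bk],[Wh,Bk],[Wh,Bk,Wh]] = True"
  by (rule win_rule) (simp add: evsimps n21)
lemma n247: "Wn Bk [[Wh,Bk],[Wh,Wh,Bk],[Wh,Bk,Wh]] = False"
  by (rule lose_rule) (simp add: evsimps n155 n246 n86)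
lemma n248: "Wn Wh [[Wh,Bk],[Wh,Bk,Wh],[Bk,Wh,Bk,Wh,Bk]] = True"
  by (rule win_rule) (simp add: evsimps n247)
lemma n249: "Wn Bk [[Bk,Wh,Bk,Wh,Bk]] = False"
  by (rule lose_rule) (simp add: evsimps n6 n2)
lemma n250: "Wn Wh [[Wh,Wh,Bk,Wh],[Bk,Wh,Bk,Wh,Bk]] = True"
  by (rule win_rule) (simp add: evsimps n249)
lemma n251: "Wn Wh [[Wh,Wh,Bk,Bk],[Bk,Wh,Bk,Wh,Bk]] = True"
  by (rule win_rule) (simp add: evsimps n136)
lemma n252: "Wn Bk [[Bk,Wh,Bk,Wh,Bk],[Wh,Wh,Bk,Wh,Bk,Wh]] = False"
  by (rule lose_rule) (simp add: evsimps n243 n244 n245 n248 n250 n251)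
lemma n253: "Wn Wh [[Wh,Bk],[Bk,Wh,Bk,Wh,Bk],[Wh,Wh,Bk,Wh,Bk,Wh]] = True"
  by (rule win_rule) (simp add: evsimps n252)
lemma n254: "Wn Wh [[Wh,Bk],[Bk,Wh,Bk,Bk],[Wh,Wh,Bk,Wh]] = True"
  by (rule win_rule) (simp add: evsimps n158)
lemma n255: "Wn Wh [[Wh,Bk],[Wh,Bk],[Wh,Bk],[Bk,Wh,Bk,Bk]] = True"
  by (rule win_rule) (simp add: evsimps n98)
lemma n256: "Wn Bk [[Wh,Bk],[Wh,Bk],[Bk,Wh,Bk,Bk],[Wh,Wh,Bk,Wh]] = False"
  by (rule lose_rule) (simp add: evsimps n254 n31 n47 n255)
lemma n257: "Wn Wh [[Wh,Bk],[Wh,Bk],[Bk,Wh,Bk,Bk],[Wh,Wh,Bk,Wh,Bk,Wh]] = True"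
  by (rule win_rule) (simp add: evsimps n256)
lemma n258: "Wn Wh [[Wh,Bk],[Wh,Bk],[Wh,Bk],[Wh,Wh,Bk,Wh,Bk,Wh]] = True"
  by (rule win_rule) (simp add: evsimps n98)
lemma n259: "Wn Wh [[Wh,Bk],[Wh,Bk],[Wh,Bk,Bk],[Bk,Wh,Bk,Wh,Bk]] = True"
  by (rule win_rule) (simp add: evsimps n100)
lemma n260: "Wn Wh [[Wh,Bk],[Wh,Bk],[Wh,Wh,Bk],[Wh,Bk,Wh]] = True"
  by (rule win_rule) (simp add: evsimps n247)
lemma n261: "Wn Bk [[Wh,Bk],[Wh,Bk],[Wh,Bk],[Wh,Bk,Wh]] = False"
  by (rule lose_rule) (simp add: evsimps n246 n25)
lemma n262: "Wn Wh [[Wh,Bk],[Wh,Bk],[Wh,Bk],[Wh,Bk],[Wh,Bk,Wh]] = True"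
  by (rule win_rule) (simp add: evsimps n261)
lemma n263: "Wn Bk [[Wh,Bk],[Wh,Bk],[Wh,Bk],[Wh,Wh,Bk],[Wh,Bk,Wh]] = False"
  by (rule lose_rule) (simp add: evsimps n260 n262 n151)
lemma n264: "Wn Wh [[Wh,Bk],[Wh,Bk],[Wh,Bk],[Wh,Bk,Wh],[Bk,Wh,Bk,Wh,Bk]] = True"
  by (rule win_rule) (simp add: evsimps n263)
lemma n265: "Wn Wh [[Wh,Bk],[Bk,Wh,Bk,Wh,Bk]] = True"
  by (rule win_rule) (simp add: evsimps n249)
lemma n266: "Wn Wh [[Wh,Bk],[Wh,Bk],[Bk,Wh,Bk,Wh,Bk]] = True"
  by (rule win_rule) (simp add: evsimps n87)
lemma n267: "Wn Bk [[Wh,Bk],[Wh,Wh,Bk,Wh],[Bk,Wh,Bk,Wh,Bk]] = False"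
  by (rule lose_rule) (simp add: evsimps n250 n265 n266 n254 n31)
lemma n268: "Wn Wh [[Wh,Bk],[Wh,Bk],[Wh,Wh,Bk,Wh],[Bk,Wh,Bk,Wh,Bk]] = True"
  by (rule win_rule) (simp add: evsimps n267)
lemma n269: "Wn Wh [[Wh,Bk],[Wh,Bk],[Wh,Wh,Bk,Bk],[Bk,Wh,Bk,Wh,Bk]] = True"
  by (rule win_rule) (simp add: evsimps n193)
lemma n270: "Wn Bk [[Wh,Bk],[Wh,Bk],[Bk,Wh,Bk,Wh,Bk],[Wh,Wh,Bk,Wh,Bk,Wh]] = False"
  by (rule lose_rule) (simp add: evsimps n253 n257 n258 n259 n264 n268 n269)
lemma n271: "Wn Wh [[Wh,Bk],[Wh,Bk],[Wh,Bk,Wh,Bk,Wh,Bk,Wh,Bk,Wh,Bk,Wh,Bk]] = True"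
  by (rule win_rule) (simp add: evsimps n270)
lemma n272: "Wn Wh [[Wh,Bk,Bk],[Bk,Wh,Bk,Wh,Bk,Wh,Bk,Wh,Bk]] = True"
  by (rule win_rule) (simp add: evsimps n134)
lemma n273: "Wn Wh [[Bk,Wh,Bk,Wh,Bk,Wh,Bk]] = True"
  by (rule win_rule) (simp add: evsimps n249)
lemma n274: "Wn Wh [[Wh,Bk],[Bk,Wh,Bk,Wh,Bk,Bk]] = True"
  by (rule win_rule) (simp add: evsimps n46)
lemma n275: "Wn Bk [[Wh,Bk],[Bk,Wh,Bk,Wh,Bk,Wh,Bk]] = False"
  by (rule lose_rule) (simp add: evsimps n273 n274 n47 n102)
lemma n276: "Wn Wh [[Wh,Bk],[Bk,Wh,Bk,Wh,Bk,Wh,Bk,Wh,Bk]] = True"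
  by (rule win_rule) (simp add: evsimps n275)
lemma n277: "Wn Wh [[Wh,Bk],[Wh,Bk],[Bk,Bk,Wh,Bk,Wh,Bk,Bk]] = True"
  by (rule win_rule) (simp add: evsimps n38)
lemma n278: "Wn Wh [[Wh,Bk],[Wh,Bk],[Wh,Bk],[Bk,Bk,Wh,Bk,Bk]] = True"
  by (rule win_rule) (simp add: evsimps n98)
lemma n279: "Wn Wh [[Wh,Bk],[Wh,Bk],[Wh,Bk,Bk],[Bk,Wh,Bk,Bk]] = True"
  by (rule win_rule) (simp add: evsimps n56)
lemma n280: "Wn Bk [[Wh,Bk],[Wh,Bk],[Bk,Wh,Bk,Wh,Bk,Wh,Bk,Bk]] = False"
  by (rule lose_rule) (simp add: evsimps n130 n277 n278 n190 n160 n279 n131)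
lemma n281: "Wn Wh [[Wh,Bk],[Wh,Bk,Bk],[Bk,Wh,Bk,Wh,Bk,Wh,Bk,Bk]] = True"
  by (rule win_rule) (simp add: evsimps n280)
lemma n282: "Wn Wh [[Wh,Bk],[Wh,Bk],[Wh,Bk,Bk],[Bk,Wh,Bk,Wh,Bk,Bk]] = True"
  by (rule win_rule) (simp add: evsimps n100)
lemma n283: "Wn Bk [[Wh,Bk],[Wh,Bk],[Wh,Bk,Wh,Bk,Wh,Bk]] = False"
  by (rule lose_rule) (simp add: evsimps n132 n47 n160 n246 n99 n190)
lemma n284: "Wn Wh [[Wh,Bk],[Wh,Bk,Bk],[Wh,Bk,Wh,Bk,Wh,Bk]] = True"
  by (rule win_rule) (simp add: evsimps n283)
lemma n285: "Wn Bk [[Wh,Bk],[Wh,Bk],[Bk,Wh,Bk,Bk],[Wh,Bk,Wh,Bk]] = False"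
  by (rule lose_rule) (simp add: evsimps n133 n160 n47 n255 n279)
lemma n286: "Wn Wh [[Wh,Bk],[Wh,Bk,Bk],[Bk,Wh,Bk,Bk],[Wh,Bk,Wh,Bk]] = True"
  by (rule win_rule) (simp add: evsimps n285)
lemma n287: "Wn Bk [[Wh,Bk],[Wh,Bk,Bk],[Bk,Wh,Bk,Wh,Bk,Wh,Bk,Wh,Bk]] = False"
  by (rule lose_rule) (simp add: evsimps n272 n276 n281 n282 n284 n286)
lemma n288: "Wn Wh [[Wh,Bk],[Wh,Bk,Bk],[Wh,Bk,Wh,Bk,Wh,Bk,Wh,Bk,Wh,Bk,Wh,Bk]] = True"
  by (rule win_rule) (simp add: evsimps n287)
lemma n289: "Wn Wh [[Wh,Bk],[Wh,Bk],[Bk,Wh,Bk,Wh,Bk,Wh,Bk,Wh,Bk,Bk]] = True"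
  by (rule win_rule) (simp add: evsimps n280)
lemma n290: "Wn Wh [[Wh,Bk],[Wh,Bk],[Bk,Wh,Bk,Bk],[Wh,Wh,Bk,Bk]] = True"
  by (rule win_rule) (simp add: evsimps n48)
lemma n291: "Wn Wh [[Wh,Bk],[Wh,Bk],[Wh,Wh,Bk],[Bk,Wh,Bk,Bk]] = True"
  by (rule win_rule) (simp add: evsimps n144)
lemma n292: "Wn Bk [[Wh,Bk],[Wh,Wh,Bk],[Bk,Wh,Bk,Bk],[Wh,Wh,Bk,Bk]] = False"
  by (rule lose_rule) (simp add: evsimps n207 n290 n152 n291)
lemma n293: "Wn Wh [[Wh,Bk],[Wh,Wh,Bk],[Bk,Bk,Wh,Bk,Wh,Bk,Wh,Bk,Bk]] = True"
  by (rule win_rule) (simp add: evsimps n292)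
lemma n294: "Wn Bk [[Wh,Bk],[Wh,Wh,Bk],[Bk,Bk,Wh,Bk,Wh,Bk,Bk]] = False"
  by (rule lose_rule) (simp add: evsimps n137 n277 n139 n91)
lemma n295: "Wn Wh [[Wh,Bk],[Wh,Bk],[Wh,Wh,Bk],[Bk,Bk,Wh,Bk,Wh,Bk,Bk]] = True"
  by (rule win_rule) (simp add: evsimps n294)
lemma n296: "Wn Bk [[Wh,Bk],[Wh,Bk],[Wh,Wh,Bk],[Bk,Bk,Wh,Bk,Bk]] = False"
  by (rule lose_rule) (simp add: evsimps n139 n278 n97)
lemma n297: "Wn Wh [[Wh,Bk],[Wh,Wh,Bk],[Wh,Bk,Wh,Bk],[Bk,Bk,Wh,Bk,Bk]] = True"
  by (rule win_rule) (simp add: evsimps n296)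
lemma n298: "Wn Wh [[Wh,Bk],[Bk,Wh,Bk,Bk],[Wh,Bk,Wh,Bk,Bk]] = True"
  by (rule win_rule) (simp add: evsimps n54)
lemma n299: "Wn Bk [[Wh,Wh,Bk],[Bk,Wh,Bk,Bk],[Wh,Bk,Wh,Bk,Bk]] = False"
  by (rule lose_rule) (simp add: evsimps n298 n140 n143 n145)
lemma n300: "Wn Wh [[Wh,Bk],[Wh,Wh,Bk],[Bk,Wh,Bk,Bk],[Wh,Bk,Wh,Bk,Bk]] = True"
  by (rule win_rule) (simp add: evsimps n299)
lemma n301: "Wn Bk [[Wh,Bk],[Wh,Bk,Bk],[Wh,Wh,Bk],[Bk,Wh,Bk,Bk]] = False"
  by (rule lose_rule) (simp add: evsimps n145 n198 n279 n91)
lemma n302: "Wn Wh [[Wh,Bk],[Wh,Bk,Bk],[Wh,Wh,Bk],[Bk,Wh,Bk,Wh,Bk,Bk]] = True"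
  by (rule win_rule) (simp add: evsimps n301)
lemma n303: "Wn Wh [[Wh,Bk],[Wh,Wh,Bk],[Bk,Wh,Bk,Wh,Bk,Wh,Bk,Bk]] = True"
  by (rule win_rule) (simp add: evsimps n147)
lemma n304: "Wn Bk [[Wh,Bk],[Wh,Wh,Bk],[Bk,Wh,Bk,Wh,Bk,Wh,Bk,Wh,Bk,Bk]] = False"
  by (rule lose_rule) (simp add: evsimps n148 n289 n293 n295 n194 n297 n300 n157 n302 n303)
lemma n305: "Wn Wh [[Wh,Bk],[Wh,Bk,Wh,Bk],[Bk,Wh,Bk,Wh,Bk,Wh,Bk,Wh,Bk,Bk]] = True"
  by (rule win_rule) (simp add: evsimps n304)
lemma n306: "Wn Bk [[Bk,Wh,Bk,Wh,Bk,Wh,Bk]] = False"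
  by (rule lose_rule) (simp add: evsimps n128 n50 n8)
lemma n307: "Wn Wh [[Wh,Bk],[Bk,Wh,Bk,Wh,Bk,Wh,Bk]] = True"
  by (rule win_rule) (simp add: evsimps n306)
lemma n308: "Wn Bk [[Wh,Bk],[Wh,Bk],[Bk,Wh,Bk,Wh,Bk,Wh,Bk]] = False"
  by (rule lose_rule) (simp add: evsimps n307 n131 n255 n160)
lemma n309: "Wn Wh [[Wh,Bk],[Wh,Bk],[Wh,Bk,Wh,Bk,Wh,Bk,Wh,Bk,Wh,Bk]] = True"
  by (rule win_rule) (simp add: evsimps n308)
lemma n310: "Wn Wh [[Wh,Wh,Bk],[Bk,Wh,Bk,Wh,Bk]] = True"
  by (rule win_rule) (simp add: evsimps n249)
lemma n311: "Wn Bk [[Wh,Bk],[Wh,Wh,Bk],[Bk,Wh,Bk,Wh,Bk]] = False"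
  by (rule lose_rule) (simp add: evsimps n310 n266 n198 n97)
lemma n312: "Wn Wh [[Wh,Bk],[Wh,Wh,Bk],[Wh,Bk,Wh,Bk,Wh,Bk,Wh,Bk]] = True"
  by (rule win_rule) (simp add: evsimps n311)
lemma n313: "Wn Bk [[Wh,Bk],[Wh,Bk,Wh],[Wh,Wh,Bk,Bk]] = False"
  by (rule lose_rule) (simp add: evsimps n202 n26 n246)
lemma n314: "Wn Wh [[Wh,Bk],[Wh,Bk,Wh],[Bk,Wh,Bk,Wh,Bk,Bk]] = True"
  by (rule win_rule) (simp add: evsimps n313)
lemma n315: "Wn Wh [[Wh,Wh,Bk],[Wh,Bk,Wh],[Bk,Bk,Wh,Bk,Bk]] = True"
  by (rule win_rule) (simp add: evsimps n138)
lemma n316: "Wn Wh [[Wh,Bk],[Wh,Wh,Bk],[Wh,Bk,Wh]] = True"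
  by (rule win_rule) (simp add: evsimps n21)
lemma n317: "Wn Wh [[Wh,Bk,Bk],[Wh,Wh,Bk],[Wh,Bk,Wh]] = True"
  by (rule win_rule) (simp add: evsimps n247)
lemma n318: "Wn Wh [[Wh,Wh,Bk],[Wh,Bk,Wh],[Bk,Wh,Bk,Bk]] = True"
  by (rule win_rule) (simp add: evsimps n182)
lemma n319: "Wn Bk [[Wh,Wh,Bk],[Wh,Bk,Wh],[Bk,Wh,Bk,Wh,Bk,Bk]] = False"
  by (rule lose_rule) (simp add: evsimps n314 n146 n315 n316 n317 n318)
lemma n320: "Wn Wh [[Wh,Bk],[Wh,Wh,Bk],[Wh,Bk,Wh],[Bk,Wh,Bk,Wh,Bk,Bk]] = True"
  by (rule win_rule) (simp add: evsimps n319)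
lemma n321: "Wn Wh [[Wh,Wh,Bk],[Wh,Bk,Wh,Bk,Wh,Bk]] = True"
  by (rule win_rule) (simp add: evsimps n13)
lemma n322: "Wn Wh [[Wh,Bk,Bk],[Wh,Wh,Bk],[Wh,Bk,Wh,Bk]] = True"
  by (rule win_rule) (simp add: evsimps n161)
lemma n323: "Wn Wh [[Wh,Bk],[Wh,Bk,Bk],[Wh,Bk,Bk],[Wh,Wh,Bk]] = True"
  by (rule win_rule) (simp add: evsimps n100)
lemma n324: "Wn Wh [[Wh,Bk,Bk],[Wh,Wh,Bk],[Wh,Bk,Wh,Bk,Bk]] = True"
  by (rule win_rule) (simp add: evsimps n191)
lemma n325: "Wn Bk [[Wh,Bk,Bk],[Wh,Wh,Bk],[Wh,Bk,Wh,Bk,Wh,Bk]] = False"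
  by (rule lose_rule) (simp add: evsimps n321 n284 n145 n322 n317 n323 n324)
lemma n326: "Wn Wh [[Wh,Bk],[Wh,Bk,Bk],[Wh,Wh,Bk],[Wh,Bk,Wh,Bk,Wh,Bk]] = True"
  by (rule win_rule) (simp add: evsimps n325)
lemma n327: "Wn Bk [[Wh,Bk],[Wh,Bk],[Wh,Wh,Bk],[Bk,Wh,Bk,Bk]] = False"
  by (rule lose_rule) (simp add: evsimps n198 n255 n97)
lemma n328: "Wn Wh [[Wh,Bk],[Wh,Wh,Bk],[Bk,Wh,Bk,Bk],[Wh,Bk,Wh,Bk,Wh]] = True"
  by (rule win_rule) (simp add: evsimps n327)
lemma n329: "Wn Wh [[Wh,Bk],[Wh,Bk,Wh,Bk],[Wh,Bk,Wh,Bk,Bk]] = True"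
  by (rule win_rule) (simp add: evsimps n191)
lemma n330: "Wn Wh [[Wh,Bk],[Wh,Wh,Bk],[Wh,Bk,Wh,Bk,Bk]] = True"
  by (rule win_rule) (simp add: evsimps n189)
lemma n331: "Wn Bk [[Wh,Wh,Bk],[Wh,Bk,Wh,Bk],[Wh,Bk,Wh,Bk,Bk]] = False"
  by (rule lose_rule) (simp add: evsimps n329 n140 n330 n324 n142 n322)
lemma n332: "Wn Wh [[Wh,Bk],[Wh,Wh,Bk],[Wh,Bk,Wh,Bk],[Wh,Bk,Wh,Bk,Bk]] = True"
  by (rule win_rule) (simp add: evsimps n331)
lemma n333: "Wn Wh [[Wh,Bk],[Wh,Wh,Bk],[Wh,Bk,Wh,Bk,Wh,Bk,Wh]] = True"
  by (rule win_rule) (simp add: evsimps n161)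
lemma n334: "Wn Wh [[Wh,Bk],[Wh,Bk],[Wh,Wh,Bk],[Wh,Bk,Wh,Bk,Wh,Bk,Bk]] = True"
  by (rule win_rule) (simp add: evsimps n230)
lemma n335: "Wn Bk [[Wh,Bk],[Wh,Wh,Bk],[Wh,Bk,Wh,Bk,Wh,Bk,Wh,Bk,Wh,Bk]] = False"
  by (rule lose_rule) (simp add: evsimps n167 n309 n303 n312 n320 n326 n328 n332 n333 n334 n231)
lemma n336: "Wn Wh [[Wh,Bk],[Wh,Bk,Wh,Bk],[Wh,Bk,Wh,Bk,Wh,Bk,Wh,Bk,Wh,Bk]] = True"
  by (rule win_rule) (simp add: evsimps n335)
lemma n337: "Wn Wh [[Wh,Bk,Wh,Bk],[Bk,Wh,Bk,Wh,Bk,Wh,Bk,Bk]] = True"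
  by (rule win_rule) (simp add: evsimps n147)
lemma n338: "Wn Wh [[Wh,Bk,Wh],[Bk,Wh,Bk,Wh,Bk,Wh,Bk,Bk]] = True"
  by (rule win_rule) (simp add: evsimps n129)
lemma n339: "Wn Wh [[Wh,Bk],[Wh,Bk],[Wh,Bk,Wh],[Bk,Wh,Bk,Bk]] = True"
  by (rule win_rule) (simp add: evsimps n261)
lemma n340: "Wn Bk [[Wh,Bk],[Wh,Wh,Bk],[Wh,Bk,Wh],[Bk,Wh,Bk,Bk]] = False"
  by (rule lose_rule) (simp add: evsimps n318 n339 n198 n316)
lemma n341: "Wn Wh [[Wh,Bk],[Wh,Bk,Wh],[Bk,Wh,Bk,Wh,Bk,Wh,Bk,Bk]] = True"
  by (rule win_rule) (simp add: evsimps n340)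
lemma n342: "Wn Wh [[Wh,Bk,Wh],[Bk,Bk,Wh,Bk,Bk]] = True"
  by (rule win_rule) (simp add: evsimps n21)
lemma n343: "Wn Wh [[Wh,Bk,Bk],[Wh,Bk,Wh]] = True"
  by (rule win_rule) (simp add: evsimps n21)
lemma n344: "Wn Bk [[Wh,Bk,Wh],[Bk,Bk,Wh,Bk,Wh,Bk,Bk]] = False"
  by (rule lose_rule) (simp add: evsimps n36 n342 n343)
lemma n345: "Wn Wh [[Wh,Bk],[Wh,Bk,Wh],[Bk,Bk,Wh,Bk,Wh,Bk,Bk]] = True"
  by (rule win_rule) (simp add: evsimps n344)
lemma n346: "Wn Wh [[Wh,Bk],[Wh,Bk],[Wh,Bk,Wh],[Bk,Bk,Wh,Bk,Bk]] = True"
  by (rule win_rule) (simp add: evsimps n261)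
lemma n347: "Wn Bk [[Wh,Bk,Wh],[Wh,Bk,Wh,Bk,Bk]] = False"
  by (rule lose_rule) (simp add: evsimps n12 n9 n343)
lemma n348: "Wn Wh [[Wh,Bk],[Wh,Bk,Wh],[Wh,Bk,Wh,Bk,Bk]] = True"
  by (rule win_rule) (simp add: evsimps n347)
lemma n349: "Wn Wh [[Wh,Bk],[Wh,Bk,Wh],[Wh,Bk,Wh,Bk]] = True"
  by (rule win_rule) (simp add: evsimps n247)
lemma n350: "Wn Wh [[Wh,Bk,Wh],[Bk,Wh,Bk,Bk]] = True"
  by (rule win_rule) (simp add: evsimps n21)
lemma n351: "Wn Bk [[Wh,Bk,Bk],[Wh,Bk,Wh],[Bk,Wh,Bk,Bk]] = False"
  by (rule lose_rule) (simp add: evsimps n350 n51 n343)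
lemma n352: "Wn Wh [[Wh,Bk],[Wh,Bk,Bk],[Wh,Bk,Wh],[Bk,Wh,Bk,Bk]] = True"
  by (rule win_rule) (simp add: evsimps n351)
lemma n353: "Wn Bk [[Wh,Bk],[Wh,Bk,Wh],[Bk,Wh,Bk,Wh,Bk,Wh,Bk,Bk]] = False"
  by (rule lose_rule) (simp add: evsimps n338 n130 n345 n346 n348 n349 n352 n314)
lemma n354: "Wn Wh [[Wh,Bk,Bk],[Wh,Bk,Wh],[Bk,Wh,Bk,Wh,Bk,Wh,Bk,Bk]] = True"
  by (rule win_rule) (simp add: evsimps n353)
lemma n355: "Wn Bk [[Wh,Wh,Bk],[Wh,Bk,Wh],[Bk,Bk,Wh,Bk,Wh,Bk,Bk]] = False"
  by (rule lose_rule) (simp add: evsimps n345 n137 n315 n317)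
lemma n356: "Wn Wh [[Wh,Bk,Wh],[Wh,Bk,Wh,Bk],[Bk,Bk,Wh,Bk,Wh,Bk,Bk]] = True"
  by (rule win_rule) (simp add: evsimps n355)
lemma n357: "Wn Bk [[Wh,Bk],[Wh,Wh,Bk],[Wh,Bk,Wh],[Bk,Bk,Wh,Bk,Bk]] = False"
  by (rule lose_rule) (simp add: evsimps n315 n346 n139 n316)
lemma n358: "Wn Wh [[Wh,Bk],[Wh,Bk,Wh],[Wh,Bk,Wh,Bk],[Bk,Bk,Wh,Bk,Bk]] = True"
  by (rule win_rule) (simp add: evsimps n357)
lemma n359: "Wn Bk [[Wh,Wh,Bk],[Wh,Bk,Wh],[Wh,Bk,Wh,Bk,Bk]] = False"
  by (rule lose_rule) (simp add: evsimps n348 n140 n155 n317)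
lemma n360: "Wn Wh [[Wh,Bk,Wh],[Wh,Bk,Wh,Bk],[Wh,Bk,Wh,Bk,Bk]] = True"
  by (rule win_rule) (simp add: evsimps n359)
lemma n361: "Wn Wh [[Wh,Bk,Bk],[Wh,Bk,Wh,Bk]] = True"
  by (rule win_rule) (simp add: evsimps n90)
lemma n362: "Wn Bk [[Wh,Bk,Wh,Bk],[Wh,Bk,Wh,Bk]] = False"
  by (rule lose_rule) (simp add: evsimps n8 n102 n361)
lemma n363: "Wn Wh [[Wh,Bk,Wh],[Wh,Bk,Wh,Bk],[Wh,Bk,Wh,Bk]] = True"
  by (rule win_rule) (simp add: evsimps n362)
lemma n364: "Wn Wh [[Wh,Bk,Wh],[Bk,Wh,Bk,Bk],[Wh,Bk,Wh,Bk]] = True"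
  by (rule win_rule) (simp add: evsimps n52)
lemma n365: "Wn Bk [[Wh,Bk],[Wh,Bk,Wh],[Bk,Wh,Bk,Bk],[Wh,Bk,Wh,Bk]] = False"
  by (rule lose_rule) (simp add: evsimps n364 n133 n349 n183 n339 n352)
lemma n366: "Wn Wh [[Wh,Bk,Bk],[Wh,Bk,Wh],[Bk,Wh,Bk,Bk],[Wh,Bk,Wh,Bk]] = True"
  by (rule win_rule) (simp add: evsimps n365)
lemma n367: "Wn Wh [[Wh,Bk,Bk],[Bk,Wh,Bk,Wh,Bk,Bk]] = True"
  by (rule win_rule) (simp add: evsimps n90)
lemma n368: "Wn Wh [[Wh,Bk,Wh,Bk],[Bk,Bk,Wh,Bk,Bk]] = True"
  by (rule win_rule) (simp add: evsimps n138)
lemma n369: "Wn Wh [[Bk,Wh,Bk,Bk],[Wh,Bk,Wh,Bk]] = True"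
  by (rule win_rule) (simp add: evsimps n197)
lemma n370: "Wn Bk [[Wh,Bk,Wh,Bk],[Bk,Wh,Bk,Wh,Bk,Bk]] = False"
  by (rule lose_rule) (simp add: evsimps n128 n274 n367 n368 n102 n361 n369)
lemma n371: "Wn Wh [[Wh,Bk,Wh],[Wh,Bk,Wh,Bk],[Bk,Wh,Bk,Wh,Bk,Bk]] = True"
  by (rule win_rule) (simp add: evsimps n370)
lemma n372: "Wn Bk [[Wh,Bk,Wh],[Wh,Bk,Wh,Bk],[Bk,Wh,Bk,Wh,Bk,Wh,Bk,Bk]] = False"
  by (rule lose_rule) (simp add: evsimps n337 n338 n341 n354 n356 n358 n360 n363 n366 n371)
lemma n373: "Wn Wh [[Wh,Bk],[Wh,Bk,Wh],[Wh,Bk,Wh,Bk],[Bk,Wh,Bk,Wh,Bk,Wh,Bk,Bk]] = True"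
  by (rule win_rule) (simp add: evsimps n372)
lemma n374: "Wn Bk [[Wh,Wh,Bk],[Bk,Wh,Bk,Wh,Bk]] = False"
  by (rule lose_rule) (simp add: evsimps n265 n143 n86)
lemma n375: "Wn Wh [[Wh,Bk,Wh,Bk],[Bk,Wh,Bk,Wh,Bk]] = True"
  by (rule win_rule) (simp add: evsimps n374)
lemma n376: "Wn Wh [[Bk,Wh,Bk,Wh,Bk]] = True"
  by (rule win_rule) (simp add: evsimps n7)
lemma n377: "Wn Bk [[Wh,Bk,Bk],[Bk,Wh,Bk,Wh,Bk]] = False"
  by (rule lose_rule) (simp add: evsimps n376 n51 n11)
lemma n378: "Wn Wh [[Wh,Bk],[Wh,Bk,Bk],[Bk,Wh,Bk,Wh,Bk]] = True"
  by (rule win_rule) (simp add: evsimps n377)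
lemma n379: "Wn Bk [[Wh,Bk],[Wh,Bk,Wh,Bk],[Bk,Wh,Bk,Wh,Bk]] = False"
  by (rule lose_rule) (simp add: evsimps n375 n265 n266 n378 n133 n160)
lemma n380: "Wn Wh [[Wh,Bk,Bk],[Wh,Bk,Wh,Bk],[Bk,Wh,Bk,Wh,Bk]] = True"
  by (rule win_rule) (simp add: evsimps n379)
lemma n381: "Wn Bk [[Wh,Bk,Wh,Bk],[Bk,Wh,Bk,Wh,Bk]] = False"
  by (rule lose_rule) (simp add: evsimps n376 n265 n245 n369 n102)
lemma n382: "Wn Wh [[Wh,Bk],[Wh,Bk,Wh,Bk],[Bk,Wh,Bk,Wh,Bk]] = True"
  by (rule win_rule) (simp add: evsimps n381)
lemma n383: "Wn Bk [[Wh,Bk],[Wh,Bk],[Wh,Bk,Bk],[Bk,Wh,Bk,Wh,Bk]] = False"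
  by (rule lose_rule) (simp add: evsimps n378 n266 n279 n99)
lemma n384: "Wn Wh [[Wh,Bk],[Wh,Bk,Bk],[Wh,Bk,Bk],[Bk,Wh,Bk,Wh,Bk]] = True"
  by (rule win_rule) (simp add: evsimps n383)
lemma n385: "Wn Bk [[Wh,Bk],[Wh,Bk,Bk],[Wh,Bk,Wh,Bk],[Bk,Wh,Bk,Wh,Bk]] = False"
  by (rule lose_rule) (simp add: evsimps n380 n382 n378 n259 n384 n286 n103)
lemma n386: "Wn Wh [[Wh,Bk],[Wh,Bk,Bk],[Wh,Bk,Wh,Bk],[Wh,Bk,Wh,Bk,Wh,Bk,Wh,Bk]] = True"
  by (rule win_rule) (simp add: evsimps n385)
lemma n387: "Wn Wh [[Wh,Bk],[Wh,Bk,Wh,Bk],[Bk,Wh,Bk,Wh,Bk,Bk]] = True"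
  by (rule win_rule) (simp add: evsimps n370)
lemma n388: "Wn Bk [[Wh,Bk],[Wh,Bk],[Wh,Bk],[Bk,Wh,Bk,Bk]] = False"
  by (rule lose_rule) (simp add: evsimps n47 n25)
lemma n389: "Wn Wh [[Wh,Bk],[Wh,Bk],[Wh,Bk],[Bk,Wh,Bk,Wh,Bk,Bk]] = True"
  by (rule win_rule) (simp add: evsimps n388)
lemma n390: "Wn Wh [[Wh,Bk],[Wh,Bk],[Wh,Bk,Wh,Bk],[Bk,Bk,Wh,Bk,Bk]] = True"
  by (rule win_rule) (simp add: evsimps n296)
lemma n391: "Wn Wh [[Wh,Bk],[Wh,Bk],[Bk,Wh,Bk,Bk],[Wh,Bk,Wh,Bk]] = True"
  by (rule win_rule) (simp add: evsimps n327)
lemma n392: "Wn Bk [[Wh,Bk],[Wh,Bk],[Wh,Bk,Wh,Bk],[Bk,Wh,Bk,Wh,Bk,Bk]] = False"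
  by (rule lose_rule) (simp add: evsimps n387 n131 n389 n282 n390 n177 n103 n391)
lemma n393: "Wn Wh [[Wh,Bk],[Wh,Bk,Wh,Bk],[Wh,Bk,Wh,Bk,Wh],[Bk,Wh,Bk,Wh,Bk,Bk]] = True"
  by (rule win_rule) (simp add: evsimps n392)
lemma n394: "Wn Wh [[Wh,Bk,Wh,Bk,Bk],[Wh,Bk,Wh,Bk,Wh,Bk]] = True"
  by (rule win_rule) (simp add: evsimps n205)
lemma n395: "Wn Bk [[Wh,Bk],[Wh,Bk],[Wh,Bk],[Wh,Bk,Wh,Bk,Bk]] = False"
  by (rule lose_rule) (simp add: evsimps n190 n25 n99)
lemma n396: "Wn Wh [[Wh,Bk],[Wh,Bk],[Wh,Bk,Bk],[Wh,Bk,Wh,Bk,Bk]] = True"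
  by (rule win_rule) (simp add: evsimps n395)
lemma n397: "Wn Wh [[Wh,Bk,Bk],[Wh,Bk,Wh,Bk,Bk]] = True"
  by (rule win_rule) (simp add: evsimps n189)
lemma n398: "Wn Bk [[Wh,Bk,Wh,Bk,Bk],[Wh,Bk,Wh,Bk,Bk]] = False"
  by (rule lose_rule) (simp add: evsimps n12 n397)
lemma n399: "Wn Wh [[Wh,Bk],[Wh,Bk,Wh,Bk,Bk],[Wh,Bk,Wh,Bk,Bk]] = True"
  by (rule win_rule) (simp add: evsimps n398)
lemma n400: "Wn Bk [[Wh,Bk],[Wh,Bk,Wh,Bk,Bk],[Wh,Bk,Wh,Bk,Wh,Bk]] = False"
  by (rule lose_rule) (simp add: evsimps n394 n132 n284 n298 n329 n348 n396 n399)
lemma n401: "Wn Wh [[Wh,Bk],[Wh,Bk],[Wh,Bk,Wh,Bk,Bk],[Wh,Bk,Wh,Bk,Wh,Bk]] = True"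
  by (rule win_rule) (simp add: evsimps n400)
lemma n402: "Wn Wh [[Wh,Bk],[Wh,Wh,Bk],[Wh,Bk,Wh],[Wh,Bk,Wh,Bk,Bk]] = True"
  by (rule win_rule) (simp add: evsimps n359)
lemma n403: "Wn Bk [[Wh,Bk],[Wh,Bk,Bk],[Wh,Wh,Bk],[Wh,Bk,Wh,Bk,Bk]] = False"
  by (rule lose_rule) (simp add: evsimps n324 n330 n396 n91 n323)
lemma n404: "Wn Wh [[Wh,Bk],[Wh,Bk],[Wh,Bk,Bk],[Wh,Wh,Bk],[Wh,Bk,Wh,Bk,Bk]] = True"
  by (rule win_rule) (simp add: evsimps n403)
lemma n405: "Wn Bk [[Wh,Wh,Bk],[Wh,Bk,Wh,Bk,Bk],[Wh,Bk,Wh,Bk,Bk]] = False"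
  by (rule lose_rule) (simp add: evsimps n399 n140 n324)
lemma n406: "Wn Wh [[Wh,Bk],[Wh,Wh,Bk],[Wh,Bk,Wh,Bk,Bk],[Wh,Bk,Wh,Bk,Bk]] = True"
  by (rule win_rule) (simp add: evsimps n405)
lemma n407: "Wn Bk [[Wh,Bk],[Wh,Wh,Bk],[Wh,Bk,Wh,Bk,Bk],[Wh,Bk,Wh,Bk,Wh,Bk]] = False"
  by (rule lose_rule) (simp add: evsimps n213 n401 n157 n326 n300 n332 n402 n404 n406)
lemma n408: "Wn Wh [[Wh,Bk],[Wh,Bk,Wh,Bk],[Wh,Bk,Wh,Bk,Bk],[Wh,Bk,Wh,Bk,Wh,Bk]] = True"
  by (rule win_rule) (simp add: evsimps n407)
lemma n409: "Wn Wh [[Wh,Bk],[Wh,Bk],[Bk,Wh,Bk,Bk],[Wh,Bk,Wh,Bk,Wh,Bk,Wh]] = True"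
  by (rule win_rule) (simp add: evsimps n285)
lemma n410: "Wn Bk [[Wh,Bk,Bk],[Wh,Wh,Bk],[Wh,Bk,Wh],[Bk,Wh,Bk,Bk]] = False"
  by (rule lose_rule) (simp add: evsimps n318 n352 n145 n317)
lemma n411: "Wn Wh [[Wh,Bk],[Wh,Bk,Bk],[Wh,Wh,Bk],[Wh,Bk,Wh],[Bk,Wh,Bk,Bk]] = True"
  by (rule win_rule) (simp add: evsimps n410)
lemma n412: "Wn Bk [[Wh,Bk],[Wh,Wh,Bk],[Bk,Wh,Bk,Bk],[Wh,Bk,Wh,Bk,Wh,Bk,Wh]] = False"
  by (rule lose_rule) (simp add: evsimps n216 n409 n333 n300 n328 n411)
lemma n413: "Wn Wh [[Wh,Bk],[Bk,Wh,Bk,Bk],[Wh,Bk,Wh,Bk],[Wh,Bk,Wh,Bk,Wh,Bk,Wh]] = True"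
  by (rule win_rule) (simp add: evsimps n412)
lemma n414: "Wn Wh [[Wh,Bk],[Wh,Bk,Wh,Bk],[Wh,Bk,Wh,Bk]] = True"
  by (rule win_rule) (simp add: evsimps n362)
lemma n415: "Wn Wh [[Wh,Bk,Bk],[Wh,Wh,Bk,Bk],[Wh,Bk,Wh,Bk]] = True"
  by (rule win_rule) (simp add: evsimps n209)
lemma n416: "Wn Bk [[Wh,Wh,Bk,Bk],[Wh,Bk,Wh,Bk],[Wh,Bk,Wh,Bk]] = False"
  by (rule lose_rule) (simp add: evsimps n414 n201 n104 n415)
lemma n417: "Wn Wh [[Wh,Bk],[Wh,Wh,Bk,Bk],[Wh,Bk,Wh,Bk],[Wh,Bk,Wh,Bk]] = True"
  by (rule win_rule) (simp add: evsimps n416)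
lemma n418: "Wn Bk [[Wh,Bk],[Wh,Bk],[Wh,Bk,Wh,Bk],[Wh,Bk,Wh,Bk]] = False"
  by (rule lose_rule) (simp add: evsimps n414 n160 n177 n103)
lemma n419: "Wn Wh [[Wh,Bk],[Wh,Bk],[Wh,Bk],[Wh,Bk,Wh,Bk],[Wh,Bk,Wh,Bk]] = True"
  by (rule win_rule) (simp add: evsimps n418)
lemma n420: "Wn Bk [[Wh,Bk],[Wh,Bk],[Wh,Bk],[Wh,Bk],[Wh,Wh,Bk,Bk]] = False"
  by (rule lose_rule) (simp add: evsimps n178 n226)
lemma n421: "Wn Wh [[Wh,Bk],[Wh,Bk],[Wh,Bk],[Wh,Wh,Bk,Bk],[Wh,Bk,Wh,Bk]] = True"
  by (rule win_rule) (simp add: evsimps n420)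
lemma n422: "Wn Wh [[Wh,Bk],[Wh,Bk],[Wh,Bk],[Wh,Bk,Bk],[Wh,Wh,Bk,Bk]] = True"
  by (rule win_rule) (simp add: evsimps n420)
lemma n423: "Wn Bk [[Wh,Bk],[Wh,Bk],[Wh,Bk,Bk],[Wh,Wh,Bk],[Wh,Wh,Bk,Bk]] = False"
  by (rule lose_rule) (simp add: evsimps n210 n219 n422 n229)
lemma n424: "Wn Wh [[Wh,Bk],[Wh,Bk],[Wh,Bk,Bk],[Wh,Wh,Bk,Bk],[Wh,Bk,Wh,Bk]] = True"
  by (rule win_rule) (simp add: evsimps n423)
lemma n425: "Wn Bk [[Wh,Bk],[Wh,Bk],[Wh,Wh,Bk,Bk],[Wh,Bk,Wh,Bk],[Wh,Bk,Wh,Bk]] = False"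
  by (rule lose_rule) (simp add: evsimps n417 n419 n217 n421 n424)
lemma n426: "Wn Wh [[Wh,Bk],[Wh,Bk,Wh,Bk],[Wh,Bk,Wh,Bk],[Wh,Bk,Wh,Bk,Wh,Bk,Bk]] = True"
  by (rule win_rule) (simp add: evsimps n425)
lemma n427: "Wn Wh [[Wh,Bk],[Wh,Bk],[Wh,Bk,Wh,Bk,Wh,Bk,Wh,Bk,Wh]] = True"
  by (rule win_rule) (simp add: evsimps n283)
lemma n428: "Wn Wh [[Wh,Bk],[Wh,Bk,Bk],[Wh,Wh,Bk],[Wh,Bk,Wh,Bk,Wh]] = True"
  by (rule win_rule) (simp add: evsimps n100)
lemma n429: "Wn Bk [[Wh,Bk],[Wh,Wh,Bk],[Wh,Bk,Wh,Bk,Wh,Bk,Wh,Bk,Wh]] = False"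
  by (rule lose_rule) (simp add: evsimps n225 n427 n194 n333 n402 n428)
lemma n430: "Wn Wh [[Wh,Bk],[Wh,Bk,Wh,Bk],[Wh,Bk,Wh,Bk,Wh,Bk,Wh,Bk,Wh]] = True"
  by (rule win_rule) (simp add: evsimps n429)
lemma n431: "Wn Wh [[Wh,Bk],[Wh,Bk],[Wh,Bk,Wh,Bk],[Wh,Wh,Bk,Wh,Bk,Bk]] = True"
  by (rule win_rule) (simp add: evsimps n105)
lemma n432: "Wn Wh [[Wh,Bk],[Wh,Bk],[Wh,Bk],[Wh,Bk],[Wh,Wh,Bk,Wh,Bk,Bk]] = True"
  by (rule win_rule) (simp add: evsimps n420)
lemma n433: "Wn Wh [[Wh,Bk],[Wh,Bk],[Wh,Bk],[Wh,Bk],[Wh,Wh,Bk]] = True"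
  by (rule win_rule) (simp add: evsimps n98)
lemma n434: "Wn Bk [[Wh,Bk],[Wh,Bk],[Wh,Bk],[Wh,Bk],[Wh,Bk],[Wh,Bk]] = False"
  by (rule lose_rule) (simp add: evsimps n226)
lemma n435: "Wn Wh [[Wh,Bk],[Wh,Bk],[Wh,Bk],[Wh,Bk],[Wh,Bk],[Wh,Bk,Bk]] = True"
  by (rule win_rule) (simp add: evsimps n434)
lemma n436: "Wn Bk [[Wh,Bk],[Wh,Bk],[Wh,Bk],[Wh,Bk],[Wh,Bk,Bk],[Wh,Wh,Bk]] = False"
  by (rule lose_rule) (simp add: evsimps n229 n433 n435)
lemma n437: "Wn Wh [[Wh,Bk],[Wh,Bk],[Wh,Bk],[Wh,Bk,Bk],[Wh,Wh,Bk,Wh,Bk,Bk]] = True"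
  by (rule win_rule) (simp add: evsimps n436)
lemma n438: "Wn Wh [[Wh,Bk],[Wh,Bk],[Wh,Bk],[Wh,Bk],[Wh,Bk,Bk],[Wh,Bk,Wh,Bk]] = True"
  by (rule win_rule) (simp add: evsimps n436)
lemma n439: "Wn Bk [[Wh,Bk],[Wh,Bk],[Wh,Bk],[Wh,Bk,Wh,Bk],[Wh,Wh,Bk,Wh,Bk,Bk]] = False"
  by (rule lose_rule) (simp add: evsimps n431 n228 n432 n437 n177 n438 n421)
lemma n440: "Wn Wh [[Wh,Bk],[Wh,Bk],[Wh,Bk,Wh,Bk],[Wh,Bk,Wh,Bk,Wh,Bk,Wh,Bk,Bk]] = True"
  by (rule win_rule) (simp add: evsimps n439)
lemma n441: "Wn Wh [[Wh,Bk],[Wh,Bk],[Wh,Bk,Wh,Bk,Wh,Bk,Wh,Bk,Wh,Bk,Bk]] = True"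
  by (rule win_rule) (simp add: evsimps n280)
lemma n442: "Wn Wh [[Wh,Bk],[Wh,Wh,Bk],[Wh,Bk,Wh],[Bk,Bk,Wh,Bk,Wh,Bk,Bk]] = True"
  by (rule win_rule) (simp add: evsimps n355)
lemma n443: "Wn Wh [[Wh,Bk],[Wh,Bk,Bk],[Wh,Wh,Bk],[Wh,Bk,Wh,Bk,Wh,Bk,Bk]] = True"
  by (rule win_rule) (simp add: evsimps n423)
lemma n444: "Wn Wh [[Wh,Bk],[Wh,Wh,Bk],[Bk,Bk,Wh,Bk,Bk],[Wh,Bk,Wh,Bk,Wh]] = True"
  by (rule win_rule) (simp add: evsimps n296)
lemma n445: "Wn Bk [[Wh,Bk],[Wh,Wh,Bk],[Wh,Bk,Wh,Bk,Wh,Bk,Wh,Bk,Wh,Bk,Bk]] = False"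
  by (rule lose_rule) (simp add: evsimps n240 n441 n293 n231 n442 n443 n444 n406 n333)
lemma n446: "Wn Wh [[Wh,Bk],[Wh,Bk,Wh,Bk],[Wh,Bk,Wh,Bk,Wh,Bk,Wh,Bk,Wh,Bk,Bk]] = True"
  by (rule win_rule) (simp add: evsimps n445)
lemma n447: "Wn Bk [[Wh,Bk],[Wh,Bk,Wh,Bk],[Wh,Bk,Wh,Bk,Wh,Bk,Wh,Bk,Wh,Bk,Wh,Bk]] = False"
  by (rule lose_rule) (simp add: evsimps n242 n135 n271 n288 n305 n336 n373 n386 n393 n408 n413 n426 n430 n440 n446)
lemma n448: "Wn Bk [[Wh,Bk],[Wh,Bk,Wh,Bk,Wh,Bk]] = True"
  by (rule win_rule) (simp add: evsimps n20)
lemma n449: "Wn Bk [[Wh,Bk,Bk],[Wh,Wh,Bk,Wh,Bk]] = True"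
  by (rule win_rule) (simp add: evsimps n71)
lemma n450: "Wn Bk [[Wh,Bk,Bk],[Bk,Wh,Bk]] = True"
  by (rule win_rule) (simp add: evsimps n71)
lemma n451: "Wn Bk [[Wh,Bk,Bk],[Wh,Bk,Wh,Bk]] = True"
  by (rule win_rule) (simp add: evsimps n71)
lemma n452: "Wn Bk [[Wh,Bk,Bk],[Wh,Wh,Bk,Wh]] = True"
  by (rule win_rule) (simp add: evsimps n71)
lemma n453: "Wn Wh [[Wh,Bk,Bk],[Wh,Bk,Wh,Bk,Wh,Bk]] = False"
  by (rule lose_rule) (simp add: evsimps n448 n449 n112 n450 n451 n452)
lemma n454: "Wn Bk [[Wh,Bk,Bk],[Wh,Bk,Wh,Bk,Wh,Bk,Wh,Bk]] = True"
  by (rule win_rule) (simp add: evsimps n453)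
lemma n455: "Wn Bk [[Wh,Bk],[Wh,Bk],[Wh,Wh,Bk,Wh,Bk]] = True"
  by (rule win_rule) (simp add: evsimps n28)
lemma n456: "Wn Wh [[Wh,Bk],[Bk,Wh,Bk]] = False"
  by (rule lose_rule) (simp add: evsimps n17 n4)
lemma n457: "Wn Bk [[Wh,Bk],[Wh,Bk],[Bk,Wh,Bk]] = True"
  by (rule win_rule) (simp add: evsimps n456)
lemma n458: "Wn Bk [[Wh,Bk],[Wh,Bk],[Wh,Bk,Wh,Bk]] = True"
  by (rule win_rule) (simp add: evsimps n15)
lemma n459: "Wn Wh [[Wh,Bk],[Wh,Bk],[Wh,Bk,Wh,Bk,Wh,Bk]] = False"
  by (rule lose_rule) (simp add: evsimps n448 n455 n116 n457 n458 n63)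
lemma n460: "Wn Bk [[Wh,Bk],[Wh,Bk],[Wh,Bk,Wh,Bk,Wh,Bk,Wh,Bk]] = True"
  by (rule win_rule) (simp add: evsimps n459)
lemma n461: "Wn Bk [[Wh,Bk],[Wh,Bk,Bk],[Wh,Wh,Bk,Wh,Bk,Wh,Bk]] = True"
  by (rule win_rule) (simp add: evsimps n79)
lemma n462: "Wn Wh [[Wh,Bk],[Wh,Bk,Bk],[Wh,Wh,Bk,Wh,Bk]] = False"
  by (rule lose_rule) (simp add: evsimps n449 n455 n112 n78)
lemma n463: "Wn Bk [[Wh,Bk],[Wh,Bk],[Wh,Bk,Bk],[Wh,Wh,Bk,Wh,Bk]] = True"
  by (rule win_rule) (simp add: evsimps n462)
lemma n464: "Wn Bk [[Wh,Bk],[Wh,Bk,Bk],[Bk,Wh,Bk,Wh,Bk]] = True"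
  by (rule win_rule) (simp add: evsimps n79)
lemma n465: "Wn Bk [[Wh,Bk],[Wh,Bk,Bk],[Wh,Wh,Bk],[Wh,Bk,Wh,Bk]] = True"
  by (rule win_rule) (simp add: evsimps n117)
lemma n466: "Wn Wh [[Bk,Wh,Bk],[Wh,Wh,Bk,Wh]] = False"
  by (rule lose_rule) (simp add: evsimps n19 n17)
lemma n467: "Wn Bk [[Wh,Bk],[Bk,Wh,Bk],[Wh,Wh,Bk,Wh]] = True"
  by (rule win_rule) (simp add: evsimps n466)
lemma n468: "Wn Wh [[Wh,Bk,Bk],[Bk,Wh,Bk],[Wh,Wh,Bk,Wh]] = False"
  by (rule lose_rule) (simp add: evsimps n467 n452 n450)
lemma n469: "Wn Bk [[Wh,Bk],[Wh,Bk,Bk],[Bk,Wh,Bk],[Wh,Wh,Bk,Wh]] = True"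
  by (rule win_rule) (simp add: evsimps n468)
lemma n470: "Wn Bk [[Wh,Bk],[Wh,Bk,Bk],[Wh,Bk,Wh,Bk,Wh,Bk]] = True"
  by (rule win_rule) (simp add: evsimps n453)
lemma n471: "Wn Bk [[Wh,Bk,Bk],[Wh,Bk,Bk]] = True"
  by (rule win_rule) (simp add: evsimps n71)
lemma n472: "Wn Wh [[Wh,Bk],[Wh,Bk,Bk],[Wh,Bk,Bk]] = False"
  by (rule lose_rule) (simp add: evsimps n471 n77)
lemma n473: "Wn Bk [[Wh,Bk],[Wh,Bk,Bk],[Wh,Wh,Bk,Wh,Bk,Wh]] = True"
  by (rule win_rule) (simp add: evsimps n472)
lemma n474: "Wn Wh [[Wh,Bk],[Wh,Bk,Bk],[Wh,Bk,Wh,Bk,Wh,Bk,Wh,Bk]] = False"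
  by (rule lose_rule) (simp add: evsimps n454 n460 n461 n463 n464 n465 n469 n470 n473)
lemma n475: "Wn Bk [[Wh,Bk],[Wh,Bk,Wh,Bk,Wh,Bk,Wh,Bk,Wh,Bk,Wh,Bk]] = True"
  by (rule win_rule) (simp add: evsimps n474)
lemma n476: "Wn Bk [[Wh,Bk],[Bk,Wh,Bk,Wh,Bk,Wh,Bk,Bk]] = True"
  by (rule win_rule) (simp add: evsimps n43)
lemma n477: "Wn Bk [[Wh,Bk,Bk],[Wh,Wh,Bk,Wh,Bk,Bk]] = True"
  by (rule win_rule) (simp add: evsimps n71)
lemma n478: "Wn Bk [[Wh,Bk],[Bk,Bk,Wh,Bk,Bk]] = True"
  by (rule win_rule) (simp add: evsimps n39)
lemma n479: "Wn Wh [[Wh,Bk,Bk],[Bk,Bk,Wh,Bk,Bk]] = False"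
  by (rule lose_rule) (simp add: evsimps n478 n78)
lemma n480: "Wn Bk [[Wh,Bk,Bk],[Bk,Wh,Bk,Wh,Bk,Bk]] = True"
  by (rule win_rule) (simp add: evsimps n479)
lemma n481: "Wn Wh [[Wh,Bk,Bk],[Wh,Wh,Bk,Bk]] = False"
  by (rule lose_rule) (simp add: evsimps n41 n78)
lemma n482: "Wn Bk [[Wh,Bk,Bk],[Bk,Wh,Bk],[Wh,Wh,Bk,Bk]] = True"
  by (rule win_rule) (simp add: evsimps n481)
lemma n483: "Wn Bk [[Wh,Bk,Bk],[Wh,Wh,Bk],[Bk,Wh,Bk,Bk]] = True"
  by (rule win_rule) (simp add: evsimps n79)
lemma n484: "Wn Wh [[Wh,Bk,Bk],[Bk,Wh,Bk,Wh,Bk,Wh,Bk,Bk]] = False"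
  by (rule lose_rule) (simp add: evsimps n476 n477 n480 n482 n483 n464 n449)
lemma n485: "Wn Bk [[Wh,Bk,Bk],[Wh,Wh,Bk,Wh,Bk,Wh,Bk,Wh,Bk,Wh,Bk]] = True"
  by (rule win_rule) (simp add: evsimps n484)
lemma n486: "Wn Bk [[Wh,Bk],[Wh,Bk],[Wh,Bk],[Wh,Bk,Wh,Bk,Wh,Bk]] = True"
  by (rule win_rule) (simp add: evsimps n459)
lemma n487: "Wn Bk [[Wh,Bk],[Wh,Bk],[Wh,Bk],[Wh,Bk,Bk],[Wh,Wh,Bk]] = True"
  by (rule win_rule) (simp add: evsimps n117)
lemma n488: "Wn Wh [[Wh,Bk],[Wh,Bk,Bk],[Bk,Wh,Bk]] = False"
  by (rule lose_rule) (simp add: evsimps n450 n457 n78)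
lemma n489: "Wn Bk [[Wh,Bk],[Wh,Bk],[Wh,Bk,Bk],[Bk,Wh,Bk]] = True"
  by (rule win_rule) (simp add: evsimps n488)
lemma n490: "Wn Wh [[Wh,Bk],[Wh,Bk,Bk],[Wh,Bk,Wh,Bk]] = False"
  by (rule lose_rule) (simp add: evsimps n451 n458 n112 n77 n78)
lemma n491: "Wn Bk [[Wh,Bk],[Wh,Bk],[Wh,Bk,Bk],[Wh,Bk,Wh,Bk]] = True"
  by (rule win_rule) (simp add: evsimps n490)
lemma n492: "Wn Wh [[Wh,Bk],[Wh,Bk,Bk],[Wh,Wh,Bk,Wh]] = False"
  by (rule lose_rule) (simp add: evsimps n452 n63 n78)
lemma n493: "Wn Bk [[Wh,Bk],[Wh,Bk],[Wh,Bk,Bk],[Wh,Wh,Bk,Wh]] = True"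
  by (rule win_rule) (simp add: evsimps n492)
lemma n494: "Wn Wh [[Wh,Bk],[Wh,Bk],[Wh,Bk,Bk],[Wh,Bk,Wh,Bk,Wh,Bk]] = False"
  by (rule lose_rule) (simp add: evsimps n470 n486 n463 n487 n489 n491 n493)
lemma n495: "Wn Bk [[Wh,Bk],[Wh,Bk,Bk],[Wh,Wh,Bk,Wh,Bk,Wh,Bk,Wh,Bk]] = True"
  by (rule win_rule) (simp add: evsimps n494)
lemma n496: "Wn Bk [[Wh,Bk,Bk],[Bk,Wh,Bk,Wh,Bk,Wh,Bk,Wh,Bk]] = True"
  by (rule win_rule) (simp add: evsimps n484)
lemma n497: "Wn Bk [[Wh,Bk],[Wh,Bk,Wh,Bk],[Wh,Wh,Bk,Wh]] = True"
  by (rule win_rule) (simp add: evsimps n83)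
lemma n498: "Wn Bk [[Wh,Bk,Bk],[Wh,Wh,Bk],[Wh,Wh,Bk,Wh]] = True"
  by (rule win_rule) (simp add: evsimps n492)
lemma n499: "Wn Wh [[Wh,Bk,Bk],[Wh,Wh,Bk,Wh]] = False"
  by (rule lose_rule) (simp add: evsimps n82 n110)
lemma n500: "Wn Bk [[Wh,Bk],[Wh,Bk,Bk],[Wh,Wh,Bk,Wh]] = True"
  by (rule win_rule) (simp add: evsimps n499)
lemma n501: "Wn Wh [[Wh,Bk,Bk],[Wh,Bk,Wh,Bk],[Wh,Wh,Bk,Wh]] = False"
  by (rule lose_rule) (simp add: evsimps n497 n498 n500 n452 n451)
lemma n502: "Wn Bk [[Wh,Bk,Bk],[Wh,Bk,Wh,Bk],[Wh,Wh,Bk,Wh,Bk,Wh,Bk]] = True"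
  by (rule win_rule) (simp add: evsimps n501)
lemma n503: "Wn Bk [[Wh,Wh,Bk,Wh],[Bk,Bk,Wh,Bk,Bk]] = True"
  by (rule win_rule) (simp add: evsimps n39)
lemma n504: "Wn Wh [[Wh,Bk],[Wh,Wh,Bk,Wh],[Bk,Bk,Wh,Bk,Bk]] = False"
  by (rule lose_rule) (simp add: evsimps n503 n478 n63)
lemma n505: "Wn Bk [[Wh,Bk],[Wh,Wh,Bk,Wh],[Bk,Wh,Bk,Wh,Bk,Bk]] = True"
  by (rule win_rule) (simp add: evsimps n504)
lemma n506: "Wn Bk [[Wh,Bk,Bk],[Wh,Wh,Bk,Bk],[Wh,Wh,Bk,Wh]] = True"
  by (rule win_rule) (simp add: evsimps n492)
lemma n507: "Wn Wh [[Bk,Wh,Bk,Bk],[Wh,Wh,Bk,Wh]] = False"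
  by (rule lose_rule) (simp add: evsimps n82 n19 n68)
lemma n508: "Wn Bk [[Wh,Bk,Bk],[Bk,Wh,Bk,Bk],[Wh,Wh,Bk,Wh]] = True"
  by (rule win_rule) (simp add: evsimps n507)
lemma n509: "Wn Wh [[Wh,Bk,Bk],[Wh,Wh,Bk,Wh],[Bk,Wh,Bk,Wh,Bk,Bk]] = False"
  by (rule lose_rule) (simp add: evsimps n505 n480 n506 n508 n469 n498)
lemma n510: "Wn Bk [[Wh,Bk,Bk],[Wh,Wh,Bk,Wh],[Bk,Wh,Bk,Wh,Bk,Wh,Bk]] = True"
  by (rule win_rule) (simp add: evsimps n509)
lemma n511: "Wn Bk [[Wh,Bk,Bk],[Wh,Wh,Bk,Wh,Bk],[Wh,Bk,Wh,Bk,Wh,Bk]] = True"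
  by (rule win_rule) (simp add: evsimps n453)
lemma n512: "Wn Wh [[Wh,Bk,Bk],[Wh,Bk,Bk]] = False"
  by (rule lose_rule) (simp add: evsimps n78)
lemma n513: "Wn Bk [[Wh,Bk,Bk],[Wh,Wh,Bk,Wh,Bk,Wh]] = True"
  by (rule win_rule) (simp add: evsimps n512)
lemma n514: "Wn Bk [[Wh,Bk],[Wh,Bk],[Wh,Wh,Bk,Wh,Bk,Wh]] = True"
  by (rule win_rule) (simp add: evsimps n107)
lemma n515: "Wn Wh [[Wh,Bk,Bk],[Wh,Wh,Bk,Wh,Wh]] = False"
  by (rule lose_rule) (simp add: evsimps n34 n110)
lemma n516: "Wn Bk [[Wh,Bk],[Wh,Bk,Bk],[Wh,Wh,Bk,Wh,Wh]] = True"
  by (rule win_rule) (simp add: evsimps n515)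
lemma n517: "Wn Wh [[Wh,Bk],[Wh,Bk,Bk],[Wh,Wh,Bk,Wh,Bk,Wh]] = False"
  by (rule lose_rule) (simp add: evsimps n513 n514 n500 n112 n77 n516)
lemma n518: "Wn Bk [[Wh,Bk,Bk],[Bk,Wh,Bk,Wh,Bk],[Wh,Wh,Bk,Wh,Bk,Wh]] = True"
  by (rule win_rule) (simp add: evsimps n517)
lemma n519: "Wn Bk [[Wh,Bk,Bk],[Wh,Wh,Bk],[Wh,Bk,Wh,Bk,Wh,Bk,Wh,Bk]] = True"
  by (rule win_rule) (simp add: evsimps n474)
lemma n520: "Wn Bk [[Wh,Bk],[Wh,Wh,Bk,Wh,Bk,Wh,Bk,Wh]] = True"
  by (rule win_rule) (simp add: evsimps n74)
lemma n521: "Wn Bk [[Wh,Bk,Bk],[Wh,Wh,Bk,Wh,Bk,Wh,Wh]] = True"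
  by (rule win_rule) (simp add: evsimps n481)
lemma n522: "Wn Wh [[Wh,Bk,Bk],[Wh,Wh,Bk,Wh,Bk,Wh,Bk,Wh]] = False"
  by (rule lose_rule) (simp add: evsimps n520 n513 n498 n451 n449 n516 n521)
lemma n523: "Wn Bk [[Wh,Bk,Bk],[Bk,Wh,Bk],[Wh,Wh,Bk,Wh,Bk,Wh,Bk,Wh]] = True"
  by (rule win_rule) (simp add: evsimps n522)
lemma n524: "Wn Bk [[Wh,Bk,Bk],[Wh,Bk,Wh,Bk,Wh,Bk,Wh,Bk,Wh,Bk]] = True"
  by (rule win_rule) (simp add: evsimps n484)
lemma n525: "Wn Bk [[Wh,Bk],[Wh,Bk,Wh,Bk,Wh,Bk,Bk]] = True"
  by (rule win_rule) (simp add: evsimps n69)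
lemma n526: "Wn Bk [[Wh,Bk],[Wh,Bk,Bk],[Wh,Wh,Bk,Bk]] = True"
  by (rule win_rule) (simp add: evsimps n481)
lemma n527: "Wn Bk [[Wh,Bk],[Wh,Bk,Bk],[Wh,Bk,Wh,Bk]] = True"
  by (rule win_rule) (simp add: evsimps n107)
lemma n528: "Wn Wh [[Wh,Bk,Bk],[Wh,Bk,Wh,Bk,Wh,Bk,Bk]] = False"
  by (rule lose_rule) (simp add: evsimps n525 n477 n526 n76 n527 n452)
lemma n529: "Wn Bk [[Wh,Bk,Bk],[Wh,Wh,Bk,Wh,Bk,Wh,Bk,Wh,Bk,Wh]] = True"
  by (rule win_rule) (simp add: evsimps n528)
lemma n530: "Wn Wh [[Wh,Bk,Bk],[Wh,Bk,Wh,Bk,Wh,Bk,Wh,Bk,Wh,Bk,Wh,Bk]] = False"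
  by (rule lose_rule) (simp add: evsimps n475 n485 n495 n496 n502 n510 n511 n518 n519 n523 n524 n529)
lemma n531: "Wn Bk [[Wh,Bk,Wh,Bk],[Wh,Bk,Wh,Bk,Wh,Bk,Wh,Bk,Wh,Bk,Wh,Bk]] = True"
  by (rule win_rule) (simp add: evsimps n530)
lemma n532: "Wn Wh [[Wh,Bk],[Wh,Bk,Wh,Bk,Wh,Bk,Wh,Bk,Wh]] = False"
  by (rule lose_rule) (simp add: evsimps n70 n520 n514 n448 n497)
lemma n533: "Wn Bk [[Wh,Wh,Bk],[Wh,Bk,Wh,Bk,Wh,Bk,Wh,Bk,Wh]] = True"
  by (rule win_rule) (simp add: evsimps n532)
lemma n534: "Wn Wh [[Wh,Bk],[Wh,Wh,Bk],[Wh,Wh,Bk,Wh]] = False"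
  by (rule lose_rule) (simp add: evsimps n73 n82 n16)
lemma n535: "Wn Bk [[Wh,Bk],[Wh,Bk],[Wh,Wh,Bk],[Wh,Wh,Bk,Wh]] = True"
  by (rule win_rule) (simp add: evsimps n534)
lemma n536: "Wn Bk [[Wh,Bk],[Wh,Bk],[Wh,Bk],[Wh,Wh,Bk,Wh,Wh]] = True"
  by (rule win_rule) (simp add: evsimps n115)
lemma n537: "Wn Bk [[Wh,Bk],[Wh,Bk],[Wh,Wh,Bk,Wh,Bk,Wh,Wh]] = True"
  by (rule win_rule) (simp add: evsimps n35)
lemma n538: "Wn Wh [[Wh,Bk],[Wh,Bk],[Wh,Wh,Bk,Wh,Bk,Wh,Bk,Wh]] = False"
  by (rule lose_rule) (simp add: evsimps n520 n514 n535 n458 n455 n536 n537)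
lemma n539: "Wn Bk [[Wh,Bk],[Wh,Wh,Bk],[Wh,Wh,Bk,Wh,Bk,Wh,Bk,Wh]] = True"
  by (rule win_rule) (simp add: evsimps n538)
lemma n540: "Wn Bk [[Wh,Bk],[Wh,Bk],[Wh,Wh,Bk],[Wh,Wh,Bk,Wh,Bk,Wh]] = True"
  by (rule win_rule) (simp add: evsimps n117)
lemma n541: "Wn Bk [[Wh,Bk],[Wh,Wh,Bk],[Wh,Bk,Wh,Bk,Wh,Bk]] = True"
  by (rule win_rule) (simp add: evsimps n459)
lemma n542: "Wn Bk [[Wh,Bk],[Wh,Bk],[Wh,Bk],[Wh,Wh,Bk,Wh]] = True"
  by (rule win_rule) (simp add: evsimps n115)
lemma n543: "Wn Wh [[Wh,Bk],[Wh,Bk],[Wh,Bk,Wh,Bk],[Wh,Wh,Bk,Wh]] = False"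
  by (rule lose_rule) (simp add: evsimps n497 n535 n542 n63 n458)
lemma n544: "Wn Bk [[Wh,Bk],[Wh,Wh,Bk],[Wh,Bk,Wh,Bk],[Wh,Wh,Bk,Wh]] = True"
  by (rule win_rule) (simp add: evsimps n543)
lemma n545: "Wn Wh [[Wh,Bk],[Wh,Wh,Bk],[Wh,Bk,Wh,Bk,Wh,Bk,Wh,Bk,Wh]] = False"
  by (rule lose_rule) (simp add: evsimps n533 n66 n539 n540 n541 n544)
lemma n546: "Wn Bk [[Wh,Bk],[Wh,Wh,Bk],[Wh,Bk,Wh,Bk,Wh,Bk,Wh,Bk,Wh,Bk,Wh,Bk]] = True"
  by (rule win_rule) (simp add: evsimps n545)
lemma n547: "Wn Bk [[Bk,Bk,Wh,Bk,Bk]] = True"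
  by (rule win_rule) (simp add: evsimps Wn_nil)
lemma n548: "Wn Wh [[Wh,Wh,Bk,Wh],[Bk,Bk,Wh,Bk,Bk]] = False"
  by (rule lose_rule) (simp add: evsimps n547 n82)
lemma n549: "Wn Bk [[Wh,Wh,Bk,Wh],[Bk,Wh,Bk,Wh,Bk,Bk]] = True"
  by (rule win_rule) (simp add: evsimps n548)
lemma n550: "Wn Bk [[Wh,Bk],[Bk,Wh,Bk,Wh,Bk,Bk]] = True"
  by (rule win_rule) (simp add: evsimps n15)
lemma n551: "Wn Bk [[Wh,Wh,Bk,Bk],[Wh,Bk,Wh,Bk,Wh]] = True"
  by (rule win_rule) (simp add: evsimps n481)
lemma n552: "Wn Bk [[Bk,Wh,Bk,Bk],[Wh,Bk,Wh,Bk,Wh]] = True"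
  by (rule win_rule) (simp add: evsimps n59)
lemma n553: "Wn Bk [[Wh,Bk],[Bk,Wh,Bk],[Wh,Bk,Wh,Bk,Wh]] = True"
  by (rule win_rule) (simp add: evsimps n488)
lemma n554: "Wn Bk [[Wh,Wh,Bk],[Wh,Bk,Wh,Bk,Wh]] = True"
  by (rule win_rule) (simp add: evsimps n111)
lemma n555: "Wn Wh [[Wh,Bk,Wh,Bk,Wh],[Bk,Wh,Bk,Wh,Bk,Bk]] = False"
  by (rule lose_rule) (simp add: evsimps n549 n550 n551 n552 n553 n554)
lemma n556: "Wn Bk [[Wh,Bk],[Wh,Bk,Wh,Bk,Wh],[Bk,Wh,Bk,Wh,Bk,Bk]] = True"
  by (rule win_rule) (simp add: evsimps n555)
lemma n557: "Wn Bk [[Wh,Bk],[Wh,Wh,Bk,Wh],[Bk,Bk,Wh,Bk,Bk]] = True"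
  by (rule win_rule) (simp add: evsimps n548)
lemma n558: "Wn Bk [[Wh,Bk],[Wh,Bk],[Bk,Bk,Wh,Bk,Bk]] = True"
  by (rule win_rule) (simp add: evsimps n15)
lemma n559: "Wn Wh [[Wh,Bk],[Wh,Bk],[Wh,Wh,Bk,Wh],[Bk,Bk,Wh,Bk,Bk]] = False"
  by (rule lose_rule) (simp add: evsimps n557 n558 n542)
lemma n560: "Wn Bk [[Wh,Bk],[Wh,Bk],[Wh,Wh,Bk,Wh],[Bk,Wh,Bk,Wh,Bk,Bk]] = True"
  by (rule win_rule) (simp add: evsimps n559)
lemma n561: "Wn Bk [[Wh,Bk],[Wh,Bk],[Wh,Bk],[Bk,Wh,Bk,Wh,Bk,Bk]] = True"
  by (rule win_rule) (simp add: evsimps n115)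
lemma n562: "Wn Bk [[Wh,Bk],[Wh,Bk],[Wh,Bk],[Wh,Wh,Bk,Bk]] = True"
  by (rule win_rule) (simp add: evsimps n120)
lemma n563: "Wn Bk [[Wh,Bk],[Wh,Bk],[Wh,Bk],[Wh,Bk,Bk]] = True"
  by (rule win_rule) (simp add: evsimps n107)
lemma n564: "Wn Wh [[Wh,Bk],[Wh,Bk],[Wh,Bk,Bk],[Wh,Wh,Bk,Bk]] = False"
  by (rule lose_rule) (simp add: evsimps n526 n562 n563)
lemma n565: "Wn Bk [[Wh,Bk],[Wh,Bk],[Wh,Wh,Bk,Bk],[Wh,Bk,Wh,Bk,Wh]] = True"
  by (rule win_rule) (simp add: evsimps n564)
lemma n566: "Wn Bk [[Wh,Bk],[Wh,Bk],[Wh,Bk,Wh,Bk,Wh]] = True"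
  by (rule win_rule) (simp add: evsimps n107)
lemma n567: "Wn Bk [[Wh,Bk],[Wh,Bk,Wh,Bk,Wh]] = True"
  by (rule win_rule) (simp add: evsimps n59)
lemma n568: "Wn Bk [[Wh,Bk],[Bk,Wh,Bk,Bk],[Wh,Wh,Bk,Wh]] = True"
  by (rule win_rule) (simp add: evsimps n507)
lemma n569: "Wn Wh [[Wh,Bk],[Bk,Wh,Bk,Bk],[Wh,Bk,Wh,Bk,Wh]] = False"
  by (rule lose_rule) (simp add: evsimps n552 n566 n567 n568 n42)
lemma n570: "Wn Bk [[Wh,Bk],[Wh,Bk],[Bk,Wh,Bk,Bk],[Wh,Bk,Wh,Bk,Wh]] = True"
  by (rule win_rule) (simp add: evsimps n569)
lemma n571: "Wn Wh [[Wh,Bk],[Wh,Bk],[Wh,Bk],[Bk,Wh,Bk]] = False"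
  by (rule lose_rule) (simp add: evsimps n457 n106)
lemma n572: "Wn Bk [[Wh,Bk],[Wh,Bk],[Wh,Bk],[Wh,Bk],[Bk,Wh,Bk]] = True"
  by (rule win_rule) (simp add: evsimps n571)
lemma n573: "Wn Wh [[Wh,Bk],[Wh,Bk],[Wh,Bk],[Wh,Bk,Bk],[Bk,Wh,Bk]] = False"
  by (rule lose_rule) (simp add: evsimps n489 n572 n563)
lemma n574: "Wn Bk [[Wh,Bk],[Wh,Bk],[Wh,Bk],[Bk,Wh,Bk],[Wh,Bk,Wh,Bk,Wh]] = True"
  by (rule win_rule) (simp add: evsimps n573)
lemma n575: "Wn Bk [[Wh,Bk],[Wh,Bk],[Wh,Wh,Bk],[Wh,Bk,Wh,Bk,Wh]] = True"
  by (rule win_rule) (simp add: evsimps n117)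
lemma n576: "Wn Wh [[Wh,Bk],[Wh,Bk],[Wh,Bk,Wh,Bk,Wh],[Bk,Wh,Bk,Wh,Bk,Bk]] = False"
  by (rule lose_rule) (simp add: evsimps n556 n560 n561 n565 n570 n574 n575)
lemma n577: "Wn Bk [[Wh,Bk],[Wh,Bk],[Wh,Bk,Wh,Bk,Wh,Bk,Wh,Bk,Wh,Bk,Wh,Bk]] = True"
  by (rule win_rule) (simp add: evsimps n576)
lemma n578: "Wn Bk [[Wh,Wh,Bk,Bk],[Wh,Wh,Bk,Wh,Bk]] = True"
  by (rule win_rule) (simp add: evsimps n28)
lemma n579: "Wn Bk [[Wh,Bk],[Wh,Wh,Bk],[Wh,Wh,Bk,Bk]] = True"
  by (rule win_rule) (simp add: evsimps n120)
lemma n580: "Wn Bk [[Bk,Wh,Bk],[Wh,Wh,Bk,Bk]] = True"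
  by (rule win_rule) (simp add: evsimps n5)
lemma n581: "Wn Bk [[Wh,Wh,Bk,Bk],[Wh,Bk,Wh,Bk]] = True"
  by (rule win_rule) (simp add: evsimps n5)
lemma n582: "Wn Bk [[Wh,Wh,Bk,Bk],[Wh,Wh,Bk,Wh]] = True"
  by (rule win_rule) (simp add: evsimps n61)
lemma n583: "Wn Wh [[Wh,Wh,Bk,Bk],[Wh,Bk,Wh,Bk,Wh,Bk]] = False"
  by (rule lose_rule) (simp add: evsimps n448 n578 n579 n580 n581 n582)
lemma n584: "Wn Bk [[Wh,Bk],[Wh,Wh,Bk,Bk],[Wh,Bk,Wh,Bk,Wh,Bk]] = True"
  by (rule win_rule) (simp add: evsimps n583)
lemma n585: "Wn Wh [[Wh,Bk],[Wh,Wh,Bk,Bk],[Wh,Wh,Bk,Wh,Bk]] = False"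
  by (rule lose_rule) (simp add: evsimps n578 n455 n579 n41)
lemma n586: "Wn Bk [[Wh,Bk],[Wh,Bk],[Wh,Wh,Bk,Bk],[Wh,Wh,Bk,Wh,Bk]] = True"
  by (rule win_rule) (simp add: evsimps n585)
lemma n587: "Wn Bk [[Wh,Bk],[Wh,Bk],[Wh,Bk],[Wh,Bk],[Wh,Bk]] = True"
  by (rule win_rule) (simp add: evsimps n115)
lemma n588: "Wn Wh [[Wh,Bk],[Wh,Bk],[Wh,Bk],[Wh,Bk],[Wh,Wh,Bk,Bk]] = False"
  by (rule lose_rule) (simp add: evsimps n562 n587)
lemma n589: "Wn Bk [[Wh,Bk],[Wh,Bk],[Wh,Bk],[Wh,Wh,Bk],[Wh,Wh,Bk,Bk]] = True"
  by (rule win_rule) (simp add: evsimps n588)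
lemma n590: "Wn Wh [[Wh,Bk],[Bk,Wh,Bk],[Wh,Wh,Bk,Bk]] = False"
  by (rule lose_rule) (simp add: evsimps n580 n41 n457)
lemma n591: "Wn Bk [[Wh,Bk],[Wh,Bk],[Bk,Wh,Bk],[Wh,Wh,Bk,Bk]] = True"
  by (rule win_rule) (simp add: evsimps n590)
lemma n592: "Wn Bk [[Wh,Bk],[Wh,Bk],[Wh,Wh,Bk,Bk],[Wh,Bk,Wh,Bk]] = True"
  by (rule win_rule) (simp add: evsimps n120)
lemma n593: "Wn Wh [[Wh,Bk],[Wh,Wh,Bk,Bk],[Wh,Wh,Bk,Wh]] = False"
  by (rule lose_rule) (simp add: evsimps n582 n63 n41)
lemma n594: "Wn Bk [[Wh,Bk],[Wh,Bk],[Wh,Wh,Bk,Bk],[Wh,Wh,Bk,Wh]] = True"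
  by (rule win_rule) (simp add: evsimps n593)
lemma n595: "Wn Wh [[Wh,Bk],[Wh,Bk],[Wh,Wh,Bk,Bk],[Wh,Bk,Wh,Bk,Wh,Bk]] = False"
  by (rule lose_rule) (simp add: evsimps n584 n486 n586 n589 n591 n592 n594)
lemma n596: "Wn Bk [[Wh,Bk],[Wh,Bk],[Wh,Wh,Bk,Wh,Bk,Wh,Bk,Wh,Bk,Wh,Bk]] = True"
  by (rule win_rule) (simp add: evsimps n595)
lemma n597: "Wn Wh [[Wh,Bk],[Wh,Bk,Bk],[Wh,Wh,Bk],[Wh,Wh,Bk,Wh]] = False"
  by (rule lose_rule) (simp add: evsimps n498 n535 n500 n112)
lemma n598: "Wn Bk [[Wh,Bk],[Wh,Bk,Bk],[Wh,Wh,Bk],[Wh,Wh,Bk,Wh,Bk,Wh,Bk]] = True"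
  by (rule win_rule) (simp add: evsimps n597)
lemma n599: "Wn Bk [[Wh,Bk],[Wh,Bk,Bk],[Bk,Wh,Bk,Wh,Bk,Wh,Bk]] = True"
  by (rule win_rule) (simp add: evsimps n490)
lemma n600: "Wn Bk [[Wh,Wh,Bk],[Wh,Wh,Bk,Wh,Bk]] = True"
  by (rule win_rule) (simp add: evsimps n28)
lemma n601: "Wn Wh [[Wh,Wh,Bk,Wh,Bk],[Wh,Wh,Bk,Wh,Bk]] = False"
  by (rule lose_rule) (simp add: evsimps n600 n14)
lemma n602: "Wn Bk [[Wh,Bk],[Wh,Wh,Bk,Wh,Bk],[Wh,Wh,Bk,Wh,Bk]] = True"
  by (rule win_rule) (simp add: evsimps n601)
lemma n603: "Wn Bk [[Wh,Bk,Bk],[Wh,Wh,Bk],[Wh,Wh,Bk,Wh,Bk]] = True"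
  by (rule win_rule) (simp add: evsimps n462)
lemma n604: "Wn Wh [[Wh,Bk,Bk],[Wh,Wh,Bk,Wh,Bk],[Wh,Wh,Bk,Wh,Bk]] = False"
  by (rule lose_rule) (simp add: evsimps n602 n603 n449)
lemma n605: "Wn Bk [[Wh,Bk],[Wh,Bk,Bk],[Wh,Wh,Bk,Wh,Bk],[Wh,Wh,Bk,Wh,Bk]] = True"
  by (rule win_rule) (simp add: evsimps n604)
lemma n606: "Wn Wh [[Wh,Bk],[Wh,Bk],[Wh,Bk,Bk],[Wh,Wh,Bk,Wh,Wh]] = False"
  by (rule lose_rule) (simp add: evsimps n516 n536 n77)
lemma n607: "Wn Bk [[Wh,Bk],[Wh,Bk,Bk],[Bk,Wh,Bk,Wh,Bk],[Wh,Wh,Bk,Wh,Wh]] = True"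
  by (rule win_rule) (simp add: evsimps n606)
lemma n608: "Wn Bk [[Bk,Wh,Bk],[Wh,Wh,Bk,Wh,Wh]] = True"
  by (rule win_rule) (simp add: evsimps n456)
lemma n609: "Wn Bk [[Bk,Wh,Bk],[Wh,Wh,Bk]] = True"
  by (rule win_rule) (simp add: evsimps n456)
lemma n610: "Wn Wh [[Bk,Wh,Bk],[Wh,Wh,Bk,Wh,Bk,Wh,Wh]] = False"
  by (rule lose_rule) (simp add: evsimps n33 n608 n609)
lemma n611: "Wn Bk [[Wh,Bk],[Bk,Wh,Bk],[Wh,Wh,Bk,Wh,Bk,Wh,Wh]] = True"
  by (rule win_rule) (simp add: evsimps n610)
lemma n612: "Wn Bk [[Wh,Bk,Bk],[Bk,Wh,Bk],[Wh,Wh,Bk,Wh,Wh]] = True"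
  by (rule win_rule) (simp add: evsimps n515)
lemma n613: "Wn Bk [[Wh,Bk,Bk],[Bk,Wh,Bk],[Wh,Wh,Bk]] = True"
  by (rule win_rule) (simp add: evsimps n111)
lemma n614: "Wn Wh [[Wh,Bk,Bk],[Bk,Wh,Bk],[Wh,Wh,Bk,Wh,Bk,Wh,Wh]] = False"
  by (rule lose_rule) (simp add: evsimps n611 n521 n612 n613)
lemma n615: "Wn Bk [[Wh,Bk],[Wh,Bk,Bk],[Bk,Wh,Bk],[Wh,Wh,Bk,Wh,Bk,Wh,Wh]] = True"
  by (rule win_rule) (simp add: evsimps n614)
lemma n616: "Wn Wh [[Wh,Bk],[Wh,Bk,Bk],[Wh,Wh,Bk,Bk],[Wh,Wh,Bk,Wh]] = False"
  by (rule lose_rule) (simp add: evsimps n506 n594 n493 n526)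
lemma n617: "Wn Bk [[Wh,Bk],[Wh,Bk,Bk],[Wh,Wh,Bk,Wh,Bk,Wh,Bk,Wh,Wh]] = True"
  by (rule win_rule) (simp add: evsimps n616)
lemma n618: "Wn Wh [[Wh,Bk],[Wh,Bk,Bk],[Wh,Wh,Bk,Wh,Bk,Wh,Bk,Wh,Bk,Wh,Bk]] = False"
  by (rule lose_rule) (simp add: evsimps n485 n596 n495 n598 n599 n605 n607 n615 n617)
lemma n619: "Wn Bk [[Wh,Bk],[Wh,Bk,Wh,Bk],[Wh,Wh,Bk,Wh,Bk,Wh,Bk,Wh,Bk,Wh,Bk]] = True"
  by (rule win_rule) (simp add: evsimps n618)
lemma n620: "Wn Bk [[Wh,Wh,Bk],[Wh,Bk,Wh,Bk]] = True"
  by (rule win_rule) (simp add: evsimps n111)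
lemma n621: "Wn Wh [[Wh,Bk,Wh,Bk],[Wh,Bk,Wh,Bk]] = False"
  by (rule lose_rule) (simp add: evsimps n620 n64 n18)
lemma n622: "Wn Bk [[Wh,Bk],[Wh,Bk,Wh,Bk],[Wh,Bk,Wh,Bk]] = True"
  by (rule win_rule) (simp add: evsimps n621)
lemma n623: "Wn Wh [[Wh,Bk,Bk],[Wh,Wh,Bk],[Wh,Wh,Bk,Bk]] = False"
  by (rule lose_rule) (simp add: evsimps n579 n109 n112)
lemma n624: "Wn Bk [[Wh,Wh,Bk],[Wh,Wh,Bk,Bk],[Wh,Bk,Wh,Bk]] = True"
  by (rule win_rule) (simp add: evsimps n623)
lemma n625: "Wn Wh [[Wh,Wh,Bk,Bk],[Wh,Bk,Wh,Bk],[Wh,Bk,Wh,Bk]] = False"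
  by (rule lose_rule) (simp add: evsimps n622 n624 n121 n581)
lemma n626: "Wn Bk [[Wh,Bk],[Wh,Wh,Bk,Bk],[Wh,Bk,Wh,Bk],[Wh,Bk,Wh,Bk]] = True"
  by (rule win_rule) (simp add: evsimps n625)
lemma n627: "Wn Bk [[Wh,Bk],[Wh,Bk],[Wh,Bk],[Wh,Bk,Wh,Bk]] = True"
  by (rule win_rule) (simp add: evsimps n115)
lemma n628: "Wn Wh [[Wh,Bk],[Wh,Bk],[Wh,Bk,Wh,Bk],[Wh,Bk,Wh,Bk]] = False"
  by (rule lose_rule) (simp add: evsimps n622 n122 n627 n458)
lemma n629: "Wn Bk [[Wh,Bk],[Wh,Bk],[Wh,Bk],[Wh,Bk,Wh,Bk],[Wh,Bk,Wh,Bk]] = True"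
  by (rule win_rule) (simp add: evsimps n628)
lemma n630: "Wn Bk [[Wh,Bk],[Wh,Bk,Bk],[Wh,Wh,Bk],[Wh,Wh,Bk,Bk]] = True"
  by (rule win_rule) (simp add: evsimps n623)
lemma n631: "Wn Bk [[Wh,Bk],[Wh,Bk],[Wh,Bk,Bk],[Wh,Wh,Bk,Bk]] = True"
  by (rule win_rule) (simp add: evsimps n120)
lemma n632: "Wn Wh [[Wh,Bk],[Wh,Bk],[Wh,Bk,Bk],[Wh,Wh,Bk],[Wh,Wh,Bk,Bk]] = False"
  by (rule lose_rule) (simp add: evsimps n630 n589 n631 n487)
lemma n633: "Wn Bk [[Wh,Bk],[Wh,Bk],[Wh,Wh,Bk],[Wh,Wh,Bk,Bk],[Wh,Bk,Wh,Bk]] = True"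
  by (rule win_rule) (simp add: evsimps n632)
lemma n634: "Wn Bk [[Wh,Bk],[Wh,Bk],[Wh,Bk],[Wh,Wh,Bk,Bk],[Wh,Bk,Wh,Bk]] = True"
  by (rule win_rule) (simp add: evsimps n588)
lemma n635: "Wn Wh [[Wh,Bk],[Wh,Bk],[Wh,Wh,Bk,Bk],[Wh,Bk,Wh,Bk],[Wh,Bk,Wh,Bk]] = False"
  by (rule lose_rule) (simp add: evsimps n626 n629 n633 n634 n592)
lemma n636: "Wn Bk [[Wh,Bk],[Wh,Bk],[Wh,Bk,Wh,Bk],[Wh,Wh,Bk,Wh,Bk,Wh,Bk,Wh,Bk]] = True"
  by (rule win_rule) (simp add: evsimps n635)
lemma n637: "Wn Bk [[Wh,Bk],[Wh,Bk],[Bk,Wh,Bk,Wh,Bk,Wh,Bk,Wh,Bk]] = True"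
  by (rule win_rule) (simp add: evsimps n459)
lemma n638: "Wn Wh [[Bk,Wh,Bk],[Wh,Wh,Bk,Wh,Bk]] = False"
  by (rule lose_rule) (simp add: evsimps n14 n609 n17)
lemma n639: "Wn Bk [[Wh,Bk],[Bk,Wh,Bk],[Wh,Wh,Bk,Wh,Bk]] = True"
  by (rule win_rule) (simp add: evsimps n638)
lemma n640: "Wn Wh [[Wh,Bk,Bk],[Bk,Wh,Bk],[Wh,Wh,Bk,Wh,Bk]] = False"
  by (rule lose_rule) (simp add: evsimps n639 n449 n613 n450)
lemma n641: "Wn Bk [[Wh,Bk],[Wh,Bk,Bk],[Bk,Wh,Bk],[Wh,Wh,Bk,Wh,Bk]] = True"
  by (rule win_rule) (simp add: evsimps n640)
lemma n642: "Wn Bk [[Wh,Bk],[Wh,Bk,Bk],[Wh,Wh,Bk],[Bk,Wh,Bk,Wh,Bk]] = True"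
  by (rule win_rule) (simp add: evsimps n117)
lemma n643: "Wn Wh [[Wh,Bk],[Wh,Bk,Bk],[Bk,Wh,Bk,Wh,Bk,Wh,Bk,Wh,Bk]] = False"
  by (rule lose_rule) (simp add: evsimps n496 n637 n461 n599 n641 n642)
lemma n644: "Wn Bk [[Wh,Bk],[Wh,Bk,Wh,Bk],[Bk,Wh,Bk,Wh,Bk,Wh,Bk,Wh,Bk]] = True"
  by (rule win_rule) (simp add: evsimps n643)
lemma n645: "Wn Bk [[Wh,Bk,Wh,Bk],[Wh,Bk,Wh,Bk],[Wh,Wh,Bk,Wh]] = True"
  by (rule win_rule) (simp add: evsimps n83)
lemma n646: "Wn Wh [[Wh,Bk],[Wh,Bk],[Wh,Bk],[Wh,Wh,Bk,Wh]] = False"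
  by (rule lose_rule) (simp add: evsimps n63 n106)
lemma n647: "Wn Bk [[Wh,Bk],[Wh,Bk],[Wh,Bk,Wh,Bk],[Wh,Wh,Bk,Wh]] = True"
  by (rule win_rule) (simp add: evsimps n646)
lemma n648: "Wn Wh [[Wh,Bk],[Wh,Bk,Wh,Bk],[Wh,Bk,Wh,Bk],[Wh,Wh,Bk,Wh]] = False"
  by (rule lose_rule) (simp add: evsimps n645 n544 n647 n497 n622)
lemma n649: "Wn Bk [[Wh,Bk],[Wh,Bk,Wh,Bk],[Wh,Bk,Wh,Bk],[Wh,Wh,Bk,Wh,Bk,Wh,Bk]] = True"
  by (rule win_rule) (simp add: evsimps n648)
lemma n650: "Wn Bk [[Wh,Bk],[Wh,Bk],[Wh,Wh,Bk,Wh],[Bk,Wh,Bk,Wh,Bk,Wh,Bk]] = True"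
  by (rule win_rule) (simp add: evsimps n543)
lemma n651: "Wn Wh [[Wh,Wh,Bk,Wh],[Wh,Wh,Bk,Wh,Bk]] = False"
  by (rule lose_rule) (simp add: evsimps n14 n73 n19)
lemma n652: "Wn Bk [[Wh,Bk],[Wh,Wh,Bk,Wh],[Wh,Wh,Bk,Wh,Bk]] = True"
  by (rule win_rule) (simp add: evsimps n651)
lemma n653: "Wn Wh [[Wh,Bk,Bk],[Wh,Wh,Bk,Wh],[Wh,Wh,Bk,Wh,Bk]] = False"
  by (rule lose_rule) (simp add: evsimps n652 n449 n498 n452)
lemma n654: "Wn Bk [[Wh,Bk],[Wh,Bk,Bk],[Wh,Wh,Bk,Wh],[Wh,Wh,Bk,Wh,Bk]] = True"
  by (rule win_rule) (simp add: evsimps n653)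
lemma n655: "Wn Wh [[Wh,Bk],[Wh,Bk],[Wh,Bk,Bk],[Wh,Wh,Bk,Wh]] = False"
  by (rule lose_rule) (simp add: evsimps n500 n542 n77)
lemma n656: "Wn Bk [[Wh,Bk],[Wh,Bk,Bk],[Wh,Wh,Bk,Wh],[Bk,Wh,Bk,Wh,Bk]] = True"
  by (rule win_rule) (simp add: evsimps n655)
lemma n657: "Wn Bk [[Bk,Wh,Bk],[Wh,Wh,Bk,Wh]] = True"
  by (rule win_rule) (simp add: evsimps n456)
lemma n658: "Wn Wh [[Bk,Wh,Bk],[Wh,Wh,Bk],[Wh,Wh,Bk,Wh]] = False"
  by (rule lose_rule) (simp add: evsimps n73 n657 n609)
lemma n659: "Wn Bk [[Wh,Bk],[Bk,Wh,Bk],[Wh,Wh,Bk],[Wh,Wh,Bk,Wh]] = True"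
  by (rule win_rule) (simp add: evsimps n658)
lemma n660: "Wn Bk [[Wh,Bk,Bk],[Bk,Wh,Bk],[Wh,Wh,Bk,Wh]] = True"
  by (rule win_rule) (simp add: evsimps n466)
lemma n661: "Wn Wh [[Wh,Bk,Bk],[Bk,Wh,Bk],[Wh,Wh,Bk],[Wh,Wh,Bk,Wh]] = False"
  by (rule lose_rule) (simp add: evsimps n659 n498 n660 n613)
lemma n662: "Wn Bk [[Wh,Bk],[Wh,Bk,Bk],[Bk,Wh,Bk],[Wh,Wh,Bk],[Wh,Wh,Bk,Wh]] = True"
  by (rule win_rule) (simp add: evsimps n661)
lemma n663: "Wn Wh [[Wh,Bk],[Wh,Bk,Bk],[Wh,Wh,Bk,Wh],[Bk,Wh,Bk,Wh,Bk,Wh,Bk]] = False"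
  by (rule lose_rule) (simp add: evsimps n510 n650 n599 n654 n656 n662)
lemma n664: "Wn Bk [[Wh,Bk],[Wh,Bk,Wh,Bk],[Wh,Wh,Bk,Wh],[Bk,Wh,Bk,Wh,Bk,Wh,Bk]] = True"
  by (rule win_rule) (simp add: evsimps n663)
lemma n665: "Wn Bk [[Wh,Wh,Bk,Wh,Bk],[Wh,Bk,Wh,Bk,Wh,Bk]] = True"
  by (rule win_rule) (simp add: evsimps n20)
lemma n666: "Wn Wh [[Wh,Bk],[Wh,Bk],[Wh,Bk],[Wh,Wh,Bk,Wh,Bk]] = False"
  by (rule lose_rule) (simp add: evsimps n455 n116 n106)
lemma n667: "Wn Bk [[Wh,Bk],[Wh,Bk],[Wh,Wh,Bk],[Wh,Wh,Bk,Wh,Bk]] = True"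
  by (rule win_rule) (simp add: evsimps n666)
lemma n668: "Wn Bk [[Wh,Bk],[Wh,Bk,Wh,Bk],[Wh,Wh,Bk,Wh,Bk]] = True"
  by (rule win_rule) (simp add: evsimps n28)
lemma n669: "Wn Wh [[Wh,Bk],[Wh,Wh,Bk,Wh,Bk],[Wh,Bk,Wh,Bk,Wh,Bk]] = False"
  by (rule lose_rule) (simp add: evsimps n665 n541 n448 n602 n667 n639 n668 n652)
lemma n670: "Wn Bk [[Wh,Bk],[Wh,Bk,Wh,Bk],[Wh,Wh,Bk,Wh,Bk],[Wh,Bk,Wh,Bk,Wh,Bk]] = True"
  by (rule win_rule) (simp add: evsimps n669)
lemma n671: "Wn Bk [[Wh,Wh,Bk],[Wh,Wh,Bk,Wh,Bk,Wh]] = True"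
  by (rule win_rule) (simp add: evsimps n111)
lemma n672: "Wn Bk [[Wh,Bk,Wh,Bk],[Wh,Wh,Bk,Wh]] = True"
  by (rule win_rule) (simp add: evsimps n61)
lemma n673: "Wn Bk [[Wh,Bk,Wh,Bk],[Wh,Wh,Bk,Wh,Wh]] = True"
  by (rule win_rule) (simp add: evsimps n515)
lemma n674: "Wn Wh [[Wh,Bk,Wh,Bk],[Wh,Wh,Bk,Wh,Bk,Wh]] = False"
  by (rule lose_rule) (simp add: evsimps n671 n62 n72 n672 n620 n64 n673)
lemma n675: "Wn Bk [[Wh,Bk],[Wh,Bk,Wh,Bk],[Wh,Wh,Bk,Wh,Bk,Wh]] = True"
  by (rule win_rule) (simp add: evsimps n674)
lemma n676: "Wn Bk [[Wh,Bk],[Wh,Bk],[Wh,Bk],[Wh,Wh,Bk,Wh,Bk,Wh]] = True"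
  by (rule win_rule) (simp add: evsimps n646)
lemma n677: "Wn Bk [[Wh,Bk],[Wh,Bk],[Wh,Bk,Wh,Bk],[Wh,Wh,Bk,Wh,Wh]] = True"
  by (rule win_rule) (simp add: evsimps n606)
lemma n678: "Wn Wh [[Wh,Bk],[Wh,Bk],[Wh,Bk,Wh,Bk],[Wh,Wh,Bk,Wh,Bk,Wh]] = False"
  by (rule lose_rule) (simp add: evsimps n675 n540 n676 n514 n647 n122 n627 n677)
lemma n679: "Wn Bk [[Wh,Bk],[Wh,Bk,Wh,Bk],[Bk,Wh,Bk,Wh,Bk],[Wh,Wh,Bk,Wh,Bk,Wh]] = True"
  by (rule win_rule) (simp add: evsimps n678)
lemma n680: "Wn Bk [[Wh,Bk,Wh,Bk],[Wh,Bk,Wh,Bk,Wh]] = True"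
  by (rule win_rule) (simp add: evsimps n59)
lemma n681: "Wn Bk [[Wh,Bk,Wh,Bk,Wh]] = True"
  by (rule win_rule) (simp add: evsimps n71)
lemma n682: "Wn Wh [[Wh,Wh,Bk],[Wh,Bk,Wh,Bk,Wh]] = False"
  by (rule lose_rule) (simp add: evsimps n681 n73 n16)
lemma n683: "Wn Bk [[Wh,Bk],[Wh,Wh,Bk],[Wh,Bk,Wh,Bk,Wh]] = True"
  by (rule win_rule) (simp add: evsimps n682)
lemma n684: "Wn Wh [[Wh,Bk],[Wh,Bk,Wh,Bk],[Wh,Bk,Wh,Bk,Wh]] = False"
  by (rule lose_rule) (simp add: evsimps n680 n683 n566 n567 n497 n458)
lemma n685: "Wn Bk [[Wh,Wh,Bk],[Wh,Bk,Wh,Bk],[Wh,Bk,Wh,Bk,Wh]] = True"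
  by (rule win_rule) (simp add: evsimps n684)
lemma n686: "Wn Wh [[Wh,Bk,Wh,Bk],[Wh,Bk,Wh,Bk,Wh]] = False"
  by (rule lose_rule) (simp add: evsimps n554 n567 n681 n672 n64)
lemma n687: "Wn Bk [[Wh,Bk],[Wh,Bk,Wh,Bk],[Wh,Bk,Wh,Bk,Wh]] = True"
  by (rule win_rule) (simp add: evsimps n686)
lemma n688: "Wn Wh [[Wh,Bk],[Wh,Bk],[Wh,Wh,Bk],[Wh,Bk,Wh,Bk,Wh]] = False"
  by (rule lose_rule) (simp add: evsimps n683 n566 n535 n116)
lemma n689: "Wn Bk [[Wh,Bk],[Wh,Wh,Bk],[Wh,Wh,Bk],[Wh,Bk,Wh,Bk,Wh]] = True"
  by (rule win_rule) (simp add: evsimps n688)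
lemma n690: "Wn Wh [[Wh,Bk],[Wh,Wh,Bk],[Wh,Bk,Wh,Bk],[Wh,Bk,Wh,Bk,Wh]] = False"
  by (rule lose_rule) (simp add: evsimps n685 n687 n689 n575 n683 n544 n122)
lemma n691: "Wn Bk [[Wh,Bk],[Wh,Wh,Bk],[Wh,Bk,Wh,Bk],[Wh,Bk,Wh,Bk,Wh,Bk,Wh,Bk]] = True"
  by (rule win_rule) (simp add: evsimps n690)
lemma n692: "Wn Bk [[Wh,Bk,Wh,Bk],[Wh,Wh,Bk,Wh,Bk,Wh,Bk,Wh]] = True"
  by (rule win_rule) (simp add: evsimps n74)
lemma n693: "Wn Bk [[Bk,Wh,Bk],[Wh,Wh,Bk,Wh,Bk,Wh,Bk,Wh]] = True"
  by (rule win_rule) (simp add: evsimps n74)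
lemma n694: "Wn Bk [[Wh,Bk],[Bk,Wh,Bk],[Wh,Wh,Bk,Wh,Bk,Wh]] = True"
  by (rule win_rule) (simp add: evsimps n488)
lemma n695: "Wn Bk [[Wh,Bk],[Bk,Wh,Bk],[Wh,Bk,Wh,Bk]] = True"
  by (rule win_rule) (simp add: evsimps n456)
lemma n696: "Wn Bk [[Wh,Bk],[Wh,Bk],[Bk,Wh,Bk],[Wh,Wh,Bk,Wh,Wh]] = True"
  by (rule win_rule) (simp add: evsimps n571)
lemma n697: "Wn Wh [[Wh,Bk],[Bk,Wh,Bk],[Wh,Wh,Bk,Wh,Bk,Wh,Bk,Wh]] = False"
  by (rule lose_rule) (simp add: evsimps n693 n520 n694 n659 n695 n639 n696 n611)
lemma n698: "Wn Bk [[Bk,Wh,Bk],[Wh,Wh,Bk],[Wh,Wh,Bk,Wh,Bk,Wh,Bk,Wh]] = True"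
  by (rule win_rule) (simp add: evsimps n697)
lemma n699: "Wn Bk [[Wh,Bk],[Wh,Bk],[Bk,Wh,Bk],[Wh,Wh,Bk,Wh]] = True"
  by (rule win_rule) (simp add: evsimps n571)
lemma n700: "Wn Bk [[Wh,Bk],[Wh,Bk,Bk],[Bk,Wh,Bk]] = True"
  by (rule win_rule) (simp add: evsimps n456)
lemma n701: "Wn Wh [[Wh,Bk],[Wh,Bk,Bk],[Bk,Wh,Bk],[Wh,Wh,Bk,Wh]] = False"
  by (rule lose_rule) (simp add: evsimps n660 n699 n500 n700)
lemma n702: "Wn Bk [[Wh,Bk],[Bk,Wh,Bk],[Wh,Wh,Bk,Wh,Bk,Wh,Bk,Wh]] = True"
  by (rule win_rule) (simp add: evsimps n701)
lemma n703: "Wn Bk [[Bk,Wh,Bk],[Wh,Bk,Wh,Bk],[Wh,Wh,Bk,Wh,Bk,Wh]] = True"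
  by (rule win_rule) (simp add: evsimps n674)
lemma n704: "Wn Bk [[Bk,Wh,Bk],[Wh,Bk,Wh,Bk],[Wh,Wh,Bk,Wh]] = True"
  by (rule win_rule) (simp add: evsimps n83)
lemma n705: "Wn Wh [[Wh,Bk],[Bk,Wh,Bk],[Wh,Bk,Wh,Bk],[Wh,Wh,Bk,Wh]] = False"
  by (rule lose_rule) (simp add: evsimps n704 n497 n659 n699 n467 n695)
lemma n706: "Wn Bk [[Bk,Wh,Bk],[Wh,Wh,Bk],[Wh,Bk,Wh,Bk],[Wh,Wh,Bk,Wh]] = True"
  by (rule win_rule) (simp add: evsimps n705)
lemma n707: "Wn Bk [[Bk,Wh,Bk],[Wh,Bk,Wh,Bk],[Wh,Bk,Wh,Bk]] = True"
  by (rule win_rule) (simp add: evsimps n621)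
lemma n708: "Wn Bk [[Bk,Wh,Bk],[Wh,Bk,Wh,Bk],[Wh,Wh,Bk,Wh,Bk]] = True"
  by (rule win_rule) (simp add: evsimps n638)
lemma n709: "Wn Wh [[Wh,Bk],[Wh,Bk,Bk],[Bk,Wh,Bk],[Wh,Wh,Bk,Wh,Wh]] = False"
  by (rule lose_rule) (simp add: evsimps n612 n696 n516 n700)
lemma n710: "Wn Bk [[Wh,Bk],[Bk,Wh,Bk],[Wh,Bk,Wh,Bk],[Wh,Wh,Bk,Wh,Wh]] = True"
  by (rule win_rule) (simp add: evsimps n709)
lemma n711: "Wn Bk [[Bk,Wh,Bk],[Wh,Bk,Wh,Bk],[Wh,Wh,Bk,Wh,Bk,Wh,Wh]] = True"
  by (rule win_rule) (simp add: evsimps n610)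
lemma n712: "Wn Wh [[Bk,Wh,Bk],[Wh,Bk,Wh,Bk],[Wh,Wh,Bk,Wh,Bk,Wh,Bk,Wh]] = False"
  by (rule lose_rule) (simp add: evsimps n692 n698 n702 n693 n703 n706 n707 n708 n710 n711)
lemma n713: "Wn Bk [[Wh,Bk],[Bk,Wh,Bk],[Wh,Bk,Wh,Bk],[Wh,Wh,Bk,Wh,Bk,Wh,Bk,Wh]] = True"
  by (rule win_rule) (simp add: evsimps n712)
lemma n714: "Wn Bk [[Wh,Bk],[Wh,Bk],[Wh,Bk,Wh,Bk,Wh,Bk,Wh,Bk,Wh,Bk]] = True"
  by (rule win_rule) (simp add: evsimps n494)
lemma n715: "Wn Bk [[Wh,Bk],[Wh,Bk],[Wh,Bk],[Wh,Bk],[Wh,Bk,Wh,Bk]] = True"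
  by (rule win_rule) (simp add: evsimps n115)
lemma n716: "Wn Bk [[Wh,Bk],[Wh,Bk],[Wh,Bk],[Wh,Bk],[Wh,Bk,Bk]] = True"
  by (rule win_rule) (simp add: evsimps n115)
lemma n717: "Wn Wh [[Wh,Bk],[Wh,Bk],[Wh,Bk],[Wh,Bk,Bk],[Wh,Bk,Wh,Bk]] = False"
  by (rule lose_rule) (simp add: evsimps n491 n715 n487 n716 n563)
lemma n718: "Wn Bk [[Wh,Bk],[Wh,Bk],[Wh,Bk,Bk],[Wh,Wh,Bk,Wh,Bk,Wh,Bk]] = True"
  by (rule win_rule) (simp add: evsimps n717)
lemma n719: "Wn Bk [[Wh,Bk],[Wh,Bk,Bk],[Wh,Wh,Bk,Wh,Bk]] = True"
  by (rule win_rule) (simp add: evsimps n28)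
lemma n720: "Wn Bk [[Wh,Bk,Bk],[Wh,Wh,Bk],[Wh,Bk,Wh,Bk]] = True"
  by (rule win_rule) (simp add: evsimps n490)
lemma n721: "Wn Wh [[Wh,Bk,Bk],[Wh,Bk,Wh,Bk],[Wh,Wh,Bk,Wh,Bk]] = False"
  by (rule lose_rule) (simp add: evsimps n668 n603 n719 n449 n720 n451)
lemma n722: "Wn Bk [[Wh,Bk],[Wh,Bk,Bk],[Wh,Bk,Wh,Bk],[Wh,Wh,Bk,Wh,Bk]] = True"
  by (rule win_rule) (simp add: evsimps n721)
lemma n723: "Wn Bk [[Wh,Bk,Bk],[Wh,Bk,Wh,Bk,Wh,Bk]] = True"
  by (rule win_rule) (simp add: evsimps n20)
lemma n724: "Wn Bk [[Wh,Bk],[Wh,Bk,Bk],[Wh,Wh,Bk],[Wh,Wh,Bk]] = True"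
  by (rule win_rule) (simp add: evsimps n117)
lemma n725: "Wn Wh [[Wh,Bk,Bk],[Wh,Wh,Bk],[Wh,Bk,Wh,Bk,Wh,Bk]] = False"
  by (rule lose_rule) (simp add: evsimps n541 n723 n603 n724 n613 n720 n498)
lemma n726: "Wn Bk [[Wh,Bk],[Wh,Bk,Bk],[Wh,Wh,Bk],[Wh,Bk,Wh,Bk,Wh,Bk]] = True"
  by (rule win_rule) (simp add: evsimps n725)
lemma n727: "Wn Wh [[Wh,Bk,Bk],[Bk,Wh,Bk],[Wh,Wh,Bk,Wh,Bk,Wh]] = False"
  by (rule lose_rule) (simp add: evsimps n694 n513 n660 n613 n700 n612)
lemma n728: "Wn Bk [[Wh,Bk],[Wh,Bk,Bk],[Bk,Wh,Bk],[Wh,Wh,Bk,Wh,Bk,Wh]] = True"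
  by (rule win_rule) (simp add: evsimps n727)
lemma n729: "Wn Bk [[Wh,Bk,Bk],[Wh,Bk,Bk],[Wh,Bk,Wh,Bk]] = True"
  by (rule win_rule) (simp add: evsimps n512)
lemma n730: "Wn Wh [[Wh,Bk,Bk],[Wh,Bk,Bk],[Wh,Wh,Bk]] = False"
  by (rule lose_rule) (simp add: evsimps n112 n471)
lemma n731: "Wn Bk [[Wh,Bk],[Wh,Bk,Bk],[Wh,Bk,Bk],[Wh,Wh,Bk]] = True"
  by (rule win_rule) (simp add: evsimps n730)
lemma n732: "Wn Bk [[Wh,Bk],[Wh,Bk],[Wh,Bk,Bk],[Wh,Bk,Bk]] = True"
  by (rule win_rule) (simp add: evsimps n472)
lemma n733: "Wn Bk [[Wh,Bk],[Wh,Bk,Bk],[Wh,Bk,Bk]] = True"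
  by (rule win_rule) (simp add: evsimps n512)
lemma n734: "Wn Wh [[Wh,Bk],[Wh,Bk,Bk],[Wh,Bk,Bk],[Wh,Bk,Wh,Bk]] = False"
  by (rule lose_rule) (simp add: evsimps n729 n491 n731 n732 n733)
lemma n735: "Wn Bk [[Wh,Bk],[Wh,Bk,Bk],[Wh,Bk,Wh,Bk,Wh,Bk,Wh,Bk]] = True"
  by (rule win_rule) (simp add: evsimps n734)
lemma n736: "Wn Bk [[Wh,Bk],[Wh,Bk,Bk],[Wh,Wh,Bk,Wh,Bk,Wh,Bk,Wh]] = True"
  by (rule win_rule) (simp add: evsimps n522)
lemma n737: "Wn Wh [[Wh,Bk],[Wh,Bk,Bk],[Wh,Bk,Wh,Bk,Wh,Bk,Wh,Bk,Wh,Bk]] = False"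
  by (rule lose_rule) (simp add: evsimps n524 n714 n495 n718 n599 n722 n656 n726 n728 n735 n736)
lemma n738: "Wn Bk [[Wh,Bk],[Wh,Bk,Wh,Bk],[Wh,Bk,Wh,Bk,Wh,Bk,Wh,Bk,Wh,Bk]] = True"
  by (rule win_rule) (simp add: evsimps n737)
lemma n739: "Wn Wh [[Wh,Bk],[Wh,Bk],[Wh,Bk,Wh,Bk,Wh,Bk,Bk]] = False"
  by (rule lose_rule) (simp add: evsimps n525 n119 n562 n42 n627 n63)
lemma n740: "Wn Bk [[Wh,Bk],[Wh,Bk],[Wh,Wh,Bk,Wh,Bk,Wh,Bk,Wh,Bk,Wh]] = True"
  by (rule win_rule) (simp add: evsimps n739)
lemma n741: "Wn Bk [[Wh,Bk],[Wh,Bk,Bk],[Wh,Wh,Bk],[Wh,Wh,Bk,Wh,Bk,Wh]] = True"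
  by (rule win_rule) (simp add: evsimps n597)
lemma n742: "Wn Bk [[Wh,Bk],[Wh,Bk,Bk],[Wh,Bk,Wh,Bk],[Wh,Wh,Bk,Wh,Wh]] = True"
  by (rule win_rule) (simp add: evsimps n606)
lemma n743: "Wn Wh [[Wh,Bk],[Wh,Bk,Bk],[Wh,Wh,Bk,Wh,Bk,Wh,Wh]] = False"
  by (rule lose_rule) (simp add: evsimps n521 n537 n516 n112)
lemma n744: "Wn Bk [[Wh,Bk],[Wh,Bk],[Wh,Bk,Bk],[Wh,Wh,Bk,Wh,Bk,Wh,Wh]] = True"
  by (rule win_rule) (simp add: evsimps n743)
lemma n745: "Wn Wh [[Wh,Bk],[Wh,Bk,Bk],[Wh,Wh,Bk,Wh,Bk,Wh,Bk,Wh,Bk,Wh]] = False"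
  by (rule lose_rule) (simp add: evsimps n529 n740 n736 n741 n470 n654 n742 n461 n744 n617)
lemma n746: "Wn Bk [[Wh,Bk],[Wh,Bk,Wh,Bk],[Wh,Wh,Bk,Wh,Bk,Wh,Bk,Wh,Bk,Wh]] = True"
  by (rule win_rule) (simp add: evsimps n745)
lemma n747: "Wn Wh [[Wh,Bk],[Wh,Bk,Wh,Bk],[Wh,Bk,Wh,Bk,Wh,Bk,Wh,Bk,Wh,Bk,Wh,Bk]] = False"
  by (rule lose_rule) (simp add: evsimps n531 n546 n577 n475 n619 n636 n644 n649 n664 n670 n679 n691 n713 n738 n746)
lemma n748: "Wn Wh [[Wh,Wh,Bk,Wh,Wh]] = True"
  by (rule win_rule) (simp add: evsimps Wn_nil)
lemma n749: "Wn Bk [[Wh,Bk,Bk],[Wh,Wh,Bk,Wh,Wh]] = False"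
  by (rule lose_rule) (simp add: evsimps n748 n11)




definition PPR :: "(part \<times> part list) list \<Rightarrow> bool" where
  "PPR R \<longleftrightarrow> (\<forall>(pat, rs) \<in> set R. PP (add_mset pat (image_mset neg_part (mset rs))))"

definition Bnd :: "(part \<times> part list) list \<Rightarrow> bool" where
  "Bnd R \<longleftrightarrow> (\<forall>(pat, rs) \<in> set R. sum_list (map (\<lambda>r. (3::nat) ^ length r) rs) < 3 ^ length pat)"

lemma PPR_neg: "PPR R \<Longrightarrow> PPR (neg_rule R)"
  unfolding PPR_def
proof (intro ballI)
  fix x assume A: "\<forall>(pat, rs)\<in>set R. PP (add_mset pat (image_mset neg_part (mset rs)))"
    and x: "x \<in> set (neg_rule R)"
  then obtain pat rs where m: "(pat, rs) \<in> set R" and xe: "x = (neg_part pat, map neg_part rs)"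
    unfolding neg_rule_def by auto
  have "PP (add_mset pat (image_mset neg_part (mset rs)))" using A m by auto
  then have "PP (image_mset neg_part (add_mset pat (image_mset neg_part (mset rs))))" by (rule PP_neg)
  then show "case x of (pat, rs) \<Rightarrow> PP (add_mset pat (image_mset neg_part (mset rs)))"
    unfolding xe by (simp add: image_mset.compositionality o_def)
qed

lemma Bnd_neg: "Bnd R \<Longrightarrow> Bnd (neg_rule R)"
  unfolding Bnd_def neg_rule_def by (auto simp: o_def)

definition mu :: "game \<Rightarrow> nat" where
  "mu G = sum_mset (image_mset (\<lambda>q. 3 ^ length q) G)"

lemma mu_add[simp]: "mu (A + B) = mu A + mu B" unfolding mu_def by simp
lemma mu_mset: "mu (mset rs) = sum_list (map (\<lambda>r. 3 ^ length r) rs)"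
  unfolding mu_def by (induction rs) auto

lemma matches_len: "matches pat q \<Longrightarrow> length q = length pat"
  unfolding matches_def by auto

lemma simple_step:
  assumes P: "PPR R" and B: "Bnd R" and st: "rule_step (Simple R) G G'"
  shows "Eqv G G' \<and> mu G' < mu G"
proof -
  from st obtain pat rs q where pr: "(pat, rs) \<in> set R" and q: "q \<in># G" and m: "matches pat q"
    and G': "G' = G - {#q#} + mset rs" by auto
  have e1: "Eqv {#pat#} (mset rs)" using P pr PP_Eqv unfolding PPR_def by fastforce
  have e2: "Eqv {#q#} (mset rs)"
    using m e1 Eqv_trans[OF Eqv_rev e1] unfolding matches_def by auto
  have GG: "G = {#q#} + (G - {#q#})" using q by simp
  have "Eqv ({#q#} + (G - {#q#})) (mset rs + (G - {#q#}))" by (rule Eqv_cong[OF e2])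
  then have "Eqv G G'" using GG G' by (simp add: ac_simps)
  moreover have "mu G' < mu G"
  proof -
    have "sum_list (map (\<lambda>r. (3::nat) ^ length r) rs) < 3 ^ length q"
      using B pr matches_len[OF m] unfolding Bnd_def by auto
    then have "mu (mset rs) < mu {#q#}" unfolding mu_mset by (simp add: mu_def)
    then show ?thesis using GG G' by (metis add_less_cancel_right mu_add union_commute)
  qed
  ultimately show ?thesis ..
qed

lemma beta_step:
  assumes st: "rule_step Beta G G'"
  shows "Eqv G G' \<and> mu G' < mu G"
proof -
  from st obtain q1 q2 where s: "{#q1, q2#} \<subseteq># G" and m: "matches (neg_part q1) q2"
    and G': "G' = G - {#q1, q2#}" by auto
  have GG: "G = {#q1, q2#} + (G - {#q1, q2#})" using s by (metis subset_mset.add_diff_inverse)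
  have "Eqv ({#q1, q2#} + (G - {#q1, q2#})) ({#} + (G - {#q1, q2#}))" by (rule Eqv_cong[OF Eqv_beta[OF m]])
  then have "Eqv G G'" using GG G' by simp
  moreover have "mu G' < mu G"
  proof -
    have "0 < mu {#q1, q2#}" by (simp add: mu_def)
    then show ?thesis using GG G' by (metis add_0 add_less_cancel_right mu_add union_commute)
  qed
  ultimately show ?thesis ..
qed

lemma PPR_eval: "list_all (\<lambda>(pat, rs). Wn Bk (norm (pat # map neg_part rs)) = False \<and> Wn Wh (norm (pat # map neg_part rs)) = False) R \<Longrightarrow> PPR R"
  unfolding PPR_def list_all_iff
proof (intro ballI)
  fix x assume A: "\<forall>x\<in>set R. case x of (pat, rs) \<Rightarrow> Wn Bk (norm (pat # map neg_part rs)) = False \<and> Wn Wh (norm (pat # map neg_part rs)) = False"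
    and x: "x \<in> set R"
  obtain pat rs where xe: "x = (pat, rs)" by (cases x)
  have "PP (mset (pat # map neg_part rs))" using A x xe by (intro PP_eval) auto
  then show "case x of (pat, rs) \<Rightarrow> PP (add_mset pat (image_mset neg_part (mset rs)))"
    using xe by simp
qed

lemma pp_alpha: "PPR rho_alpha"
  by (rule PPR_eval) (simp add: rho_alpha_def w_def neg_part_def evsimps Wn_nil n13 n20 n3 n5)
lemma pp_gamma: "PPR rho_gamma"
  by (rule PPR_eval) (simp add: rho_gamma_def w_def neg_part_def evsimps n21 n23 n27 n28 n32 n35 n38 n43)
lemma pp_delta: "PPR rho_delta"
  by (rule PPR_eval) (simp add: rho_delta_def w_def neg_part_def evsimps n58 n85)
lemma pp_eps: "PPR rho_eps"
  by (rule PPR_eval) (simp add: rho_eps_def w_def neg_part_def evsimps n105 n123 n447 n747)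
lemma pp_zeta: "PPR rho_zeta"
  by (rule PPR_eval) (simp add: rho_zeta_def w_def neg_part_def evsimps n515 n749)
lemma pp_eta: "PPR rho_eta"
  by (rule PPR_eval) (simp add: rho_eta_def w_def neg_part_def evsimps n187 n534)

lemma bnd_all: "Bnd rho_alpha" "Bnd rho_gamma" "Bnd rho_delta" "Bnd rho_eps" "Bnd rho_zeta" "Bnd rho_eta"
  by (simp_all add: Bnd_def rho_alpha_def rho_gamma_def rho_delta_def rho_eps_def rho_zeta_def rho_eta_def w_def)

lemma good_rules: "r \<in> set asf_rules \<Longrightarrow> r = Beta \<or> (\<exists>R. r = Simple R \<and> PPR R \<and> Bnd R)"
  unfolding asf_rules_def
  using pp_alpha pp_gamma pp_delta pp_eps pp_zeta pp_eta bnd_all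
    PPR_neg Bnd_neg by auto

lemma asf_step_good: "asf_step G G' \<Longrightarrow> Eqv G G' \<and> mu G' < mu G"
proof -
  assume "asf_step G G'"
  then obtain i where i: "i < length asf_rules" and st: "rule_step (asf_rules ! i) G G'"
    unfolding asf_step_def by blast
  have "asf_rules ! i \<in> set asf_rules" using i by simp
  then show ?thesis using good_rules st simple_step beta_step by metis
qed

theorem theorem2:
  fixes G :: game
  assumes "alc_game G"
  shows "(\<nexists>f. f 0 = G \<and> (\<forall>n. asf_step (f n) (f (Suc n))))
         \<and> (\<forall>H. asf_step\<^sup>*\<^sup>* G H \<and> (\<nexists>H'. asf_step H H') \<longrightarrow> equiv_game G H)"
proof (intro conjI allI impI)
  show "\<nexists>f. f 0 = G \<and> (\<forall>n. asf_step (f n) (f (Suc n)))"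
  proof
    assume "\<exists>f. f 0 = G \<and> (\<forall>n. asf_step (f n) (f (Suc n)))"
    then obtain f where f: "\<forall>n. asf_step (f n) (f (Suc n))" by blast
    have dec: "mu (f (Suc n)) < mu (f n)" for n using f asf_step_good by blast
    have "mu (f n) + n \<le> mu (f 0)" for n
    proof (induction n)
      case 0 then show ?case by simp
    next
      case (Suc n) then show ?case using dec[of n] by simp
    qed
    from this[of "Suc (mu (f 0))"] show False by simp
  qed
next
  fix H assume "asf_step\<^sup>*\<^sup>* G H \<and> (\<nexists>H'. asf_step H H')"
  then have "asf_step\<^sup>*\<^sup>* G H" by blast
  then have "Eqv G H"
  proof (induction rule: rtranclp_induct)
    case base then show ?case by (rule Eqv_refl)
  next
    case (step y z) then show ?case using asf_step_good Eqv_trans by blast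
  qed
  then show "equiv_game G H" by (rule Eqv_equiv_game)
qed


end
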